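(* Let $2<p<3$ and let $f:\mathbb{R}^n\to L(\mathbb{R}^d,\mathbb{R}^n)$ be of class $C^3_b$, with $c_f=\|f\|_{\sup}+\|f\|_{\mathrm{Lip}}$. There is a function $\epsilon:[1,\infty)\to(0,\infty)$ with the following property. For every $p$-rough path $\mathbf{X}=(X,\mathbb{X})$, every $x_0\in\mathbb{R}^n$, every $m\ge1$ and every $T\in(0,1]$ with $\omega_{\mathbf X}(0,T)\le\epsilon(m)$, the map $\mathbb{I}$ sends the ball $\mathcal{B}_T(m)$ into itself.
   Context: Variation norms on an interval $[s,t]$: $\|h\|_{p,[s,t]}=\big(\sup_\pi\sum_i|h_{t_{i+1}}-h_{t_i}|^p\big)^{1/p}$ for paths and $\|\Xi\|_{q,[s,t]}=\big(\sup_\pi\sum_i|\Xi_{t_it_{i+1}}|^q\big)^{1/q}$ for two-parameter functions, over finite partitions of $[s,t]$. $(\mathbb{R}^d)^{\otimes2}\cong L(\mathbb{R}^d,\mathbb{R}^d)$. A $p$-rough path is a continuous map $(s,t)\mapsto(X_{st},\mathbb{X}_{st})\in\mathbb{R}^d\times(\mathbb{R}^d)^{\otimes2}$ ($0\le s\le t\le1$) with Chen's relations $X_{st}=X_{su}+X_{ut}$, $\mathbb{X}_{st}=\mathbb{X}_{su}+\mathbb{X}_{ut}+X_{su}\otimes X_{ut}$, finite $p$-variation of $X$ and finite $(p/2)$-variation of $\mathbb{X}$; set $\omega_{\mathbf X}(s,t)=\|X\|_{p,[s,t]}+\|\mathbb{X}\|_{p/2,[s,t]}$. For a finite-dimensional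 normed space $E$, an $E$-valued path on $[0,T]$ controlled by $X$ is a pair $(b,b')$, $b:[0,T]\to E$, $b':[0,T]\to L(\mathbb{R}^d,E)$ continuous of finite $p$-variation, such that $R^{\mathbf b}_{st}=b_t-b_s-b'_sX_{st}$ has finite $(p/2)$-variation. Rough integral: for an $L(\mathbb{R}^d,\mathbb{R}^n)$-valued controlled path $(b,b')$ on $[0,T]$ (so $b'_s\in L((\mathbb{R}^d)^{\otimes2},\mathbb{R}^n)$), $\int_0^\cdot\mathbf{b}\,d\mathbf{X}$ is the unique $\varphi:[0,T]\to\mathbb{R}^n$ with $\varphi_0=0$ such that for some continuous superadditive control $\omega$ vanishing on the diagonal, some $\theta>1$ and $c<\infty$, $|\varphi_t-\varphi_s-b_sX_{st}-b'_s\mathbb{X}_{st}|\le c\,\omega(s,t)^\theta$. For an $\mathbb{R}^n$-valued controlled path $\mathbf{z}=(z,z')$ on $[0,T]$, $f(\mathbf z)$ is the $L(\mathbb{R}^d,\mathbb{R}^n)$-valued controlled path $(f(z_t),f'(z_t)z'_t)$, where $(f'(z_t)z'_t)(v)=Df(z_t)[z'_tv]$ for $v\in\mathbb{R}^d$, and $\mathbb{I}(\mathbf z)=\big(x_0+\int_0^\cdot f(\mathbf z)\,d\mathbf X,\ f(z)\big)$. The ball $\mathcal{B}_T(m)$ is the set of $\mathbb{R}^n$-valued paths $\mathbf z=(z,z')$ on $[0,T]$ controlled by $X$ with $\|z\|_{p,[0,T]}\le m/c_f$, $\|R^{\mathbf z}\|_{p/2,[0,T]}\le m^2$, $\|z'\|_{p,[0,T]}\le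 m$ and $\sup_{t\le T}|z'_t|\le\|f\|_{\sup}$. *)

theory Defs
  imports "HOL-Analysis.Analysis"
begin

definition partitions :: "real \<Rightarrow> real \<Rightarrow> real list set" where
  "partitions s t = {\<pi>. \<pi> \<noteq> [] \<and> sorted_wrt (<) \<pi> \<and> hd \<pi> = s \<and> last \<pi> = t}"

definition var_sum :: "real \<Rightarrow> (real \<Rightarrow> real \<Rightarrow> 'e::real_normed_vector) \<Rightarrow> real list \<Rightarrow> real" where
  "var_sum q \<Xi> \<pi> = (\<Sum>i < length \<pi> - 1. norm (\<Xi> (\<pi> ! i) (\<pi> ! Suc i)) powr q)"

definition finite_var2 :: "real \<Rightarrow> (real \<Rightarrow> real \<Rightarrow> 'e::real_normed_vector) \<Rightarrow> real \<Rightarrow> real \<Rightarrow> bool" where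
  "finite_var2 q \<Xi> s t \<longleftrightarrow> bdd_above (var_sum q \<Xi> ` partitions s t)"

definition var2 :: "real \<Rightarrow> (real \<Rightarrow> real \<Rightarrow> 'e::real_normed_vector) \<Rightarrow> real \<Rightarrow> real \<Rightarrow> real" where
  "var2 q \<Xi> s t = (SUP \<pi> \<in> partitions s t. var_sum q \<Xi> \<pi>) powr (1 / q)"

definition incr :: "(real \<Rightarrow> 'e::real_normed_vector) \<Rightarrow> real \<Rightarrow> real \<Rightarrow> 'e" where
  "incr h s t = h t - h s"

definition finite_pvar :: "real \<Rightarrow> (real \<Rightarrow> 'e::real_normed_vector) \<Rightarrow> real \<Rightarrow> real \<Rightarrow> bool" where
  "finite_pvar p h s t \<longleftrightarrow> finite_var2 p (incr h) s t"

definition pvar :: "real \<Rightarrow> (real \<Rightarrow> 'e::real_normed_vector) \<Rightarrow> real \<Rightarrow> real \<Rightarrow> real" where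
  "pvar p h s t = var2 p (incr h) s t"

text \<open>a \<otimes> b is identified with the linear map v \<mapsto> (b \<bullet> v) a.\<close>
definition tensor :: "'x::euclidean_space \<Rightarrow> 'x \<Rightarrow> ('x \<Rightarrow>\<^sub>L 'x)" where
  "tensor a b = Blinfun (\<lambda>v. (b \<bullet> v) *\<^sub>R a)"

text \<open>Action of g \<in> L(R^d, L(R^d,E)) \<cong> L((R^d)\<otimes>2, E) on a tensor M;
  on elementary tensors: apply2 g (tensor a b) = g a b.\<close>
definition apply2 :: "('x::euclidean_space \<Rightarrow>\<^sub>L ('x \<Rightarrow>\<^sub>L 'e::real_normed_vector)) \<Rightarrow> ('x \<Rightarrow>\<^sub>L 'x) \<Rightarrow> 'e" where
  "apply2 g M = (\<Sum>i\<in>Basis. \<Sum>j\<in>Basis. (i \<bullet> blinfun_apply M j) *\<^sub>R blinfun_apply (blinfun_apply g i) j)"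

definition tri_set :: "real \<Rightarrow> (real \<times> real) set" where
  "tri_set T = {(s, t). 0 \<le> s \<and> s \<le> t \<and> t \<le> T}"

definition rough_path :: "real \<Rightarrow> (real \<Rightarrow> real \<Rightarrow> 'x::euclidean_space) \<Rightarrow> (real \<Rightarrow> real \<Rightarrow> ('x \<Rightarrow>\<^sub>L 'x)) \<Rightarrow> bool" where
  "rough_path p X XX \<longleftrightarrow>
     continuous_on (tri_set 1) (\<lambda>(s, t). (X s t, XX s t)) \<and>
     (\<forall>s u t. 0 \<le> s \<and> s \<le> u \<and> u \<le> t \<and> t \<le> 1 \<longrightarrow>
        X s t = X s u + X u t \<and> XX s t = XX s u + XX u t + tensor (X s u) (X u t)) \<and>
     finite_var2 p X 0 1 \<and> finite_var2 (p / 2) XX 0 1"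

definition omega_rp :: "real \<Rightarrow> (real \<Rightarrow> real \<Rightarrow> 'x::euclidean_space) \<Rightarrow> (real \<Rightarrow> real \<Rightarrow> ('x \<Rightarrow>\<^sub>L 'x)) \<Rightarrow> real \<Rightarrow> real \<Rightarrow> real" where
  "omega_rp p X XX s t = var2 p X s t + var2 (p / 2) XX s t"

definition remainder :: "(real \<Rightarrow> real \<Rightarrow> 'x::euclidean_space) \<Rightarrow> (real \<Rightarrow> 'e::real_normed_vector) \<Rightarrow> (real \<Rightarrow> ('x \<Rightarrow>\<^sub>L 'e)) \<Rightarrow> real \<Rightarrow> real \<Rightarrow> 'e" where
  "remainder X b b' s t = b t - b s - blinfun_apply (b' s) (X s t)"

definition controlled :: "real \<Rightarrow> (real \<Rightarrow> real \<Rightarrow> 'x::euclidean_space) \<Rightarrow> real \<Rightarrow> (real \<Rightarrow> 'e::euclidean_space) \<Rightarrow> (real \<Rightarrow> ('x \<Rightarrow>\<^sub>L 'e)) \<Rightarrow> bool" where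
  "controlled p X T b b' \<longleftrightarrow>
     continuous_on {0..T} b \<and> continuous_on {0..T} b' \<and>
     finite_pvar p b 0 T \<and> finite_pvar p b' 0 T \<and>
     finite_var2 (p / 2) (remainder X b b') 0 T"

definition control :: "real \<Rightarrow> (real \<Rightarrow> real \<Rightarrow> real) \<Rightarrow> bool" where
  "control T \<omega> \<longleftrightarrow>
     continuous_on (tri_set T) (\<lambda>(s, t). \<omega> s t) \<and>
     (\<forall>s t. 0 \<le> s \<and> s \<le> t \<and> t \<le> T \<longrightarrow> 0 \<le> \<omega> s t) \<and>
     (\<forall>s. 0 \<le> s \<and> s \<le> T \<longrightarrow> \<omega> s s = 0) \<and>
     (\<forall>s u t. 0 \<le> s \<and> s \<le> u \<and> u \<le> t \<and> t \<le> T \<longrightarrow> \<omega> s u + \<omega> u t \<le> \<omega> s t)"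

definition rough_integral :: "(real \<Rightarrow> real \<Rightarrow> 'x::euclidean_space) \<Rightarrow> (real \<Rightarrow> real \<Rightarrow> ('x \<Rightarrow>\<^sub>L 'x)) \<Rightarrow> real
    \<Rightarrow> (real \<Rightarrow> ('x \<Rightarrow>\<^sub>L 'y::euclidean_space)) \<Rightarrow> (real \<Rightarrow> ('x \<Rightarrow>\<^sub>L ('x \<Rightarrow>\<^sub>L 'y))) \<Rightarrow> real \<Rightarrow> 'y" where
  "rough_integral X XX T b b' = (THE \<phi>. \<phi> 0 = 0 \<and> (\<forall>t. t \<notin> {0..T} \<longrightarrow> \<phi> t = 0) \<and>
      (\<exists>\<omega> \<theta> c. control T \<omega> \<and> \<theta> > 1 \<and>
         (\<forall>s t. 0 \<le> s \<and> s \<le> t \<and> t \<le> T \<longrightarrow>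
            norm (\<phi> t - \<phi> s - blinfun_apply (b s) (X s t) - apply2 (b' s) (XX s t)) \<le> c * \<omega> s t powr \<theta>)))"

definition C3b :: "('y::euclidean_space \<Rightarrow> ('x::euclidean_space \<Rightarrow>\<^sub>L 'y)) \<Rightarrow> bool" where
  "C3b f \<longleftrightarrow> (\<exists>Df D2f D3f.
      (\<forall>y. (f has_derivative blinfun_apply (Df y)) (at y)) \<and>
      (\<forall>y. (Df has_derivative blinfun_apply (D2f y)) (at y)) \<and>
      (\<forall>y. (D2f has_derivative blinfun_apply (D3f y)) (at y)) \<and>
      continuous_on UNIV D3f \<and>
      bounded (range f) \<and> bounded (range Df) \<and> bounded (range D2f) \<and> bounded (range D3f))"

definition sup_norm :: "('y::euclidean_space \<Rightarrow> ('x::euclidean_space \<Rightarrow>\<^sub>L 'y)) \<Rightarrow> real" where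
  "sup_norm f = (SUP y. norm (f y))"

definition lip_norm :: "('y::euclidean_space \<Rightarrow> ('x::euclidean_space \<Rightarrow>\<^sub>L 'y)) \<Rightarrow> real" where
  "lip_norm f = (SUP (y, y') \<in> {(y, y'). y \<noteq> y'}. norm (f y - f y') / dist y y')"

definition c_f :: "('y::euclidean_space \<Rightarrow> ('x::euclidean_space \<Rightarrow>\<^sub>L 'y)) \<Rightarrow> real" where
  "c_f f = sup_norm f + lip_norm f"

definition f_deriv_path :: "('y::euclidean_space \<Rightarrow> ('x::euclidean_space \<Rightarrow>\<^sub>L 'y)) \<Rightarrow> (real \<Rightarrow> 'y) \<Rightarrow> (real \<Rightarrow> ('x \<Rightarrow>\<^sub>L 'y))
    \<Rightarrow> real \<Rightarrow> ('x \<Rightarrow>\<^sub>L ('x \<Rightarrow>\<^sub>L 'y))" where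
  "f_deriv_path f z z' t = Blinfun (\<lambda>v. frechet_derivative f (at (z t)) (blinfun_apply (z' t) v))"

definition I_map :: "(real \<Rightarrow> real \<Rightarrow> 'x::euclidean_space) \<Rightarrow> (real \<Rightarrow> real \<Rightarrow> ('x \<Rightarrow>\<^sub>L 'x)) \<Rightarrow> real
    \<Rightarrow> ('y::euclidean_space \<Rightarrow> ('x \<Rightarrow>\<^sub>L 'y)) \<Rightarrow> 'y \<Rightarrow> (real \<Rightarrow> 'y) \<Rightarrow> (real \<Rightarrow> ('x \<Rightarrow>\<^sub>L 'y))
    \<Rightarrow> (real \<Rightarrow> 'y) \<times> (real \<Rightarrow> ('x \<Rightarrow>\<^sub>L 'y))" where
  "I_map X XX T f x0 z z' =
     ((\<lambda>t. x0 + rough_integral X XX T (\<lambda>s. f (z s)) (f_deriv_path f z z') t), (\<lambda>t. f (z t)))"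

definition ball_T :: "real \<Rightarrow> (real \<Rightarrow> real \<Rightarrow> 'x::euclidean_space) \<Rightarrow> ('y::euclidean_space \<Rightarrow> ('x \<Rightarrow>\<^sub>L 'y)) \<Rightarrow> real \<Rightarrow> real
    \<Rightarrow> ((real \<Rightarrow> 'y) \<times> (real \<Rightarrow> ('x \<Rightarrow>\<^sub>L 'y))) set" where
  "ball_T p X f T m = {(z, z'). controlled p X T z z' \<and>
      pvar p z 0 T \<le> m / c_f f \<and>
      var2 (p / 2) (remainder X z z') 0 T \<le> m\<^sup>2 \<and>
      pvar p z' 0 T \<le> m \<and>
      (\<forall>t\<in>{0..T}. norm (z' t) \<le> sup_norm f)}"

end

theory Submission
  imports Defs
begin


definition nxt :: "real set \<Rightarrow> real \<Rightarrow> real" where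
  "nxt P x = Min {y\<in>P. x < y}"

definition gs :: "(real \<Rightarrow> real \<Rightarrow> 'e::comm_monoid_add) \<Rightarrow> real set \<Rightarrow> 'e" where
  "gs F P = (\<Sum>x\<in>{x\<in>P. x < Max P}. F x (nxt P x))"

definition ppart :: "real \<Rightarrow> real \<Rightarrow> real set \<Rightarrow> bool" where
  "ppart s t P \<longleftrightarrow> finite P \<and> P \<subseteq> {s..t} \<and> s \<in> P \<and> t \<in> P"

lemma nxt_props:
  assumes "finite P" "x \<in> P" "x < Max P"
  shows "nxt P x \<in> P" "x < nxt P x" "\<And>y. y \<in> P \<Longrightarrow> x < y \<Longrightarrow> nxt P x \<le> y"
proof -
  have "Max P \<in> P" using assms by (intro Max_in) auto
  then have ne: "{y\<in>P. x < y} \<noteq> {}" using assms by blast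
  have fin: "finite {y\<in>P. x < y}" using assms by auto
  show "nxt P x \<in> P" "x < nxt P x" using Min_in[OF fin ne] unfolding nxt_def by auto
  show "\<And>y. y \<in> P \<Longrightarrow> x < y \<Longrightarrow> nxt P x \<le> y" unfolding nxt_def using fin by auto
qed

lemma nxt_eqI:
  assumes "finite P" "b \<in> P" "x < b" "\<And>y. y \<in> P \<Longrightarrow> x < y \<Longrightarrow> b \<le> y"
  shows "nxt P x = b"
  unfolding nxt_def using assms by (intro Min_eqI) auto

lemma gs_split:
  assumes "finite P" "u \<in> P"
  shows "gs F P = gs F {x\<in>P. x \<le> u} + gs F {x\<in>P. u \<le> x}"
proof -
  let ?A = "{x\<in>P. x \<le> u}" and ?B = "{x\<in>P. u \<le> x}"
  have finA: "finite ?A" and finB: "finite ?B" using assms by auto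
  have MA: "Max ?A = u" using assms by (intro Max_eqI) auto
  have MB: "Max ?B = Max P" using assms by (intro Max_eqI) (auto intro: Max_in Max_ge)
  have uM: "u \<le> Max P" using assms by auto
  have dom: "{x\<in>P. x < Max P} = {x\<in>?A. x < Max ?A} \<union> {x\<in>?B. x < Max ?B}"
    using MA MB uM by auto
  have disj: "{x\<in>?A. x < Max ?A} \<inter> {x\<in>?B. x < Max ?B} = {}" using MA by auto
  have eqA: "nxt ?A x = nxt P x" if "x \<in> ?A" "x < Max ?A" for x
  proof -
    have xP: "x \<in> P" "x < Max P" using that MA uM by auto
    have le: "nxt P x \<le> u" using nxt_props(3)[OF assms(1) xP, of u] that MA assms by auto
    show ?thesis using nxt_props[OF assms(1) xP] le
      by (intro nxt_eqI[OF finA]) auto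
  qed
  have eqB: "nxt ?B x = nxt P x" if "x \<in> ?B" "x < Max ?B" for x
  proof -
    have xP: "x \<in> P" "x < Max P" using that MB by auto
    show ?thesis using nxt_props[OF assms(1) xP] that
      by (intro nxt_eqI[OF finB]) auto
  qed
  have "gs F P = (\<Sum>x\<in>{x\<in>?A. x < Max ?A}. F x (nxt P x)) + (\<Sum>x\<in>{x\<in>?B. x < Max ?B}. F x (nxt P x))"
    unfolding gs_def dom by (rule sum.union_disjoint) (use assms(1) disj in auto)
  also have "\<dots> = gs F ?A + gs F ?B"
  proof -
    have s1: "(\<Sum>x\<in>{x\<in>?A. x < Max ?A}. F x (nxt P x)) = gs F ?A"
      unfolding gs_def by (rule sum.cong) (auto simp: eqA)
    have s2: "(\<Sum>x\<in>{x\<in>?B. x < Max ?B}. F x (nxt P x)) = gs F ?B"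
      unfolding gs_def by (rule sum.cong) (auto simp: eqB)
    show ?thesis using s1 s2 by simp
  qed
  finally show ?thesis .
qed

lemma gs_single[simp]: "gs F {s} = 0"
proof -
  have "{x\<in>{s}. x < Max {s}} = {}" by auto
  then show ?thesis unfolding gs_def by (simp only: sum.empty)
qed

lemma gs_two:
  assumes "s < t" shows "gs F {s, t} = F s t"
proof -
  have M: "Max {s,t} = t" using assms by auto
  have d: "{x\<in>{s,t}. x < Max {s,t}} = {s}" using assms M by auto
  have "nxt {s,t} s = t" using assms by (intro nxt_eqI) auto
  then show ?thesis unfolding gs_def d by simp
qed

lemma gs_insert_min:
  assumes "finite P" "P \<noteq> {}" "x < Min P"
  shows "gs F (insert x P) = F x (Min P) + gs F P"
proof -
  have fin: "finite (insert x P)" using assms by auto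
  have mP: "Min P \<in> insert x P" using Min_in[OF assms(1,2)] by auto
  have xP: "x \<notin> P"
  proof
    assume "x \<in> P" then have "Min P \<le> x" by (rule Min_le[OF assms(1)])
    then show False using assms(3) by simp
  qed
  have mi: "Min P \<in> P" using Min_in[OF assms(1,2)] .
  have e1: "{y\<in>insert x P. y \<le> Min P} = {x, Min P}"
  proof (intro equalityI subsetI)
    fix y assume y: "y \<in> {y\<in>insert x P. y \<le> Min P}"
    show "y \<in> {x, Min P}"
    proof (cases "y = x")
      case False
      then have "y \<in> P" "y \<le> Min P" using y by auto
      then have "y = Min P" using Min_le[OF assms(1)] by (meson antisym)
      then show ?thesis by simp
    qed simp
  next
    fix y assume "y \<in> {x, Min P}"
    then show "y \<in> {y\<in>insert x P. y \<le> Min P}" using assms(3) mi by auto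
  qed
  have e2: "{y\<in>insert x P. Min P \<le> y} = P"
  proof (intro equalityI subsetI)
    fix y assume y: "y \<in> {y\<in>insert x P. Min P \<le> y}"
    then have "y \<noteq> x" using assms(3) by auto
    then show "y \<in> P" using y by auto
  next
    fix y assume "y \<in> P"
    then show "y \<in> {y\<in>insert x P. Min P \<le> y}" using Min_le[OF assms(1)] by auto
  qed
  show ?thesis using gs_split[OF fin mP, of F] e1 e2 gs_two[OF assms(3), of F] by simp
qed

lemma sorted_hd_last_all:
  fixes xs :: "real list"
  assumes "sorted_wrt (<) xs" "xs \<noteq> []"
  shows "\<forall>x\<in>set xs. hd xs \<le> x \<and> x \<le> last xs"
  using assms
proof (induction xs)
  case Nil then show ?case by simp
next
  case (Cons a xs)
  show ?case
  proof (cases "xs = []")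
    case True then show ?thesis by simp
  next
    case False
    have IH: "\<forall>x\<in>set xs. hd xs \<le> x \<and> x \<le> last xs" using Cons.IH Cons.prems(1) False by simp
    have al: "\<forall>y\<in>set xs. a < y" using Cons.prems(1) by simp
    have al2: "a < last xs" using al False last_in_set by blast
    show ?thesis
    proof
      fix x assume "x \<in> set (a # xs)"
      then have "x = a \<or> x \<in> set xs" by simp
      then show "hd (a # xs) \<le> x \<and> x \<le> last (a # xs)"
      proof
        assume "x = a" then show ?thesis using al2 False by simp
      next
        assume xs: "x \<in> set xs"
        then show ?thesis using IH al False by (simp add: less_imp_le)
      qed
    qed
  qed
qed

lemma sorted_hd_last:
  fixes xs :: "real list"
  assumes "sorted_wrt (<) xs" "xs \<noteq> []" "x \<in> set xs"
  shows "hd xs \<le> x \<and> x \<le> last xs"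
  using sorted_hd_last_all[OF assms(1,2)] assms(3) by blast

lemma var_sum_Cons:
  assumes "xs \<noteq> []"
  shows "var_sum q F (x # xs) = norm (F x (hd xs)) powr q + var_sum q F xs"
proof -
  obtain n where n: "length xs = Suc n" using assms by (cases xs) auto
  have "var_sum q F (x#xs) = (\<Sum>i<Suc n. norm (F ((x#xs)!i) ((x#xs)!Suc i)) powr q)"
    unfolding var_sum_def using n by simp
  also have "\<dots> = norm (F x (xs!0)) powr q + (\<Sum>i<n. norm (F (xs!i) (xs!Suc i)) powr q)"
    by (subst sum.lessThan_Suc_shift) simp
  also have "\<dots> = norm (F x (hd xs)) powr q + var_sum q F xs"
    using n assms by (simp add: var_sum_def hd_conv_nth)
  finally show ?thesis .
qed

lemma var_sum_gs:
  assumes "sorted_wrt (<) xs" "xs \<noteq> []"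
  shows "var_sum q F xs = gs (\<lambda>a b. norm (F a b) powr q) (set xs)"
  using assms
proof (induction xs)
  case Nil then show ?case by simp
next
  case (Cons a xs)
  show ?case
  proof (cases "xs = []")
    case True then show ?thesis by (simp add: var_sum_def)
  next
    case False
    have s: "sorted_wrt (<) xs" using Cons by simp
    have hm: "Min (set xs) = hd xs"
      using sorted_hd_last[OF s False] False by (intro Min_eqI) auto
    have lt: "a < Min (set xs)" using Cons.prems False Min_in[of "set xs"] by auto
    show ?thesis
      using var_sum_Cons[OF False, of q F a] Cons.IH[OF s False] gs_insert_min[of "set xs" a "\<lambda>a b. norm (F a b) powr q"] lt False hm
      by simp
  qed
qed

lemma partitions_ppart:
  assumes "\<pi> \<in> partitions s t" shows "ppart s t (set \<pi>)"
proof -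
  have h: "\<pi> \<noteq> []" "sorted_wrt (<) \<pi>" "hd \<pi> = s" "last \<pi> = t" using assms unfolding partitions_def by auto
  have "\<forall>x\<in>set \<pi>. s \<le> x \<and> x \<le> t" using sorted_hd_last[OF h(2) h(1)] h(3,4) by auto
  moreover have "s \<in> set \<pi>" "t \<in> set \<pi>" using h hd_in_set[OF h(1)] last_in_set[OF h(1)] by auto
  ultimately show ?thesis unfolding ppart_def by auto
qed

lemma ppart_partitions:
  assumes "ppart s t P"
  shows "sorted_list_of_set P \<in> partitions s t"
proof -
  have fin: "finite P" and ne: "P \<noteq> {}" using assms unfolding ppart_def by auto
  let ?l = "sorted_list_of_set P"
  have sl: "sorted_wrt (<) ?l" by simp
  have st: "set ?l = P" using fin by simp
  have lne: "?l \<noteq> []" using fin ne by simp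
  have "hd ?l = Min P" using sorted_list_of_set_nonempty[OF fin ne] by simp
  also have "Min P = s" using assms unfolding ppart_def by (intro Min_eqI) auto
  finally have h: "hd ?l = s" .
  have "last ?l \<in> P" using st lne last_in_set by blast
  moreover have "t \<le> last ?l" using sorted_hd_last[OF sl lne, of t] st assms unfolding ppart_def by auto
  ultimately have l: "last ?l = t" using assms unfolding ppart_def by (meson antisym atLeastAtMost_iff subsetD)
  show ?thesis unfolding partitions_def using sl lne h l by simp
qed

lemma var_sum_image:
  "var_sum q F ` partitions s t = gs (\<lambda>a b. norm (F a b) powr q) ` {P. ppart s t P}"
proof
  show "var_sum q F ` partitions s t \<subseteq> gs (\<lambda>a b. norm (F a b) powr q) ` {P. ppart s t P}"
  proof
    fix v assume "v \<in> var_sum q F ` partitions s t"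
    then obtain \<pi> where \<pi>: "\<pi> \<in> partitions s t" "v = var_sum q F \<pi>" by auto
    have "v = gs (\<lambda>a b. norm (F a b) powr q) (set \<pi>)"
      using \<pi> var_sum_gs unfolding partitions_def by auto
    then show "v \<in> gs (\<lambda>a b. norm (F a b) powr q) ` {P. ppart s t P}"
      using partitions_ppart[OF \<pi>(1)] by auto
  qed
next
  show "gs (\<lambda>a b. norm (F a b) powr q) ` {P. ppart s t P} \<subseteq> var_sum q F ` partitions s t"
  proof
    fix v assume "v \<in> gs (\<lambda>a b. norm (F a b) powr q) ` {P. ppart s t P}"
    then obtain P where P: "ppart s t P" "v = gs (\<lambda>a b. norm (F a b) powr q) P" by auto
    have fin: "finite P" using P unfolding ppart_def by auto
    have "v = var_sum q F (sorted_list_of_set P)"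
      using P var_sum_gs[of "sorted_list_of_set P" q F] fin ppart_partitions[OF P(1)]
      unfolding partitions_def by auto
    then show "v \<in> var_sum q F ` partitions s t" using ppart_partitions[OF P(1)] by auto
  qed
qed



definition vs :: "(real \<Rightarrow> real \<Rightarrow> real) \<Rightarrow> real \<Rightarrow> real \<Rightarrow> real" where
  "vs g s t = Sup (gs g ` {P. ppart s t P})"

definition bdd :: "(real \<Rightarrow> real \<Rightarrow> real) \<Rightarrow> real \<Rightarrow> real \<Rightarrow> bool" where
  "bdd g s t \<longleftrightarrow> bdd_above (gs g ` {P. ppart s t P})"

lemma var2_vs: "var2 q F s t = vs (\<lambda>a b. norm (F a b) powr q) s t powr (1/q)"
  unfolding var2_def vs_def var_sum_image by simp

lemma finite_var2_bdd: "finite_var2 q F s t \<longleftrightarrow> bdd (\<lambda>a b. norm (F a b) powr q) s t"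
  unfolding finite_var2_def bdd_def var_sum_image by simp

lemma ppart_two: "s \<le> t \<Longrightarrow> ppart s t {s, t}"
  unfolding ppart_def by auto

lemma ppart_ne: "s \<le> t \<Longrightarrow> {P. ppart s t P} \<noteq> {}"
  using ppart_two by blast

lemma ppart_Min: "ppart s t P \<Longrightarrow> Min P = s"
  unfolding ppart_def by (intro Min_eqI) auto

lemma ppart_Max: "ppart s t P \<Longrightarrow> Max P = t"
  unfolding ppart_def by (intro Max_eqI) auto

lemma ppart_le: "ppart s t P \<Longrightarrow> s \<le> t"
  unfolding ppart_def by auto

lemma gs_nonneg: fixes g :: "real \<Rightarrow> real \<Rightarrow> real" assumes "\<And>a b. 0 \<le> g a b" shows "0 \<le> gs g P"
  unfolding gs_def by (rule sum_nonneg) (use assms in auto)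

lemma gs_mono: fixes g h :: "real \<Rightarrow> real \<Rightarrow> real" assumes "\<And>a b. g a b \<le> h a b" shows "gs g P \<le> gs h P"
  unfolding gs_def by (rule sum_mono) (use assms in auto)

lemma gs_add: "gs (\<lambda>a b. g a b + h a b) P = gs g P + gs h P"
  unfolding gs_def by (simp add: sum.distrib)

lemma gs_cmult: fixes g :: "real \<Rightarrow> real \<Rightarrow> real" shows "gs (\<lambda>a b. c * g a b) P = c * gs g P"
  unfolding gs_def by (rule sum_distrib_left[symmetric])

lemma gs_diff: fixes g :: "real \<Rightarrow> real \<Rightarrow> 'a::ab_group_add" shows "gs (\<lambda>a b. g a b - h a b) P = gs g P - gs h P"
  unfolding gs_def by (rule sum_subtractf)

lemma gs_norm: "norm (gs F P) \<le> gs (\<lambda>a b. norm (F a b)) P"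
  unfolding gs_def by (rule norm_sum)

lemma gs_upper: "bdd g s t \<Longrightarrow> ppart s t P \<Longrightarrow> gs g P \<le> vs g s t"
  unfolding bdd_def vs_def by (rule cSup_upper) auto

lemma vs_le: "s \<le> t \<Longrightarrow> (\<And>P. ppart s t P \<Longrightarrow> gs g P \<le> c) \<Longrightarrow> vs g s t \<le> c"
  unfolding vs_def using ppart_ne by (intro cSup_least) auto

lemma bddI: "(\<And>P. ppart s t P \<Longrightarrow> gs g P \<le> c) \<Longrightarrow> bdd g s t"
  unfolding bdd_def by (rule bdd_aboveI2) auto

lemma vs_nonneg: "(\<And>a b. 0 \<le> g a b) \<Longrightarrow> bdd g s t \<Longrightarrow> s \<le> t \<Longrightarrow> 0 \<le> vs g s t"
  using gs_upper[OF _ ppart_two, of g s t] gs_nonneg[of g] by (meson order_trans)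

lemma vs_two: "bdd g s t \<Longrightarrow> s < t \<Longrightarrow> g s t \<le> vs g s t"
  using gs_upper[OF _ ppart_two, of g s t] gs_two[of s t g] by simp

lemma ppart_union:
  assumes "ppart s u P1" "ppart u t P2"
  shows "ppart s t (P1 \<union> P2)" "{x\<in>P1 \<union> P2. x \<le> u} = P1" "{x\<in>P1 \<union> P2. u \<le> x} = P2"
proof -
  have a: "finite P1" "P1 \<subseteq> {s..u}" "s \<in> P1" "u \<in> P1" using assms(1) unfolding ppart_def by auto
  have b: "finite P2" "P2 \<subseteq> {u..t}" "u \<in> P2" "t \<in> P2" using assms(2) unfolding ppart_def by auto
  have su: "s \<le> u" "u \<le> t" using a(2,4) b(2,4) by auto
  have "P1 \<subseteq> {s..t}" using a(2) su by auto
  moreover have "P2 \<subseteq> {s..t}" using b(2) su by auto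
  ultimately show "ppart s t (P1 \<union> P2)" unfolding ppart_def using a b by auto
  have "\<forall>x\<in>P2. u \<le> x" using b(2) by auto
  moreover have "\<forall>x\<in>P1. x \<le> u" using a(2) by auto
  ultimately show "{x\<in>P1 \<union> P2. x \<le> u} = P1" "{x\<in>P1 \<union> P2. u \<le> x} = P2"
    using a(4) b(3) by (auto intro: antisym)
qed

lemma gs_union:
  assumes "ppart s u P1" "ppart u t P2"
  shows "gs g (P1 \<union> P2) = gs g P1 + gs g P2"
proof -
  have "finite (P1 \<union> P2)" "u \<in> P1 \<union> P2" using assms unfolding ppart_def by auto
  from gs_split[OF this, of g] show ?thesis using ppart_union[OF assms] by simp
qed

lemma bdd_sub:
  assumes g: "\<And>a b. 0 \<le> g a b" and b: "bdd g s t" and u: "s \<le> u" "u \<le> t"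
  shows "bdd g s u" "bdd g u t"
proof -
  show "bdd g s u"
  proof (rule bddI)
    fix P assume P: "ppart s u P"
    have "gs g P \<le> gs g (P \<union> {u, t})"
      using gs_union[OF P ppart_two[OF u(2)], of g] gs_nonneg[OF g, where P="{u,t}"] by simp
    also have "\<dots> \<le> vs g s t" by (rule gs_upper[OF b ppart_union(1)[OF P ppart_two[OF u(2)]]])
    finally show "gs g P \<le> vs g s t" .
  qed
  show "bdd g u t"
  proof (rule bddI)
    fix P assume P: "ppart u t P"
    have "gs g P \<le> gs g ({s, u} \<union> P)"
      using gs_union[OF ppart_two[OF u(1)] P, of g] gs_nonneg[OF g, where P="{s,u}"] by simp
    also have "\<dots> \<le> vs g s t" by (rule gs_upper[OF b ppart_union(1)[OF ppart_two[OF u(1)] P]])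
    finally show "gs g P \<le> vs g s t" .
  qed
qed

lemma bdd_sub2:
  assumes g: "\<And>a b. 0 \<le> g a b" and b: "bdd g s t" and u: "s \<le> s'" "s' \<le> t'" "t' \<le> t"
  shows "bdd g s' t'"
  using bdd_sub[OF g bdd_sub(2)[OF g b, of s'], of t'] u by auto

lemma vs_superadd:
  assumes g: "\<And>a b. 0 \<le> g a b" and b: "bdd g s t" and u: "s \<le> u" "u \<le> t"
  shows "vs g s u + vs g u t \<le> vs g s t"
proof -
  have "gs g P1 + gs g P2 \<le> vs g s t" if "ppart s u P1" "ppart u t P2" for P1 P2
    using gs_union[OF that, of g] gs_upper[OF b ppart_union(1)[OF that]] by simp
  then have "\<And>P1. ppart s u P1 \<Longrightarrow> vs g u t \<le> vs g s t - gs g P1"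
    using u by (intro vs_le) (auto simp: algebra_simps)
  then have "vs g s u \<le> vs g s t - vs g u t"
    using u by (intro vs_le) (auto simp: algebra_simps)
  then show ?thesis by simp
qed

lemma vs_mono:
  assumes g: "\<And>a b. 0 \<le> g a b" and b: "bdd g s t" and u: "s \<le> s'" "s' \<le> t'" "t' \<le> t"
  shows "vs g s' t' \<le> vs g s t"
proof -
  have b1: "bdd g s' t" using bdd_sub(2)[OF g b, of s'] u by auto
  have "vs g s' t' \<le> vs g s' t' + vs g t' t" using vs_nonneg[OF g bdd_sub(2)[OF g b1, of t']] u by auto
  also have "\<dots> \<le> vs g s' t" by (rule vs_superadd[OF g b1]) (use u in auto)
  also have "vs g s' t \<le> vs g s s' + vs g s' t" using vs_nonneg[OF g bdd_sub(1)[OF g b, of s']] u by auto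
  also have "\<dots> \<le> vs g s t" by (rule vs_superadd[OF g b]) (use u in auto)
  finally show ?thesis .
qed

lemma gs_insert_max:
  assumes "finite P" "P \<noteq> {}" "Max P < x"
  shows "gs F (insert x P) = gs F P + F (Max P) x"
proof -
  have fin: "finite (insert x P)" using assms by auto
  have mP: "Max P \<in> insert x P" using Max_in[OF assms(1,2)] by auto
  have xP: "x \<notin> P"
  proof
    assume "x \<in> P" then have "x \<le> Max P" by (rule Max_ge[OF assms(1)])
    then show False using assms(3) by simp
  qed
  have mi: "Max P \<in> P" using Max_in[OF assms(1,2)] .
  have e1: "{y\<in>insert x P. Max P \<le> y} = {Max P, x}"
  proof (intro equalityI subsetI)
    fix y assume y: "y \<in> {y\<in>insert x P. Max P \<le> y}"
    show "y \<in> {Max P, x}"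
    proof (cases "y = x")
      case False
      then have "y \<in> P" "Max P \<le> y" using y by auto
      then have "y = Max P" using Max_ge[OF assms(1)] by (meson antisym)
      then show ?thesis by simp
    qed simp
  next
    fix y assume "y \<in> {Max P, x}"
    then show "y \<in> {y\<in>insert x P. Max P \<le> y}" using assms(3) mi by auto
  qed
  have e2: "{y\<in>insert x P. y \<le> Max P} = P"
  proof (intro equalityI subsetI)
    fix y assume y: "y \<in> {y\<in>insert x P. y \<le> Max P}"
    then have "y \<noteq> x" using assms(3) by auto
    then show "y \<in> P" using y by auto
  next
    fix y assume "y \<in> P"
    then show "y \<in> {y\<in>insert x P. y \<le> Max P}" using Max_ge[OF assms(1)] by auto
  qed
  show ?thesis using gs_split[OF fin mP, of F] e1 e2 gs_two[OF assms(3), of F] by simp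
qed

lemma gs_remove_max:
  assumes "finite P" "card P \<ge> 2"
  shows "gs F P = gs F (P - {Max P}) + F (Max (P - {Max P})) (Max P)"
    "P - {Max P} \<noteq> {}" "Max (P - {Max P}) < Max P"
proof -
  have ne: "P \<noteq> {}" using assms by auto
  have fin: "finite (P - {Max P})" using assms by auto
  show ne2: "P - {Max P} \<noteq> {}"
  proof
    assume "P - {Max P} = {}"
    then have "P \<subseteq> {Max P}" by auto
    then have "card P \<le> 1" using card_mono[of "{Max P}" P] by simp
    then show False using assms by simp
  qed
  have "Max (P - {Max P}) \<in> P - {Max P}" using Max_in[OF fin ne2] .
  moreover have "Max (P - {Max P}) \<le> Max P" using Max_in[OF fin ne2] Max_ge[OF assms(1)] by auto
  ultimately show lt: "Max (P - {Max P}) < Max P" by auto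
  have eq: "P = insert (Max P) (P - {Max P})" using Max_in[OF assms(1) ne] by auto
  show "gs F P = gs F (P - {Max P}) + F (Max (P - {Max P})) (Max P)"
    using gs_insert_max[OF fin ne2 lt, of F] eq by simp
qed

lemma gs_le_control:
  fixes g \<omega> :: "real \<Rightarrow> real \<Rightarrow> real"
  assumes "finite P" "P \<noteq> {}"
    and le: "\<And>a b. a \<in> P \<Longrightarrow> b \<in> P \<Longrightarrow> a < b \<Longrightarrow> g a b \<le> \<omega> a b"
    and sa: "\<And>a b c. a \<in> P \<Longrightarrow> b \<in> P \<Longrightarrow> c \<in> P \<Longrightarrow> a \<le> b \<Longrightarrow> b \<le> c \<Longrightarrow> \<omega> a b + \<omega> b c \<le> \<omega> a c"
    and z: "\<And>a. a \<in> P \<Longrightarrow> 0 \<le> \<omega> a a"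
  shows "gs g P \<le> \<omega> (Min P) (Max P)"
  using assms
proof (induction "card P" arbitrary: P rule: less_induct)
  case less
  show ?case
  proof (cases "card P \<ge> 2")
    case False
    then have "card P = 1" using less.prems(1,2) by (cases "card P") (auto simp: card_eq_0_iff)
    then obtain a where a: "P = {a}" using card_1_singletonE by blast
    then show ?thesis using less.prems(5)[of a] by simp
  next
    case True
    let ?Q = "P - {Max P}"
    note r1 = gs_remove_max(1)[OF less.prems(1) True, where F=g]
    note r2 = gs_remove_max(2)[OF less.prems(1) True]
    note r3 = gs_remove_max(3)[OF less.prems(1) True]
    have finQ: "finite ?Q" using less.prems by auto
    have cQ: "card ?Q < card P" using less.prems(1,2) by (simp add: Max_in card_gt_0_iff)
    have IH: "gs g ?Q \<le> \<omega> (Min ?Q) (Max ?Q)"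
      by (rule less.hyps[OF cQ finQ r2]) (use less.prems in auto)
    have mQ: "Min ?Q = Min P"
    proof -
      have "Min ?Q \<in> P" using Min_in[OF finQ r2] by auto
      moreover have "\<forall>y\<in>P. Min ?Q \<le> y"
      proof
        fix y assume y: "y \<in> P"
        show "Min ?Q \<le> y"
        proof (cases "y = Max P")
          case True
          then show ?thesis using Min_le[OF finQ] Max_in[OF finQ r2] r3 by fastforce
        next
          case False then show ?thesis using Min_le[OF finQ] y by auto
        qed
      qed
      ultimately have "Min P = Min ?Q" using less.prems(1) by (intro Min_eqI) auto
      then show ?thesis by simp
    qed
    have inP: "Min P \<in> P" "Max ?Q \<in> P" "Max P \<in> P"
      using Min_in[OF less.prems(1,2)] Max_in[OF finQ r2] Max_in[OF less.prems(1,2)] by auto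
    have ord: "Min P \<le> Max ?Q" using Min_le[OF less.prems(1)] inP by auto
    have "gs g P \<le> \<omega> (Min P) (Max ?Q) + \<omega> (Max ?Q) (Max P)"
      using r1 IH mQ less.prems(3)[OF inP(2,3) r3] by simp
    also have "\<dots> \<le> \<omega> (Min P) (Max P)"
      using less.prems(4)[OF inP(1,2,3) ord] r3 by simp
    finally show ?thesis .
  qed
qed

lemma gs_le_additive:
  fixes g w :: "real \<Rightarrow> real \<Rightarrow> real"
  assumes "ppart s t P" "\<And>a b. s \<le> a \<Longrightarrow> a < b \<Longrightarrow> b \<le> t \<Longrightarrow> g a b \<le> w' b - w' a"
  shows "gs g P \<le> w' t - w' s"
proof -
  have fin: "finite P" "P \<noteq> {}" using assms(1) unfolding ppart_def by auto
  have "gs g P \<le> w' (Max P) - w' (Min P)"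
    by (rule gs_le_control[OF fin, where \<omega>="\<lambda>a b. w' b - w' a"]) (use assms(1) in \<open>auto simp: ppart_def intro!: assms(2)\<close>)
  then show ?thesis using ppart_Min[OF assms(1)] ppart_Max[OF assms(1)] by simp
qed



lemma tri_set_sub: "tri_set T \<subseteq> {0..T} \<times> {0..T}"
  unfolding tri_set_def by auto

lemma compact_tri: "compact (tri_set T)"
proof -
  have e: "tri_set T = {p. 0 \<le> fst p} \<inter> {p. fst p \<le> snd p} \<inter> {p. snd p \<le> T}"
    unfolding tri_set_def by auto
  have "closed (tri_set T)" unfolding e
    by (intro closed_Int closed_Collect_le continuous_intros)
  moreover have "bounded (tri_set T)"
    by (rule bounded_subset[OF bounded_Times[OF bounded_closed_interval bounded_closed_interval] tri_set_sub])
  ultimately show ?thesis using compact_eq_bounded_closed by blast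
qed

lemma tri_uc:
  fixes h :: "real \<Rightarrow> real \<Rightarrow> 'b::metric_space"
  assumes "continuous_on (tri_set T) (\<lambda>(a,b). h a b)" "e > 0"
  shows "\<exists>d>0. \<forall>a b a' b'. (a,b) \<in> tri_set T \<longrightarrow> (a',b') \<in> tri_set T \<longrightarrow> \<bar>a - a'\<bar> < d \<longrightarrow> \<bar>b - b'\<bar> < d \<longrightarrow> dist (h a b) (h a' b') < e"
proof -
  have "uniformly_continuous_on (tri_set T) (\<lambda>(a,b). h a b)"
    by (rule compact_uniformly_continuous[OF assms(1) compact_tri])
  then obtain d0 where d0: "d0 > 0" "\<forall>x\<in>tri_set T. \<forall>x'\<in>tri_set T. dist x' x < d0 \<longrightarrow> dist ((\<lambda>(a,b). h a b) x') ((\<lambda>(a,b). h a b) x) < e"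
    using assms(2) unfolding uniformly_continuous_on_def by blast
  show ?thesis
  proof (intro exI[of _ "d0/2"] conjI allI impI)
    show "d0/2 > 0" using d0 by simp
    fix a b a' b' assume h: "(a,b) \<in> tri_set T" "(a',b') \<in> tri_set T" "\<bar>a - a'\<bar> < d0/2" "\<bar>b - b'\<bar> < d0/2"
    have "dist (a,b) (a',b') \<le> \<bar>a - a'\<bar> + \<bar>b - b'\<bar>"
      unfolding dist_Pair_Pair dist_real_def using sqrt_sum_squares_le_sum_abs[of "\<bar>a - a'\<bar>" "\<bar>b - b'\<bar>"] by simp
    then have "dist (a,b) (a',b') < d0" using h by simp
    then show "dist (h a b) (h a' b') < e" using d0(2) h(1,2) by fastforce
  qed
qed

lemma gs_insert_bound:
  fixes g :: "real \<Rightarrow> real \<Rightarrow> real"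
  assumes g: "\<And>a b. 0 \<le> g a b" and P: "ppart s t P" and u: "s \<le> u" "u \<le> t" and eta: "0 \<le> \<eta>"
    and cl: "\<And>a b. s \<le> a \<Longrightarrow> a < u \<Longrightarrow> u < b \<Longrightarrow> b \<le> t \<Longrightarrow> g a b \<le> g a u + \<eta>"
  shows "gs g P \<le> gs g {x\<in>P\<union>{u}. x \<le> u} + gs g {x\<in>P\<union>{u}. u \<le> x} + \<eta>"
    "ppart s u {x\<in>P\<union>{u}. x \<le> u}" "ppart u t {x\<in>P\<union>{u}. u \<le> x}"
proof -
  have fin: "finite P" and sub: "P \<subseteq> {s..t}" and st: "s \<in> P" "t \<in> P" using P unfolding ppart_def by auto
  show "ppart s u {x\<in>P\<union>{u}. x \<le> u}" "ppart u t {x\<in>P\<union>{u}. u \<le> x}"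
    unfolding ppart_def using fin sub st u by auto
  show "gs g P \<le> gs g {x\<in>P\<union>{u}. x \<le> u} + gs g {x\<in>P\<union>{u}. u \<le> x} + \<eta>"
  proof (cases "u \<in> P")
    case True
    then have "P \<union> {u} = P" by auto
    then show ?thesis using gs_split[OF fin True, of g] eta by simp
  next
    case False
    have su: "s < u" "u < t" using False st u by (auto simp: order.order_iff_strict)
    define A where "A = {x\<in>P. x < u}"
    define B where "B = {x\<in>P. u < x}"
    have finA: "finite A" and finB: "finite B" using fin unfolding A_def B_def by auto
    have sA: "s \<in> A" and tB: "t \<in> B" using st su unfolding A_def B_def by auto
    have neA: "A \<noteq> {}" and neB: "B \<noteq> {}" using sA tB by auto
    define a where "a = Max A"
    define b where "b = Min B"
    have aA: "a \<in> A" unfolding a_def by (rule Max_in[OF finA neA])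
    have bB: "b \<in> B" unfolding b_def by (rule Min_in[OF finB neB])
    have au: "a < u" and ub: "u < b" and aP: "a \<in> P" and bP: "b \<in> P" using aA bB unfolding A_def B_def by auto
    have sa: "s \<le> a" and bt: "b \<le> t" using aP bP sub by auto
    have amax: "\<And>x. x \<in> A \<Longrightarrow> x \<le> a" unfolding a_def using Max_ge[OF finA] by blast
    have bmin: "\<And>x. x \<in> B \<Longrightarrow> b \<le> x" unfolding b_def using Min_le[OF finB] by blast
    have L: "{x\<in>P\<union>{u}. x \<le> u} = insert u A"
      unfolding A_def using False by (auto simp: order.order_iff_strict)
    have R: "{x\<in>P\<union>{u}. u \<le> x} = insert u B"
      unfolding B_def using False by (auto simp: order.order_iff_strict)
    have gL: "gs g (insert u A) = gs g A + g a u"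
      using gs_insert_max[OF finA neA, of u g] au unfolding a_def by simp
    have gR: "gs g (insert u B) = g u b + gs g B"
      using gs_insert_min[OF finB neB, of u g] ub unfolding b_def by simp
    have P1: "{x\<in>P. x \<le> a} = A"
    proof (intro equalityI subsetI)
      fix x assume "x \<in> {x\<in>P. x \<le> a}" then show "x \<in> A" using au unfolding A_def by auto
    next
      fix x assume "x \<in> A" then show "x \<in> {x\<in>P. x \<le> a}" using amax unfolding A_def by auto
    qed
    have P2: "{x\<in>P. a \<le> x} = insert a B"
    proof (intro equalityI subsetI)
      fix x assume x: "x \<in> {x\<in>P. a \<le> x}"
      show "x \<in> insert a B"
      proof (cases "x = a")
        case False
        have "x \<noteq> u" using x \<open>u \<notin> P\<close> by auto
        moreover have "\<not> x < u"
        proof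
          assume "x < u" then have "x \<in> A" using x unfolding A_def by auto
          then have "x \<le> a" by (rule amax)
          then show False using x False by auto
        qed
        ultimately have "u < x" by auto
        then show ?thesis using x unfolding B_def by auto
      qed simp
    next
      fix x assume "x \<in> insert a B" then show "x \<in> {x\<in>P. a \<le> x}"
        using aP au unfolding B_def by auto
    qed
    have ab: "a < Min B" using au ub unfolding b_def by simp
    have gP: "gs g P = gs g A + (g a b + gs g B)"
      using gs_split[OF fin aP, of g] P1 P2 gs_insert_min[OF finB neB ab, of g] unfolding b_def by simp
    have "g a b \<le> g a u + \<eta>" by (rule cl[OF sa au ub bt])
    moreover have "0 \<le> g u b" by (rule g)
    ultimately show ?thesis using gP gL gR L R by simp
  qed
qed



locale ctrl =
  fixes g :: "real \<Rightarrow> real \<Rightarrow> real" and T :: real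
  assumes g_nn: "\<And>a b. 0 \<le> g a b"
    and g_cont: "continuous_on (tri_set T) (\<lambda>(a,b). g a b)"
    and g_bd: "bdd g 0 T"
begin

lemma bd_sub: "0 \<le> a \<Longrightarrow> a \<le> b \<Longrightarrow> b \<le> T \<Longrightarrow> bdd g a b"
  using bdd_sub2[OF g_nn g_bd] by blast

lemma vs_nn: "0 \<le> a \<Longrightarrow> a \<le> b \<Longrightarrow> b \<le> T \<Longrightarrow> 0 \<le> vs g a b"
  using vs_nonneg[OF g_nn bd_sub] by blast

lemma vs_sadd: "0 \<le> a \<Longrightarrow> a \<le> b \<Longrightarrow> b \<le> c \<Longrightarrow> c \<le> T \<Longrightarrow> vs g a b + vs g b c \<le> vs g a c"
  using vs_superadd[OF g_nn bd_sub[of a c]] by auto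

lemma vs_mon: "0 \<le> a \<Longrightarrow> a \<le> a' \<Longrightarrow> a' \<le> b' \<Longrightarrow> b' \<le> b \<Longrightarrow> b \<le> T \<Longrightarrow> vs g a' b' \<le> vs g a b"
  using vs_mono[OF g_nn bd_sub[of a b]] by auto

lemma W_mono: "0 \<le> a \<Longrightarrow> a \<le> b \<Longrightarrow> b \<le> T \<Longrightarrow> vs g 0 a \<le> vs g 0 b"
  using vs_sadd[of 0 a b] vs_nn[of a b] by auto

lemma vs_W: "0 \<le> a \<Longrightarrow> a \<le> b \<Longrightarrow> b \<le> T \<Longrightarrow> vs g a b \<le> vs g 0 b - vs g 0 a"
  using vs_sadd[of 0 a b] by auto

lemma uc: "\<eta> > 0 \<Longrightarrow> \<exists>d>0. \<forall>a b a' b'. (a,b) \<in> tri_set T \<longrightarrow> (a',b') \<in> tri_set T \<longrightarrow> \<bar>a - a'\<bar> < d \<longrightarrow> \<bar>b - b'\<bar> < d \<longrightarrow> \<bar>g a b - g a' b'\<bar> < \<eta>"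
  using tri_uc[OF g_cont, of \<eta>] by (simp add: dist_real_def)

lemma exP: "0 \<le> a \<Longrightarrow> a \<le> b \<Longrightarrow> b \<le> T \<Longrightarrow> y < vs g a b \<Longrightarrow> \<exists>P. ppart a b P \<and> y < gs g P"
  using less_cSup_iff[of "gs g ` {P. ppart a b P}" y] ppart_ne[of a b] bd_sub[of a b]
  unfolding vs_def bdd_def by auto

lemma bounded_contra:
  assumes "\<eta> > 0" "0 \<le> a" "a \<le> b" "b \<le> T" "\<And>k::nat. real k * (\<eta>/2) \<le> vs g a b"
  shows False
proof -
  obtain k :: nat where "vs g a b < real k * (\<eta>/2)" using ex_less_of_nat_mult[of "\<eta>/2" "vs g a b"] assms(1) by auto
  then show False using assms(5)[of k] by simp
qed

lemma right_small:
  assumes t: "0 \<le> t" "t < T" and eta: "\<eta> > 0"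
  shows "\<exists>\<delta>>0. t + \<delta> \<le> T \<and> vs g t (t+\<delta>) \<le> \<eta>"
proof (rule ccontr)
  assume "\<not> ?thesis"
  then have H: "\<And>\<delta>. \<delta> > 0 \<Longrightarrow> t + \<delta> \<le> T \<Longrightarrow> \<eta> < vs g t (t+\<delta>)" by force
  obtain du where du: "du > 0" "\<forall>a b a' b'. (a,b) \<in> tri_set T \<longrightarrow> (a',b') \<in> tri_set T \<longrightarrow> \<bar>a - a'\<bar> < du \<longrightarrow> \<bar>b - b'\<bar> < du \<longrightarrow> \<bar>g a b - g a' b'\<bar> < \<eta>/2"
    using uc[of "\<eta>/2"] eta by auto
  have claim: "\<forall>\<delta>. \<delta> > 0 \<longrightarrow> t + \<delta> \<le> T \<longrightarrow> real k * (\<eta>/2) \<le> vs g t (t+\<delta>)" for k :: nat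
  proof (induction k)
    case 0 then show ?case using vs_nn t by auto
  next
    case (Suc k)
    show ?case
    proof (intro allI impI)
      fix \<delta> :: real assume d: "\<delta> > 0" "t + \<delta> \<le> T"
      obtain P where P: "ppart t (t+\<delta>) P" "\<eta> < gs g P" using exP[OF t(1) _ d(2) H[OF d]] d by auto
      have fin: "finite P" and sub: "P \<subseteq> {t..t+\<delta>}" and inP: "t \<in> P" "t+\<delta> \<in> P" using P(1) unfolding ppart_def by auto
      define P0 where "P0 = P - {t}"
      have fin0: "finite P0" using fin unfolding P0_def by auto
      have ne0: "P0 \<noteq> {}" using inP d unfolding P0_def by auto
      have gt0: "\<And>x. x \<in> P0 \<Longrightarrow> t < x" using sub unfolding P0_def by force
      have le0: "\<And>x. x \<in> P0 \<Longrightarrow> x \<le> t + \<delta>" using sub unfolding P0_def by force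
      define t1 where "t1 = Min P0"
      have t1P: "t1 \<in> P0" unfolding t1_def by (rule Min_in[OF fin0 ne0])
      have tt1: "t < t1" "t1 \<le> t + \<delta>" using gt0[OF t1P] le0[OF t1P] by auto
      have Peq: "P = insert t P0" using inP unfolding P0_def by auto
      have gP: "gs g P = g t t1 + gs g P0"
        using gs_insert_min[OF fin0 ne0, of t g] tt1 Peq unfolding t1_def by simp
      define t' where "t' = min (t + du/2) ((t + t1)/2)"
      have t'1: "t' \<le> (t+t1)/2" "t' \<le> t + du/2" unfolding t'_def by (rule min.cobounded2, rule min.cobounded1)
      have t'2: "t < t'" unfolding t'_def using du(1) tt1 by (auto simp: min_def)
      have t': "t < t'" "t' < t1" "t' - t < du" using t'1 t'2 du(1) tt1 by auto
      have tri1: "(t', t1) \<in> tri_set T" "(t, t1) \<in> tri_set T" using t t' tt1 d unfolding tri_set_def by auto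
      have close: "\<bar>g t' t1 - g t t1\<bar> < \<eta>/2" using du(2) tri1 t' by auto
      have gP': "gs g (insert t' P0) = g t' t1 + gs g P0"
        using gs_insert_min[OF fin0 ne0, of t' g] t' unfolding t1_def by simp
      have pp': "ppart t' (t+\<delta>) (insert t' P0)"
      proof -
        have m: "\<And>x. x \<in> P0 \<Longrightarrow> t1 \<le> x" unfolding t1_def using Min_le[OF fin0] by blast
        have "insert t' P0 \<subseteq> {t'..t+\<delta>}" using m le0 t' tt1 by force
        moreover have "t+\<delta> \<in> insert t' P0" using inP d unfolding P0_def by auto
        ultimately show ?thesis unfolding ppart_def using fin0 by auto
      qed
      have "\<eta>/2 < gs g (insert t' P0)" using gP gP' P(2) close by linarith
      also have "\<dots> \<le> vs g t' (t+\<delta>)" by (rule gs_upper[OF bd_sub pp']) (use t t' tt1 d in auto)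
      finally have A: "\<eta>/2 < vs g t' (t+\<delta>)" .
      have B: "real k * (\<eta>/2) \<le> vs g t t'" using Suc.IH[rule_format, of "t' - t"] t' tt1 d by auto
      have C: "vs g t t' + vs g t' (t+\<delta>) \<le> vs g t (t+\<delta>)" by (rule vs_sadd) (use t t' tt1 d in auto)
      show "real (Suc k) * (\<eta>/2) \<le> vs g t (t+\<delta>)" using A B C by (simp add: algebra_simps)
    qed
  qed
  show False
    by (rule bounded_contra[OF eta t(1), of T]) (use claim[rule_format, where \<delta>="T - t"] t in auto)
qed

lemma left_small:
  assumes t: "0 < t" "t \<le> T" and eta: "\<eta> > 0"
  shows "\<exists>\<delta>>0. \<delta> \<le> t \<and> vs g (t-\<delta>) t \<le> \<eta>"
proof (rule ccontr)
  assume "\<not> ?thesis"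
  then have H: "\<And>\<delta>. \<delta> > 0 \<Longrightarrow> \<delta> \<le> t \<Longrightarrow> \<eta> < vs g (t-\<delta>) t" by force
  obtain du where du: "du > 0" "\<forall>a b a' b'. (a,b) \<in> tri_set T \<longrightarrow> (a',b') \<in> tri_set T \<longrightarrow> \<bar>a - a'\<bar> < du \<longrightarrow> \<bar>b - b'\<bar> < du \<longrightarrow> \<bar>g a b - g a' b'\<bar> < \<eta>/2"
    using uc[of "\<eta>/2"] eta by auto
  have claim: "\<forall>\<delta>. \<delta> > 0 \<longrightarrow> \<delta> \<le> t \<longrightarrow> real k * (\<eta>/2) \<le> vs g (t-\<delta>) t" for k :: nat
  proof (induction k)
    case 0 then show ?case using vs_nn t by auto
  next
    case (Suc k)
    show ?case
    proof (intro allI impI)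
      fix \<delta> :: real assume d: "\<delta> > 0" "\<delta> \<le> t"
      obtain P where P: "ppart (t-\<delta>) t P" "\<eta> < gs g P" using exP[OF _ _ t(2) H[OF d]] d by auto
      have fin: "finite P" and sub: "P \<subseteq> {t-\<delta>..t}" and inP: "t-\<delta> \<in> P" "t \<in> P" using P(1) unfolding ppart_def by auto
      define P0 where "P0 = P - {t}"
      have fin0: "finite P0" using fin unfolding P0_def by auto
      have ne0: "P0 \<noteq> {}" using inP d unfolding P0_def by auto
      have lt0: "\<And>x. x \<in> P0 \<Longrightarrow> x < t" using sub unfolding P0_def by force
      have ge0: "\<And>x. x \<in> P0 \<Longrightarrow> t - \<delta> \<le> x" using sub unfolding P0_def by force
      define tN where "tN = Max P0"
      have tNP: "tN \<in> P0" unfolding tN_def by (rule Max_in[OF fin0 ne0])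
      have ttN: "tN < t" "t - \<delta> \<le> tN" using lt0[OF tNP] ge0[OF tNP] by auto
      have Peq: "P = insert t P0" using inP unfolding P0_def by auto
      have gP: "gs g P = gs g P0 + g tN t"
        using gs_insert_max[OF fin0 ne0, of t g] ttN Peq unfolding tN_def by simp
      define t' where "t' = max (t - du/2) ((tN + t)/2)"
      have t'1: "(tN+t)/2 \<le> t'" "t - du/2 \<le> t'" unfolding t'_def by (rule max.cobounded2, rule max.cobounded1)
      have t'2: "t' < t" unfolding t'_def using du(1) ttN by (auto simp: max_def)
      have t': "t' < t" "tN < t'" "t - t' < du" using t'1 t'2 du(1) ttN by auto
      have tri1: "(tN, t') \<in> tri_set T" "(tN, t) \<in> tri_set T" using t t' ttN d unfolding tri_set_def by auto
      have close: "\<bar>g tN t' - g tN t\<bar> < \<eta>/2" using du(2) tri1 t' by auto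
      have gP': "gs g (insert t' P0) = gs g P0 + g tN t'"
        using gs_insert_max[OF fin0 ne0, of t' g] t' unfolding tN_def by simp
      have pp': "ppart (t-\<delta>) t' (insert t' P0)"
      proof -
        have m: "\<And>x. x \<in> P0 \<Longrightarrow> x \<le> tN" unfolding tN_def using Max_ge[OF fin0] by blast
        have "insert t' P0 \<subseteq> {t-\<delta>..t'}" using m ge0 t' ttN by force
        moreover have "t-\<delta> \<in> insert t' P0" using inP d unfolding P0_def by auto
        ultimately show ?thesis unfolding ppart_def using fin0 by auto
      qed
      have "\<eta>/2 < gs g (insert t' P0)" using gP gP' P(2) close by linarith
      also have "\<dots> \<le> vs g (t-\<delta>) t'" by (rule gs_upper[OF bd_sub pp']) (use t t' ttN d in auto)
      finally have A: "\<eta>/2 < vs g (t-\<delta>) t'" .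
      have B: "real k * (\<eta>/2) \<le> vs g t' t" using Suc.IH[rule_format, of "t - t'"] t' ttN d by auto
      have C: "vs g (t-\<delta>) t' + vs g t' t \<le> vs g (t-\<delta>) t" by (rule vs_sadd) (use t t' ttN d in auto)
      show "real (Suc k) * (\<eta>/2) \<le> vs g (t-\<delta>) t" using A B C by (simp add: algebra_simps)
    qed
  qed
  show False
    by (rule bounded_contra[OF eta _ _ t(2), of 0]) (use claim[rule_format, where \<delta>=t] t in auto)
qed

lemma insert_small:
  assumes eta: "\<eta> > 0"
  shows "\<exists>\<delta>>0. \<forall>u t'. 0 \<le> u \<longrightarrow> u \<le> t' \<longrightarrow> t' \<le> T \<longrightarrow> t' - u < \<delta> \<longrightarrow> vs g 0 t' \<le> vs g 0 u + vs g u t' + \<eta>"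
proof -
  obtain du where du: "du > 0" "\<forall>a b a' b'. (a,b) \<in> tri_set T \<longrightarrow> (a',b') \<in> tri_set T \<longrightarrow> \<bar>a - a'\<bar> < du \<longrightarrow> \<bar>b - b'\<bar> < du \<longrightarrow> \<bar>g a b - g a' b'\<bar> < \<eta>"
    using uc[OF eta] by auto
  show ?thesis
  proof (intro exI[of _ du] conjI allI impI)
    show "du > 0" by (rule du(1))
    fix u t' assume h: "0 \<le> u" "u \<le> t'" "t' \<le> T" "t' - u < du"
    show "vs g 0 t' \<le> vs g 0 u + vs g u t' + \<eta>"
    proof (rule vs_le)
      show "0 \<le> t'" using h by simp
      fix P assume P: "ppart 0 t' P"
      have cl: "g a b \<le> g a u + \<eta>" if "0 \<le> a" "a < u" "u < b" "b \<le> t'" for a b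
      proof -
        have "(a,b) \<in> tri_set T" "(a,u) \<in> tri_set T" using that h unfolding tri_set_def by auto
        then have "\<bar>g a b - g a u\<bar> < \<eta>" using du(2) that h by auto
        then show ?thesis by simp
      qed
      note ib = gs_insert_bound[where g=g and s=0 and t=t' and P=P and u=u and \<eta>=\<eta>, OF g_nn P h(1,2) less_imp_le[OF eta] cl]
      have "gs g P \<le> gs g {x\<in>P\<union>{u}. x \<le> u} + gs g {x\<in>P\<union>{u}. u \<le> x} + \<eta>" using ib eta by auto
      also have "\<dots> \<le> vs g 0 u + vs g u t' + \<eta>"
        using gs_upper[OF bd_sub ib(2)] gs_upper[OF bd_sub ib(3)] h eta by auto
      finally show "gs g P \<le> vs g 0 u + vs g u t' + \<eta>" .
    qed
  qed
qed

lemma W_cont: "continuous_on {0..T} (\<lambda>t. vs g 0 t)"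
  unfolding continuous_on_iff
proof (intro ballI allI impI)
  fix t :: real and \<epsilon> :: real assume t: "t \<in> {0..T}" and e: "\<epsilon> > 0"
  define \<eta> where "\<eta> = \<epsilon>/3"
  have eta: "\<eta> > 0" using e unfolding \<eta>_def by simp
  obtain dC where dC: "dC > 0" "\<forall>u t'. 0 \<le> u \<longrightarrow> u \<le> t' \<longrightarrow> t' \<le> T \<longrightarrow> t' - u < dC \<longrightarrow> vs g 0 t' \<le> vs g 0 u + vs g u t' + \<eta>"
    using insert_small[OF eta] by auto
  obtain dA where dA: "dA > 0" "t < T \<longrightarrow> t + dA \<le> T \<and> vs g t (t+dA) \<le> \<eta>"
  proof (cases "t < T")
    case True then show ?thesis using that right_small[of t \<eta>] t eta by auto
  next
    case False then show ?thesis using that[of 1] by auto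
  qed
  obtain dB where dB: "dB > 0" "0 < t \<longrightarrow> dB \<le> t \<and> vs g (t-dB) t \<le> \<eta>"
  proof (cases "0 < t")
    case True then show ?thesis using that left_small[of t \<eta>] t eta by auto
  next
    case False then show ?thesis using that[of 1] by auto
  qed
  show "\<exists>d>0. \<forall>t'\<in>{0..T}. dist t' t < d \<longrightarrow> dist (vs g 0 t') (vs g 0 t) < \<epsilon>"
  proof (intro exI[of _ "min dC (min dA dB)"] conjI ballI impI)
    show "min dC (min dA dB) > 0" using dA dB dC by simp
    fix t' assume t': "t' \<in> {0..T}" "dist t' t < min dC (min dA dB)"
    have dd: "\<bar>t' - t\<bar> < dC" "\<bar>t' - t\<bar> < dA" "\<bar>t' - t\<bar> < dB" using t'(2) by (auto simp: dist_real_def)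
    show "dist (vs g 0 t') (vs g 0 t) < \<epsilon>"
    proof (cases "t \<le> t'")
      case True
      show ?thesis
      proof (cases "t = t'")
        case True then show ?thesis using e by simp
      next
        case False
        then have tt: "t < t'" "t < T" using True t' by auto
        have a1: "vs g 0 t' \<le> vs g 0 t + vs g t t' + \<eta>" using dC(2) t t' dd tt by auto
        have a2: "vs g t t' \<le> vs g t (t+dA)" by (rule vs_mon) (use t t' dd tt dA in auto)
        have a3: "vs g 0 t \<le> vs g 0 t'" by (rule W_mono) (use t t' tt in auto)
        have "vs g 0 t' - vs g 0 t < \<epsilon>" using a1 a2 dA(2) tt e unfolding \<eta>_def by linarith
        then show ?thesis using a3 unfolding dist_real_def by simp
      qed
    next
      case False
      then have tt: "t' < t" "0 < t" using t' by auto
      have a1: "vs g 0 t \<le> vs g 0 t' + vs g t' t + \<eta>" using dC(2) t t' dd tt by auto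
      have a2: "vs g t' t \<le> vs g (t-dB) t" by (rule vs_mon) (use t t' dd tt dB in auto)
      have a3: "vs g 0 t' \<le> vs g 0 t" by (rule W_mono) (use t t' tt in auto)
      have "vs g 0 t - vs g 0 t' < \<epsilon>" using a1 a2 dB(2) tt e unfolding \<eta>_def by linarith
      then show ?thesis using a3 unfolding dist_real_def by simp
    qed
  qed
qed

end



lemma nxt_upper:
  assumes "finite P" "x \<in> P" "u \<le> x" "x < Max P"
  shows "nxt {y\<in>P. u \<le> y} x = nxt P x"
proof -
  have fB: "finite {y\<in>P. u \<le> y}" using assms by auto
  show ?thesis using nxt_props[OF assms(1,2,4)] assms
    by (intro nxt_eqI[OF fB]) auto
qed

lemma Max_upper_set:
  assumes "finite P" "u \<in> P"
  shows "Max {y\<in>P. u \<le> y} = Max P"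
  using assms by (intro Max_eqI) (auto intro: Max_in Max_ge)

locale sew =
  fixes Xi :: "real \<Rightarrow> real \<Rightarrow> 'e::banach" and w :: "real \<Rightarrow> real" and T K \<theta> :: real
  assumes w_mono: "\<And>a b. 0 \<le> a \<Longrightarrow> a \<le> b \<Longrightarrow> b \<le> T \<Longrightarrow> w a \<le> w b"
    and w_cont: "continuous_on {0..T} w"
    and th: "\<theta> > 1" and K: "K \<ge> 0" and T: "T > 0"
    and defect: "\<And>s u t. 0 \<le> s \<Longrightarrow> s \<le> u \<Longrightarrow> u \<le> t \<Longrightarrow> t \<le> T \<Longrightarrow>
        norm (Xi s t - Xi s u - Xi u t) \<le> K * (w t - w s) powr \<theta>"
begin

definition C where "C = 2 / (1 - 2 powr (1 - \<theta>))"

lemma two_pow: "2 powr (1 - \<theta>) < 1" "0 < 2 powr (1 - \<theta>)"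
  using th by (auto intro: powr_less_one)

lemma C_pos: "C > 0" using two_pow unfolding C_def by simp

lemma C_eq: "C * 2 powr (1 - \<theta>) + 2 = C"
proof -
  have gen: "2 / (1 - a) * a + 2 = 2 / (1 - a)" if "a < 1" for a :: real
  proof -
    have "1 - a \<noteq> 0" using that by simp
    then show ?thesis by (simp add: field_simps)
  qed
  show ?thesis unfolding C_def by (rule gen[OF two_pow(1)])
qed

lemma Xi_diag: "0 \<le> s \<Longrightarrow> s \<le> T \<Longrightarrow> Xi s s = 0"
  using defect[of s s s] th by simp

lemma maximal:
  "ppart s t P \<Longrightarrow> 0 \<le> s \<Longrightarrow> t \<le> T \<Longrightarrow> norm (gs Xi P - Xi s t) \<le> C * K * (w t - w s) powr \<theta>"
proof (induction "card P" arbitrary: P s t rule: less_induct)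
  case less
  have fin: "finite P" and sub: "P \<subseteq> {s..t}" and st: "s \<in> P" "t \<in> P" using less.prems unfolding ppart_def by auto
  have CK: "0 \<le> C * K" using C_pos K by simp
  show ?case
  proof (cases "s = t")
    case True
    then have "P = {s}" using sub st by auto
    then show ?thesis using Xi_diag[of s] less.prems True CK by simp
  next
    case False
    then have slt: "s < t" using sub st by auto
    define W where "W = w t - w s"
    have W0: "0 \<le> W" unfolding W_def using w_mono[of s t] less.prems slt by simp
    define J where "J = {x\<in>P. x < t \<and> w x \<le> w s + W/2}"
    have finJ: "finite J" using fin unfolding J_def by auto
    have sJ: "s \<in> J" using st slt W0 unfolding J_def by auto
    define j where "j = Max J"
    have jJ: "j \<in> J" unfolding j_def using Max_in[OF finJ] sJ by auto
    have jmax: "\<And>x. x \<in> J \<Longrightarrow> x \<le> j" unfolding j_def using Max_ge[OF finJ] by blast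
    have jP: "j \<in> P" "j < t" "w j \<le> w s + W/2" using jJ unfolding J_def by auto
    have sj: "s \<le> j" using jmax[OF sJ] .
    define B where "B = {x\<in>P. j < x}"
    have finB: "finite B" using fin unfolding B_def by auto
    have tB: "t \<in> B" using st jP unfolding B_def by auto
    define b where "b = Min B"
    have bB: "b \<in> B" unfolding b_def using Min_in[OF finB] tB by auto
    have bmin: "\<And>x. x \<in> B \<Longrightarrow> b \<le> x" unfolding b_def using Min_le[OF finB] by blast
    have bP: "b \<in> P" "j < b" using bB unfolding B_def by auto
    have bt: "b \<le> t" using bmin[OF tB] .
    define PL where "PL = {x\<in>P. x \<le> j}"
    define PR where "PR = {x\<in>P. b \<le> x}"
    have ppL: "ppart s j PL" unfolding PL_def ppart_def using fin sub st jP sj by auto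
    have ppR: "ppart b t PR" unfolding PR_def ppart_def using fin sub st bP bt by auto
    have cL: "card PL < card P"
    proof -
      have "PL \<subseteq> P" "t \<notin> PL" using jP unfolding PL_def by auto
      then show ?thesis using fin st by (intro psubset_card_mono[OF fin]) auto
    qed
    have cR: "card PR < card P"
    proof -
      have "PR \<subseteq> P" "s \<notin> PR" using bP sj unfolding PR_def by auto
      then show ?thesis using fin st by (intro psubset_card_mono[OF fin]) auto
    qed
    have IHL: "norm (gs Xi PL - Xi s j) \<le> C * K * (w j - w s) powr \<theta>"
      using less.hyps[OF cL ppL] less.prems jP by auto
    have IHR: "norm (gs Xi PR - Xi b t) \<le> C * K * (w t - w b) powr \<theta>"
      using less.hyps[OF cR ppR] less.prems bP sj by auto
    have mid: "{x\<in>P. j \<le> x} = insert j PR"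
    proof (intro equalityI subsetI)
      fix x assume x: "x \<in> {x\<in>P. j \<le> x}"
      show "x \<in> insert j PR"
      proof (cases "x = j")
        case False
        then have "x \<in> B" using x unfolding B_def by auto
        then show ?thesis using bmin x unfolding PR_def by auto
      qed simp
    next
      fix x assume "x \<in> insert j PR" then show "x \<in> {x\<in>P. j \<le> x}"
        using jP bP unfolding PR_def by auto
    qed
    have finR: "finite PR" and neR: "PR \<noteq> {}" using ppR unfolding ppart_def by auto
    have minR: "Min PR = b" using ppart_Min[OF ppR] .
    have gsP: "gs Xi P = gs Xi PL + (Xi j b + gs Xi PR)"
      using gs_split[OF fin jP(1), of Xi] mid gs_insert_min[OF finR neR, of j Xi] minR bP
      unfolding PL_def by simp
    have mL: "w j - w s \<le> W/2" "0 \<le> w j - w s" using jP w_mono[of s j] less.prems sj by auto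
    have mR: "w t - w b \<le> W/2" "0 \<le> w t - w b"
    proof -
      show "0 \<le> w t - w b" using w_mono[of b t] less.prems bP sj bt by auto
      show "w t - w b \<le> W/2"
      proof (cases "b = t")
        case True then show ?thesis using W0 by simp
      next
        case False
        then have "b < t" using bt by simp
        have "\<not> w b \<le> w s + W/2"
        proof
          assume "w b \<le> w s + W/2"
          then have "b \<in> J" using bP \<open>b < t\<close> unfolding J_def by auto
          then show False using jmax bP by fastforce
        qed
        then have "w s + W/2 < w b" by simp
        then show ?thesis unfolding W_def by (simp add: field_simps)
      qed
    qed
    have D1: "norm (Xi s t - Xi s j - Xi j t) \<le> K * W powr \<theta>"
      using defect[of s j t] less.prems sj jP unfolding W_def by simp
    have D2': "norm (Xi j t - Xi j b - Xi b t) \<le> K * (w t - w j) powr \<theta>"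
      using defect[of j b t] less.prems sj bP bt by simp
    have wj: "w t - w j \<le> W" "0 \<le> w t - w j" using w_mono[of s j] w_mono[of j t] less.prems sj jP unfolding W_def by auto
    have D2: "norm (Xi j t - Xi j b - Xi b t) \<le> K * W powr \<theta>"
      using D2' mult_left_mono[OF powr_mono2[OF _ wj(2) wj(1), of \<theta>] K] th by simp
    have pL: "(w j - w s) powr \<theta> \<le> (W/2) powr \<theta>" using powr_mono2[OF _ mL(2) mL(1), of \<theta>] th by simp
    have pR: "(w t - w b) powr \<theta> \<le> (W/2) powr \<theta>" using powr_mono2[OF _ mR(2) mR(1), of \<theta>] th by simp
    have half: "2 * (W/2) powr \<theta> = 2 powr (1 - \<theta>) * W powr \<theta>"
      using W0 by (simp add: powr_divide powr_diff)
    have eq: "gs Xi P - Xi s t = (gs Xi PL - Xi s j) + (gs Xi PR - Xi b t) - (Xi s t - Xi s j - Xi j t) - (Xi j t - Xi j b - Xi b t)"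
      using gsP by (simp add: algebra_simps)
    have "norm (gs Xi P - Xi s t) \<le> norm (gs Xi PL - Xi s j) + norm (gs Xi PR - Xi b t) + norm (Xi s t - Xi s j - Xi j t) + norm (Xi j t - Xi j b - Xi b t)"
      unfolding eq by (rule order_trans[OF norm_triangle_ineq4] order_trans[OF add_right_mono[OF norm_triangle_ineq4]] order_trans[OF add_right_mono[OF add_right_mono[OF norm_triangle_ineq]]] order.refl)+
    also have "\<dots> \<le> C * K * (W/2) powr \<theta> + C * K * (W/2) powr \<theta> + K * W powr \<theta> + K * W powr \<theta>"
      using IHL IHR D1 D2 mult_left_mono[OF pL CK] mult_left_mono[OF pR CK] by linarith
    also have "\<dots> = K * W powr \<theta> * (C * 2 powr (1 - \<theta>) + 2)"
      using half by (simp add: algebra_simps)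
    also have "\<dots> = C * K * (w t - w s) powr \<theta>" using C_eq unfolding W_def by simp
    finally show ?thesis .
  qed
qed

end



context sew
begin

lemma CK: "0 \<le> C * K" using C_pos K by simp

lemma refine:
  "ppart s t P \<Longrightarrow> ppart s t Q \<Longrightarrow> P \<subseteq> Q \<Longrightarrow> 0 \<le> s \<Longrightarrow> t \<le> T \<Longrightarrow> 0 \<le> \<rho> \<Longrightarrow>
   (\<forall>x\<in>P. x < t \<longrightarrow> w (nxt P x) - w x \<le> \<rho>) \<Longrightarrow>
   norm (gs Xi Q - gs Xi P) \<le> C * K * \<rho> powr (\<theta> - 1) * (w t - w s)"
proof (induction "card P" arbitrary: P Q s rule: less_induct)
  case less
  have fin: "finite P" and sub: "P \<subseteq> {s..t}" and st: "s \<in> P" "t \<in> P" using less.prems unfolding ppart_def by auto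
  have finQ: "finite Q" and subQ: "Q \<subseteq> {s..t}" using less.prems unfolding ppart_def by auto
  show ?case
  proof (cases "s = t")
    case True
    then have "P = {s}" "Q = {s}" using sub st subQ less.prems(3) by auto
    then show ?thesis using True by simp
  next
    case False
    then have slt: "s < t" using sub st by auto
    have MP: "Max P = t" using ppart_Max[OF less.prems(1)] .
    define u where "u = nxt P s"
    have u: "u \<in> P" "s < u" "\<And>y. y \<in> P \<Longrightarrow> s < y \<Longrightarrow> u \<le> y"
      using nxt_props[OF fin st(1)] slt MP unfolding u_def by auto
    have ut: "u \<le> t" using u(1) sub by auto
    define P' where "P' = {x\<in>P. u \<le> x}"
    have PL: "{x\<in>P. x \<le> u} = {s, u}"
    proof (intro equalityI subsetI)
      fix x assume x: "x \<in> {x\<in>P. x \<le> u}"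
      show "x \<in> {s, u}"
      proof (cases "x = s")
        case False
        then have "s < x" using x sub by force
        then have "u \<le> x" using u(3) x by auto
        then show ?thesis using x by auto
      qed simp
    next
      fix x assume "x \<in> {s, u}" then show "x \<in> {x\<in>P. x \<le> u}" using st u by auto
    qed
    have gsP: "gs Xi P = Xi s u + gs Xi P'"
      using gs_split[OF fin u(1), of Xi] PL gs_two[OF u(2), of Xi] unfolding P'_def by simp
    have ppP': "ppart u t P'" unfolding P'_def ppart_def using fin sub st u ut by auto
    have uQ: "u \<in> Q" using u(1) less.prems(3) by auto
    define QL where "QL = {x\<in>Q. x \<le> u}"
    define QR where "QR = {x\<in>Q. u \<le> x}"
    have ppQL: "ppart s u QL" unfolding QL_def ppart_def using less.prems(2) uQ u unfolding ppart_def by auto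
    have ppQR: "ppart u t QR" unfolding QR_def ppart_def using less.prems(2) uQ ut unfolding ppart_def by auto
    have gsQ: "gs Xi Q = gs Xi QL + gs Xi QR" using gs_split[OF finQ uQ, of Xi] unfolding QL_def QR_def by simp
    have subPQ: "P' \<subseteq> QR" using less.prems(3) unfolding P'_def QR_def by auto
    have cP': "card P' < card P"
    proof -
      have "P' \<subseteq> P" "s \<notin> P'" using u unfolding P'_def by auto
      then show ?thesis using st by (intro psubset_card_mono[OF fin]) auto
    qed
    have mesh': "\<forall>x\<in>P'. x < t \<longrightarrow> w (nxt P' x) - w x \<le> \<rho>"
    proof (intro ballI impI)
      fix x assume x: "x \<in> P'" "x < t"
      have "nxt P' x = nxt P x" unfolding P'_def using nxt_upper[OF fin _ _ ] x MP unfolding P'_def by auto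
      then show "w (nxt P' x) - w x \<le> \<rho>" using less.prems(7) x unfolding P'_def by auto
    qed
    have IH: "norm (gs Xi QR - gs Xi P') \<le> C * K * \<rho> powr (\<theta> - 1) * (w t - w u)"
      using less.hyps[OF cP' ppP' ppQR subPQ _ less.prems(5,6) mesh'] less.prems(4) u(2) by auto
    have M: "norm (gs Xi QL - Xi s u) \<le> C * K * (w u - w s) powr \<theta>"
      using maximal[OF ppQL] less.prems ut by auto
    define x where "x = w u - w s"
    have x0: "0 \<le> x" unfolding x_def using w_mono[of s u] less.prems u ut by auto
    have xr: "x \<le> \<rho>" using less.prems(7) st(1) slt unfolding x_def u_def by auto
    have "x powr \<theta> = x powr (\<theta> - 1) * x" using powr_add[of x "\<theta> - 1" 1] x0 by simp
    also have "\<dots> \<le> \<rho> powr (\<theta> - 1) * x"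
      by (rule mult_right_mono[OF powr_mono2 x0]) (use th x0 xr in auto)
    finally have px: "x powr \<theta> \<le> \<rho> powr (\<theta> - 1) * x" .
    have eq: "gs Xi Q - gs Xi P = (gs Xi QL - Xi s u) + (gs Xi QR - gs Xi P')" using gsQ gsP by simp
    have "norm (gs Xi Q - gs Xi P) \<le> norm (gs Xi QL - Xi s u) + norm (gs Xi QR - gs Xi P')"
      unfolding eq by (rule norm_triangle_ineq)
    also have "\<dots> \<le> C * K * (\<rho> powr (\<theta> - 1) * x) + C * K * \<rho> powr (\<theta> - 1) * (w t - w u)"
      using M IH mult_left_mono[OF px CK] unfolding x_def by linarith
    also have "\<dots> = C * K * \<rho> powr (\<theta> - 1) * (w t - w s)" unfolding x_def by (simp add: algebra_simps)
    finally show ?thesis .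
  qed
qed

definition grid :: "nat \<Rightarrow> real set" where
  "grid n = (\<lambda>k. real k * T / 2^n) ` {..2^n}"

definition D :: "nat \<Rightarrow> real \<Rightarrow> real \<Rightarrow> real set" where
  "D n s t = {s, t} \<union> {x\<in>grid n. s < x \<and> x < t}"

lemma finite_grid: "finite (grid n)" unfolding grid_def by simp

lemma D_ppart: "s \<le> t \<Longrightarrow> ppart s t (D n s t)"
  unfolding D_def ppart_def using finite_grid by auto

lemma D_zero: "D n s s = {s}" unfolding D_def by auto

lemma grid_mono: "n \<le> m \<Longrightarrow> grid n \<subseteq> grid m"
proof
  fix x assume nm: "n \<le> m" and x: "x \<in> grid n"
  then obtain k where k: "k \<le> 2^n" "x = real k * T / 2^n" unfolding grid_def by auto
  have p: "(2::real)^m = 2^n * 2^(m-n)" using nm by (simp add: power_add[symmetric])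
  have "x = real (k * 2^(m-n)) * T / 2^m" using k p by (simp add: field_simps)
  moreover have "k * 2^(m-n) \<le> 2^m" using k(1) nm
    by (metis le_add_diff_inverse mult_le_mono1 power_add)
  ultimately have "x = (\<lambda>k. real k * T / 2^m) (k * 2^(m-n))" "k * 2^(m-n) \<in> {..2^m}" by auto
  then show "x \<in> grid m" unfolding grid_def by (rule image_eqI)
qed

lemma D_mono: "n \<le> m \<Longrightarrow> D n s t \<subseteq> D m s t"
  unfolding D_def using grid_mono by auto

lemma D_mesh:
  assumes "0 \<le> s" "s \<le> t" "t \<le> T" "x \<in> D n s t" "x < t"
  shows "nxt (D n s t) x - x \<le> T / 2^n"
proof (rule ccontr)
  assume H: "\<not> ?thesis"
  have pp: "ppart s t (D n s t)" using D_ppart assms by auto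
  have fin: "finite (D n s t)" using pp unfolding ppart_def by auto
  have MD: "Max (D n s t) = t" using ppart_Max[OF pp] .
  define y where "y = nxt (D n s t) x"
  have y: "y \<in> D n s t" "x < y" "\<And>z. z \<in> D n s t \<Longrightarrow> x < z \<Longrightarrow> y \<le> z"
    using nxt_props[OF fin assms(4)] assms(5) MD unfolding y_def by auto
  have yt: "y \<le> t" using y(1) pp unfolding ppart_def by auto
  have xs: "s \<le> x" using assms(4) pp unfolding ppart_def by auto
  have big: "x + T/2^n < y" using H unfolding y_def by simp
  define k where "k = nat (floor (x * 2^n / T)) + 1"
  have x0: "0 \<le> x * 2^n / T" using assms xs T by simp
  have flg: "real (nat (floor y)) \<le> y \<and> y < real (nat (floor y)) + 1" if "0 \<le> y" for y :: real
  proof -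
    have fy: "real (nat (floor y)) = real_of_int (floor y)" using that by simp
    show ?thesis unfolding fy using of_int_floor_le[of y] real_of_int_floor_add_one_gt[of y] by blast
  qed
  have fl: "real (nat (floor (x * 2^n / T))) \<le> x * 2^n / T" "x * 2^n / T < real (nat (floor (x * 2^n / T))) + 1"
    by (rule conjunct1[OF flg[OF x0]], rule conjunct2[OF flg[OF x0]])
  have rk: "real k = real (nat (floor (x * 2^n / T))) + 1" unfolding k_def by simp
  define z where "z = real k * T / 2^n"
  have zx: "x < z"
  proof -
    have "x * 2^n / T < real k" using fl(2) rk by linarith
    then have "x * 2^n < real k * T" using T by (simp add: field_simps)
    then show ?thesis unfolding z_def by (simp add: field_simps)
  qed
  have zx2: "z \<le> x + T/2^n"
  proof -
    have "real k \<le> x * 2^n / T + 1" using fl(1) rk by linarith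
    then have "real k * T \<le> x * 2^n + T" using T by (simp add: field_simps)
    then show ?thesis unfolding z_def by (simp add: field_simps)
  qed
  have zT: "z < T" using zx2 big yt assms by linarith
  have "real k * T < 2^n * T" using zT T unfolding z_def by (simp add: field_simps)
  then have "real k < 2^n" using T by simp
  then have kk: "k \<le> 2^n" by (metis less_imp_le of_nat_less_numeral_power_cancel_iff)
  have "z \<in> grid n" unfolding grid_def z_def using kk by auto
  then have "z \<in> D n s t" unfolding D_def using zx zx2 big yt xs by auto
  then have "y \<le> z" using y(3) zx by auto
  then show False using zx2 big by simp
qed

lemma D_split:
  assumes "s \<le> u" "u \<le> t"
  shows "{x\<in>D n s t \<union> {u}. x \<le> u} = D n s u" "{x\<in>D n s t \<union> {u}. u \<le> x} = D n u t"
proof -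
  show "{x\<in>D n s t \<union> {u}. x \<le> u} = D n s u"
  proof (intro equalityI subsetI)
    fix x assume x: "x \<in> {x\<in>D n s t \<union> {u}. x \<le> u}"
    then have "x = s \<or> x = t \<or> x = u \<or> (x \<in> grid n \<and> s < x \<and> x < t)" "x \<le> u" unfolding D_def by auto
    then show "x \<in> D n s u" unfolding D_def using assms by (auto simp: order.order_iff_strict)
  next
    fix x assume x: "x \<in> D n s u"
    then show "x \<in> {x\<in>D n s t \<union> {u}. x \<le> u}" unfolding D_def using assms by auto
  qed
  show "{x\<in>D n s t \<union> {u}. u \<le> x} = D n u t"
  proof (intro equalityI subsetI)
    fix x assume x: "x \<in> {x\<in>D n s t \<union> {u}. u \<le> x}"
    then have "x = s \<or> x = t \<or> x = u \<or> (x \<in> grid n \<and> s < x \<and> x < t)" "u \<le> x" unfolding D_def by auto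
    then show "x \<in> D n u t" unfolding D_def using assms by (auto simp: order.order_iff_strict)
  next
    fix x assume x: "x \<in> D n u t"
    then show "x \<in> {x\<in>D n s t \<union> {u}. u \<le> x}" unfolding D_def using assms by auto
  qed
qed

lemma w_uc: "\<epsilon> > 0 \<Longrightarrow> \<exists>N. \<forall>n\<ge>N. \<forall>x y. 0 \<le> x \<longrightarrow> x \<le> y \<longrightarrow> y \<le> T \<longrightarrow> y - x \<le> T / 2^n \<longrightarrow> w y - w x \<le> \<epsilon>"
proof -
  assume e: "\<epsilon> > 0"
  have "uniformly_continuous_on {0..T} w" by (rule compact_uniformly_continuous[OF w_cont compact_Icc])
  then obtain d where d: "d > 0" "\<forall>x\<in>{0..T}. \<forall>x'\<in>{0..T}. dist x' x < d \<longrightarrow> dist (w x') (w x) < \<epsilon>"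
    using e unfolding uniformly_continuous_on_def by blast
  obtain N where N: "T / d < 2^N"
    using real_arch_pow[of 2 "T/d"] by auto
  show ?thesis
  proof (intro exI[of _ N] allI impI)
    fix n x y assume h: "N \<le> n" "0 \<le> x" "x \<le> y" "y \<le> T" "y - x \<le> T / 2^n"
    have "(2::real)^N \<le> 2^n" using h(1) by simp
    then have "T / 2^n \<le> T / 2^N" using T by (intro divide_left_mono) auto
    also have "T / 2^N < d" using N d(1) by (simp add: field_simps)
    finally have "dist y x < d" using h by (simp add: dist_real_def)
    then have "dist (w y) (w x) < \<epsilon>" using d(2) h by auto
    then show "w y - w x \<le> \<epsilon>" by (simp add: dist_real_def)
  qed
qed

lemma mesh_N: "\<epsilon> > 0 \<Longrightarrow> \<exists>N. \<forall>n\<ge>N. \<forall>s t. 0 \<le> s \<longrightarrow> s \<le> t \<longrightarrow> t \<le> T \<longrightarrow>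
   (\<forall>x\<in>D n s t. x < t \<longrightarrow> w (nxt (D n s t) x) - w x \<le> \<epsilon>)"
proof -
  assume e: "\<epsilon> > 0"
  obtain N where N: "\<forall>n\<ge>N. \<forall>x y. 0 \<le> x \<longrightarrow> x \<le> y \<longrightarrow> y \<le> T \<longrightarrow> y - x \<le> T / 2^n \<longrightarrow> w y - w x \<le> \<epsilon>"
    using w_uc[OF e] by auto
  show ?thesis
  proof (intro exI[of _ N] allI impI ballI)
    fix n s t x assume h: "N \<le> n" "0 \<le> s" "s \<le> t" "t \<le> T" "x \<in> D n s t" "x < t"
    have pp: "ppart s t (D n s t)" using D_ppart h by auto
    have fin: "finite (D n s t)" using pp unfolding ppart_def by auto
    have nx: "nxt (D n s t) x \<in> D n s t" "x < nxt (D n s t) x"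
      using nxt_props[OF fin h(5)] h(6) ppart_Max[OF pp] by auto
    have "x \<ge> s" "nxt (D n s t) x \<le> t" using h(5) nx(1) pp unfolding ppart_def by auto
    then show "w (nxt (D n s t) x) - w x \<le> \<epsilon>"
      using N[rule_format, OF h(1), of x "nxt (D n s t) x"] D_mesh[OF h(2,3,4,5,6)] nx h by auto
  qed
qed

lemma small_eps: "e > 0 \<Longrightarrow> \<exists>\<epsilon>>0. C * K * \<epsilon> powr (\<theta> - 1) * (w T - w 0) < e"
proof -
  assume e: "e > 0"
  define M where "M = C * K * (w T - w 0)"
  have M0: "0 \<le> M" unfolding M_def using CK w_mono[of 0 T] T by simp
  define \<epsilon> where "\<epsilon> = (e / (M + 1)) powr (1 / (\<theta> - 1))"
  have pos: "\<epsilon> > 0" unfolding \<epsilon>_def using e M0 by simp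
  have "\<epsilon> powr (\<theta> - 1) = e / (M + 1)" unfolding \<epsilon>_def using th e M0 by (simp add: powr_powr)
  then have "C * K * \<epsilon> powr (\<theta> - 1) * (w T - w 0) = M * (e / (M + 1))" unfolding M_def by simp
  also have "\<dots> < e" using M0 e by (simp add: field_simps)
  finally show ?thesis using pos by blast
qed

definition S where "S n s t = gs Xi (D n s t)"

lemma S_close:
  assumes "\<epsilon> > 0"
  shows "\<exists>N. \<forall>n\<ge>N. \<forall>s t Q. 0 \<le> s \<longrightarrow> s \<le> t \<longrightarrow> t \<le> T \<longrightarrow> ppart s t Q \<longrightarrow> D n s t \<subseteq> Q \<longrightarrow>
     norm (gs Xi Q - S n s t) \<le> C * K * \<epsilon> powr (\<theta> - 1) * (w T - w 0)"
proof -
  obtain N where N: "\<forall>n\<ge>N. \<forall>s t. 0 \<le> s \<longrightarrow> s \<le> t \<longrightarrow> t \<le> T \<longrightarrow>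
   (\<forall>x\<in>D n s t. x < t \<longrightarrow> w (nxt (D n s t) x) - w x \<le> \<epsilon>)" using mesh_N[OF assms] by auto
  show ?thesis
  proof (intro exI[of _ N] allI impI)
    fix n s t Q assume h: "N \<le> n" "0 \<le> s" "s \<le> t" "t \<le> T" "ppart s t Q" "D n s t \<subseteq> Q"
    have "norm (gs Xi Q - S n s t) \<le> C * K * \<epsilon> powr (\<theta> - 1) * (w t - w s)"
      unfolding S_def by (rule refine[OF D_ppart h(5) h(6) h(2) h(4)]) (use h N assms in auto)
    also have "\<dots> \<le> C * K * \<epsilon> powr (\<theta> - 1) * (w T - w 0)"
    proof (rule mult_left_mono)
      show "w t - w s \<le> w T - w 0" using w_mono[of 0 s] w_mono[of t T] h by auto
      show "0 \<le> C * K * \<epsilon> powr (\<theta> - 1)" using CK by simp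
    qed
    finally show "norm (gs Xi Q - S n s t) \<le> C * K * \<epsilon> powr (\<theta> - 1) * (w T - w 0)" .
  qed
qed

lemma S_cauchy:
  assumes "0 \<le> s" "s \<le> t" "t \<le> T"
  shows "Cauchy (\<lambda>n. S n s t)"
proof (rule metric_CauchyI)
  fix e :: real assume e: "e > 0"
  obtain \<epsilon> where eps: "\<epsilon> > 0" "C * K * \<epsilon> powr (\<theta> - 1) * (w T - w 0) < e" using small_eps[OF e] by auto
  obtain N where N: "\<forall>n\<ge>N. \<forall>s t Q. 0 \<le> s \<longrightarrow> s \<le> t \<longrightarrow> t \<le> T \<longrightarrow> ppart s t Q \<longrightarrow> D n s t \<subseteq> Q \<longrightarrow>
     norm (gs Xi Q - S n s t) \<le> C * K * \<epsilon> powr (\<theta> - 1) * (w T - w 0)" using S_close[OF eps(1)] by auto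
  show "\<exists>M. \<forall>m\<ge>M. \<forall>n\<ge>M. dist (S m s t) (S n s t) < e"
  proof (intro exI[of _ N] allI impI)
    fix m n assume mn: "N \<le> m" "N \<le> n"
    have a: "norm (S m s t - S n s t) < e" if "N \<le> n" "n \<le> m" for m n
    proof -
      have "norm (gs Xi (D m s t) - S n s t) \<le> C * K * \<epsilon> powr (\<theta> - 1) * (w T - w 0)"
        using N[rule_format, OF that(1) assms D_ppart[OF assms(2)] D_mono[OF that(2)]] .
      then show ?thesis using eps(2) unfolding S_def by simp
    qed
    show "dist (S m s t) (S n s t) < e"
    proof (cases "n \<le> m")
      case True then show ?thesis using a[OF mn(2) True] by (simp add: dist_norm)
    next
      case False then show ?thesis using a[OF mn(1), of n] by (simp add: dist_norm norm_minus_commute)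
    qed
  qed
qed

definition L where "L s t = lim (\<lambda>n. S n s t)"

lemma S_lim: "0 \<le> s \<Longrightarrow> s \<le> t \<Longrightarrow> t \<le> T \<Longrightarrow> (\<lambda>n. S n s t) \<longlonglongrightarrow> L s t"
  unfolding L_def using S_cauchy Cauchy_convergent_iff convergent_LIMSEQ_iff by blast

lemma L_bound:
  assumes "0 \<le> s" "s \<le> t" "t \<le> T"
  shows "norm (L s t - Xi s t) \<le> C * K * (w t - w s) powr \<theta>"
proof -
  have lim: "(\<lambda>n. norm (S n s t - Xi s t)) \<longlonglongrightarrow> norm (L s t - Xi s t)"
    by (intro tendsto_intros S_lim assms)
  show ?thesis
    by (rule LIMSEQ_le_const2[OF lim]) (use maximal[OF D_ppart[OF assms(2)]] assms in \<open>auto simp: S_def\<close>)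
qed

lemma L_add:
  assumes "0 \<le> s" "s \<le> u" "u \<le> t" "t \<le> T"
  shows "L s u + L u t = L s t"
proof -
  have lim1: "(\<lambda>n. S n s u + S n u t - S n s t) \<longlonglongrightarrow> L s u + L u t - L s t"
    by (intro tendsto_intros S_lim) (use assms in auto)
  have lim0: "(\<lambda>n. S n s u + S n u t - S n s t) \<longlonglongrightarrow> 0"
  proof (rule LIMSEQ_I)
    fix e :: real assume e: "e > 0"
    obtain \<epsilon> where eps: "\<epsilon> > 0" "C * K * \<epsilon> powr (\<theta> - 1) * (w T - w 0) < e" using small_eps[OF e] by auto
    obtain N where N: "\<forall>n\<ge>N. \<forall>s t Q. 0 \<le> s \<longrightarrow> s \<le> t \<longrightarrow> t \<le> T \<longrightarrow> ppart s t Q \<longrightarrow> D n s t \<subseteq> Q \<longrightarrow>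
       norm (gs Xi Q - S n s t) \<le> C * K * \<epsilon> powr (\<theta> - 1) * (w T - w 0)" using S_close[OF eps(1)] by auto
    show "\<exists>N. \<forall>n\<ge>N. norm (S n s u + S n u t - S n s t - 0) < e"
    proof (intro exI[of _ N] allI impI)
      fix n assume n: "N \<le> n"
      have st: "s \<le> t" using assms by simp
      have ppQ: "ppart s t (D n s t \<union> {u})" using D_ppart[OF st, of n] assms unfolding ppart_def by auto
      have fQ: "finite (D n s t \<union> {u})" using ppQ unfolding ppart_def by auto
      have sp: "gs Xi (D n s t \<union> {u}) = S n s u + S n u t"
        using gs_split[OF fQ, of u Xi] D_split[OF assms(2,3), of n] unfolding S_def by simp
      have "norm (gs Xi (D n s t \<union> {u}) - S n s t) \<le> C * K * \<epsilon> powr (\<theta> - 1) * (w T - w 0)"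
        using N[rule_format, OF n assms(1) st assms(4) ppQ] by auto
      then show "norm (S n s u + S n u t - S n s t - 0) < e" using sp eps(2) by simp
    qed
  qed
  have "L s u + L u t - L s t = 0" using LIMSEQ_unique[OF lim1 lim0] .
  then show ?thesis by (simp add: algebra_simps)
qed

lemma L_zero: "L 0 0 = 0"
proof -
  have "(\<lambda>n. S n 0 0) \<longlonglongrightarrow> L 0 0" using S_lim T by simp
  moreover have "(\<lambda>n. S n 0 0) = (\<lambda>n. 0)" unfolding S_def D_zero by simp
  ultimately have "(\<lambda>n. 0) \<longlonglongrightarrow> L 0 0" by simp
  then show ?thesis using LIMSEQ_unique[OF _ tendsto_const] by metis
qed

theorem sewing:
  "\<exists>\<phi>. \<phi> 0 = 0 \<and> (\<forall>t. t \<notin> {0..T} \<longrightarrow> \<phi> t = 0) \<and>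
     (\<forall>s t. 0 \<le> s \<and> s \<le> t \<and> t \<le> T \<longrightarrow> norm (\<phi> t - \<phi> s - Xi s t) \<le> C * K * (w t - w s) powr \<theta>)"
proof -
  define \<phi> where "\<phi> = (\<lambda>t. if t \<in> {0..T} then L 0 t else 0)"
  have 1: "\<phi> 0 = 0" unfolding \<phi>_def using L_zero by simp
  have 2: "\<forall>t. t \<notin> {0..T} \<longrightarrow> \<phi> t = 0" unfolding \<phi>_def by simp
  have 3: "norm (\<phi> t - \<phi> s - Xi s t) \<le> C * K * (w t - w s) powr \<theta>" if h: "0 \<le> s \<and> s \<le> t \<and> t \<le> T" for s t
  proof -
    have "L 0 t - L 0 s = L s t" using L_add[of 0 s t] h by (simp add: algebra_simps)
    moreover have "t \<in> {0..T}" "s \<in> {0..T}" using h by auto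
    ultimately have e: "\<phi> t - \<phi> s - Xi s t = L s t - Xi s t" unfolding \<phi>_def by simp
    show ?thesis unfolding e using L_bound[of s t] h by blast
  qed
  show ?thesis using 1 2 3 by blast
qed

end



lemma powr_small:
  fixes a B e :: real
  assumes a: "a > 0" and B: "B \<ge> 0" and e: "e > 0"
  shows "\<exists>\<epsilon>>0. B * \<epsilon> powr a < e"
proof -
  define \<epsilon> where "\<epsilon> = (e / (B + 1)) powr (1 / a)"
  have pos: "\<epsilon> > 0" unfolding \<epsilon>_def using e B by simp
  have "\<epsilon> powr a = e / (B + 1)" unfolding \<epsilon>_def using a e B by (simp add: powr_powr)
  then have "B * \<epsilon> powr a = B * (e / (B + 1))" by simp
  also have "\<dots> < e" using B e by (simp add: field_simps)
  finally show ?thesis using pos by blast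
qed

lemma powr_split_le:
  fixes x \<epsilon> \<theta> :: real
  assumes "0 \<le> x" "x \<le> \<epsilon>" "\<theta> \<ge> 1"
  shows "x powr \<theta> \<le> \<epsilon> powr (\<theta> - 1) * x"
proof -
  have "x powr \<theta> = x powr (\<theta> - 1) * x" using powr_add[of x "\<theta> - 1" 1] assms(1) by simp
  also have "\<dots> \<le> \<epsilon> powr (\<theta> - 1) * x"
    by (rule mult_right_mono[OF powr_mono2]) (use assms in auto)
  finally show ?thesis .
qed

lemma control_small:
  assumes "control T \<omega>" "\<epsilon> > 0"
  shows "\<exists>\<delta>>0. \<forall>s t. 0 \<le> s \<longrightarrow> s \<le> t \<longrightarrow> t \<le> T \<longrightarrow> t - s < \<delta> \<longrightarrow> \<omega> s t < \<epsilon>"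
proof -
  have c: "continuous_on (tri_set T) (\<lambda>(s,t). \<omega> s t)" and z: "\<And>s. 0 \<le> s \<Longrightarrow> s \<le> T \<Longrightarrow> \<omega> s s = 0"
    using assms(1) unfolding control_def by auto
  obtain d where d: "d > 0" "\<forall>a b a' b'. (a,b) \<in> tri_set T \<longrightarrow> (a',b') \<in> tri_set T \<longrightarrow> \<bar>a - a'\<bar> < d \<longrightarrow> \<bar>b - b'\<bar> < d \<longrightarrow> dist (\<omega> a b) (\<omega> a' b') < \<epsilon>"
    using tri_uc[OF c assms(2)] by auto
  show ?thesis
  proof (intro exI[of _ d] conjI allI impI)
    show "d > 0" by (rule d(1))
    fix s t assume h: "0 \<le> s" "s \<le> t" "t \<le> T" "t - s < d"
    have "(s,t) \<in> tri_set T" "(s,s) \<in> tri_set T" using h unfolding tri_set_def by auto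
    then have "dist (\<omega> s t) (\<omega> s s) < \<epsilon>" using d(2) h by auto
    then show "\<omega> s t < \<epsilon>" using z[of s] h by (simp add: dist_real_def)
  qed
qed

lemma mono_seq:
  fixes a :: "nat \<Rightarrow> real"
  assumes "\<And>i. i < N \<Longrightarrow> a i \<le> a (Suc i)"
  shows "i \<le> j \<Longrightarrow> j \<le> N \<Longrightarrow> a i \<le> a j"
proof (induction j)
  case 0 then show ?case by simp
next
  case (Suc j)
  show ?case
  proof (cases "i = Suc j")
    case False
    then have "a i \<le> a j" using Suc by simp
    also have "a j \<le> a (Suc j)" using assms Suc.prems by simp
    finally show ?thesis .
  qed simp
qed

lemma control_sum:
  assumes c: "control T \<omega>" and a0: "0 \<le> a 0" and am: "\<And>i. i < N \<Longrightarrow> a i \<le> a (Suc i)" and aN: "a N \<le> T"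
  shows "n \<le> N \<Longrightarrow> (\<Sum>i<n. \<omega> (a i) (a (Suc i))) \<le> \<omega> (a 0) (a n)"
proof (induction n)
  case 0
  have "a 0 \<le> T" using mono_seq[where a=a and N=N, OF am, of 0 N] aN by simp
  then show ?case using c a0 unfolding control_def by auto
next
  case (Suc n)
  have IH: "(\<Sum>i<n. \<omega> (a i) (a (Suc i))) \<le> \<omega> (a 0) (a n)" using Suc by simp
  have o: "a 0 \<le> a n" "a n \<le> a (Suc n)" "a (Suc n) \<le> T"
    using mono_seq[where a=a and N=N, OF am, of 0 n] mono_seq[where a=a and N=N, OF am, of n "Suc n"] mono_seq[where a=a and N=N, OF am, of "Suc n" N] Suc.prems aN by auto
  have sa: "\<omega> (a 0) (a n) + \<omega> (a n) (a (Suc n)) \<le> \<omega> (a 0) (a (Suc n))"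
    using c a0 o unfolding control_def by auto
  show ?case using IH sa by simp
qed

definition RI :: "real \<Rightarrow> (real \<Rightarrow> real \<Rightarrow> 'e::real_normed_vector) \<Rightarrow> (real \<Rightarrow> 'e) \<Rightarrow> bool" where
  "RI T Xi \<phi> \<longleftrightarrow> \<phi> 0 = 0 \<and> (\<forall>t. t \<notin> {0..T} \<longrightarrow> \<phi> t = 0) \<and>
      (\<exists>\<omega> \<theta> c. control T \<omega> \<and> \<theta> > 1 \<and>
         (\<forall>s t. 0 \<le> s \<and> s \<le> t \<and> t \<le> T \<longrightarrow> norm (\<phi> t - \<phi> s - Xi s t) \<le> c * \<omega> s t powr \<theta>))"

lemma RI_unique:
  assumes "RI T Xi \<phi>1" "RI T Xi \<phi>2"
  shows "\<phi>1 = \<phi>2"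
proof
  fix t
  obtain \<omega>1 \<theta>1 c1 where A: "control T \<omega>1" "\<theta>1 > 1" "\<forall>s t. 0 \<le> s \<and> s \<le> t \<and> t \<le> T \<longrightarrow> norm (\<phi>1 t - \<phi>1 s - Xi s t) \<le> c1 * \<omega>1 s t powr \<theta>1"
    using assms(1) unfolding RI_def by blast
  obtain \<omega>2 \<theta>2 c2 where B: "control T \<omega>2" "\<theta>2 > 1" "\<forall>s t. 0 \<le> s \<and> s \<le> t \<and> t \<le> T \<longrightarrow> norm (\<phi>2 t - \<phi>2 s - Xi s t) \<le> c2 * \<omega>2 s t powr \<theta>2"
    using assms(2) unfolding RI_def by blast
  have z1: "\<phi>1 0 = 0" "\<forall>t. t \<notin> {0..T} \<longrightarrow> \<phi>1 t = 0" and z2: "\<phi>2 0 = 0" "\<forall>t. t \<notin> {0..T} \<longrightarrow> \<phi>2 t = 0"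
    using assms unfolding RI_def by auto
  define h where "h = (\<lambda>t. \<phi>1 t - \<phi>2 t)"
  have hinc: "norm (h t - h s) \<le> \<bar>c1\<bar> * \<omega>1 s t powr \<theta>1 + \<bar>c2\<bar> * \<omega>2 s t powr \<theta>2"
    if "0 \<le> s" "s \<le> t" "t \<le> T" for s t
  proof -
    have "h t - h s = (\<phi>1 t - \<phi>1 s - Xi s t) - (\<phi>2 t - \<phi>2 s - Xi s t)" unfolding h_def by (simp add: algebra_simps)
    then have "norm (h t - h s) \<le> norm (\<phi>1 t - \<phi>1 s - Xi s t) + norm (\<phi>2 t - \<phi>2 s - Xi s t)"
      using norm_triangle_ineq4 by metis
    also have "\<dots> \<le> c1 * \<omega>1 s t powr \<theta>1 + c2 * \<omega>2 s t powr \<theta>2" using A(3) B(3) that by (meson add_mono)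
    also have "\<dots> \<le> \<bar>c1\<bar> * \<omega>1 s t powr \<theta>1 + \<bar>c2\<bar> * \<omega>2 s t powr \<theta>2"
      by (intro add_mono mult_right_mono) auto
    finally show ?thesis .
  qed
  show "\<phi>1 t = \<phi>2 t"
  proof (cases "t \<in> {0..T}")
    case False then show ?thesis using z1 z2 by auto
  next
    case True
    then have t: "0 \<le> t" "t \<le> T" by auto
    have nn1: "0 \<le> \<omega>1 0 t" "0 \<le> \<omega>2 0 t" using A(1) B(1) t unfolding control_def by auto
    have "norm (h t) < e" if e: "e > 0" for e
    proof -
      obtain \<epsilon>1 where e1: "\<epsilon>1 > 0" "(\<bar>c1\<bar> * \<omega>1 0 t) * \<epsilon>1 powr (\<theta>1 - 1) < e/2"
        using powr_small[of "\<theta>1 - 1" "\<bar>c1\<bar> * \<omega>1 0 t" "e/2"] A(2) nn1 e by auto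
      obtain \<epsilon>2 where e2: "\<epsilon>2 > 0" "(\<bar>c2\<bar> * \<omega>2 0 t) * \<epsilon>2 powr (\<theta>2 - 1) < e/2"
        using powr_small[of "\<theta>2 - 1" "\<bar>c2\<bar> * \<omega>2 0 t" "e/2"] B(2) nn1 e by auto
      obtain d1 where d1: "d1 > 0" "\<forall>s t. 0 \<le> s \<longrightarrow> s \<le> t \<longrightarrow> t \<le> T \<longrightarrow> t - s < d1 \<longrightarrow> \<omega>1 s t < \<epsilon>1"
        using control_small[OF A(1) e1(1)] by auto
      obtain d2 where d2: "d2 > 0" "\<forall>s t. 0 \<le> s \<longrightarrow> s \<le> t \<longrightarrow> t \<le> T \<longrightarrow> t - s < d2 \<longrightarrow> \<omega>2 s t < \<epsilon>2"
        using control_small[OF B(1) e2(1)] by auto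
      obtain N :: nat where N: "t / min d1 d2 < real N" using reals_Archimedean2 by blast
      have Npos: "N > 0" using N t d1 d2 by (cases N) (auto simp: field_simps)
      define a where "a i = real i * t / real N" for i
      have a0: "a 0 = 0" and aN: "a N = t" unfolding a_def using Npos by auto
      have anz: "0 \<le> a i" for i unfolding a_def using t by simp
      have amono: "a i \<le> a (Suc i)" for i unfolding a_def using t Npos by (intro divide_right_mono mult_right_mono) auto
      have ale: "i \<le> N \<Longrightarrow> a i \<le> t" for i unfolding a_def using t Npos
        by (simp add: field_simps mult_left_mono)
      have step: "a (Suc i) - a i < min d1 d2" for i
      proof -
        have "a (Suc i) - a i = (real (Suc i) * t - real i * t) / real N" unfolding a_def by (simp add: diff_divide_distrib)
        also have "\<dots> = t / real N" by (simp add: algebra_simps)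
        also have "\<dots> < min d1 d2"
        proof -
          have m: "min d1 d2 > 0" using d1 d2 by simp
          have tN: "t < min d1 d2 * real N" using N m by (simp add: pos_divide_less_eq mult.commute)
          show ?thesis using tN Npos by (subst pos_divide_less_eq) auto
        qed
        finally show ?thesis .
      qed
      have w1: "\<omega>1 (a i) (a (Suc i)) < \<epsilon>1" "\<omega>2 (a i) (a (Suc i)) < \<epsilon>2" if "i < N" for i
        using d1(2) d2(2) step[of i] anz[of i] amono[of i] ale[of "Suc i"] that t by auto
      have nnw: "0 \<le> \<omega>1 (a i) (a (Suc i))" "0 \<le> \<omega>2 (a i) (a (Suc i))" if "i < N" for i
        using A(1) B(1) anz[of i] amono[of i] ale[of "Suc i"] that t unfolding control_def by auto
      have "h t = h t - h 0" using z1 z2 unfolding h_def by simp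
      also have "\<dots> = (\<Sum>i<N. h (a (Suc i)) - h (a i))" using sum_lessThan_telescope[of "\<lambda>i. h (a i)" N] a0 aN by simp
      finally have "norm (h t) \<le> (\<Sum>i<N. norm (h (a (Suc i)) - h (a i)))" using norm_sum by metis
      also have "\<dots> \<le> (\<Sum>i<N. \<bar>c1\<bar> * (\<epsilon>1 powr (\<theta>1 - 1) * \<omega>1 (a i) (a (Suc i))) + \<bar>c2\<bar> * (\<epsilon>2 powr (\<theta>2 - 1) * \<omega>2 (a i) (a (Suc i))))"
      proof (rule sum_mono)
        fix i assume i: "i \<in> {..<N}"
        have "norm (h (a (Suc i)) - h (a i)) \<le> \<bar>c1\<bar> * \<omega>1 (a i) (a (Suc i)) powr \<theta>1 + \<bar>c2\<bar> * \<omega>2 (a i) (a (Suc i)) powr \<theta>2"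
          using hinc[of "a i" "a (Suc i)"] anz[of i] amono[of i] ale[of "Suc i"] t i by auto
        also have "\<dots> \<le> \<bar>c1\<bar> * (\<epsilon>1 powr (\<theta>1 - 1) * \<omega>1 (a i) (a (Suc i))) + \<bar>c2\<bar> * (\<epsilon>2 powr (\<theta>2 - 1) * \<omega>2 (a i) (a (Suc i)))"
          using powr_split_le[OF nnw(1) less_imp_le[OF w1(1)], where \<theta>="\<theta>1"] powr_split_le[OF nnw(2) less_imp_le[OF w1(2)], where \<theta>="\<theta>2"] A(2) B(2) i
          by (intro add_mono mult_left_mono) auto
        finally show "norm (h (a (Suc i)) - h (a i)) \<le> \<dots>" .
      qed
      also have "\<dots> = \<bar>c1\<bar> * \<epsilon>1 powr (\<theta>1 - 1) * (\<Sum>i<N. \<omega>1 (a i) (a (Suc i))) + \<bar>c2\<bar> * \<epsilon>2 powr (\<theta>2 - 1) * (\<Sum>i<N. \<omega>2 (a i) (a (Suc i)))"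
        by (simp add: sum.distrib sum_distrib_left mult.assoc)
      also have "\<dots> \<le> \<bar>c1\<bar> * \<epsilon>1 powr (\<theta>1 - 1) * \<omega>1 0 t + \<bar>c2\<bar> * \<epsilon>2 powr (\<theta>2 - 1) * \<omega>2 0 t"
        using control_sum[OF A(1), of a N N] control_sum[OF B(1), of a N N] anz amono aN a0 t
        by (intro add_mono mult_left_mono) auto
      also have "\<dots> < e" using e1(2) e2(2) by (simp add: algebra_simps)
      finally show ?thesis .
    qed
    then have "norm (h t) = 0" by (metis norm_ge_zero order_less_irrefl order_le_less)
    then show ?thesis unfolding h_def by simp
  qed
qed

lemma RI_rough_integral:
  assumes "RI T (\<lambda>s t. blinfun_apply (b s) (X s t) + apply2 (b' s) (XX s t)) \<phi>"
  shows "rough_integral X XX T b b' = \<phi>"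
proof -
  have eq: "\<And>\<psi>. RI T (\<lambda>s t. blinfun_apply (b s) (X s t) + apply2 (b' s) (XX s t)) \<psi> \<longleftrightarrow>
     (\<psi> 0 = 0 \<and> (\<forall>t. t \<notin> {0..T} \<longrightarrow> \<psi> t = 0) \<and>
      (\<exists>\<omega> \<theta> c. control T \<omega> \<and> \<theta> > 1 \<and>
         (\<forall>s t. 0 \<le> s \<and> s \<le> t \<and> t \<le> T \<longrightarrow>
            norm (\<psi> t - \<psi> s - blinfun_apply (b s) (X s t) - apply2 (b' s) (XX s t)) \<le> c * \<omega> s t powr \<theta>)))"
    unfolding RI_def by (simp add: algebra_simps)
  show ?thesis unfolding rough_integral_def
  proof (rule the_equality)
    show "\<phi> 0 = 0 \<and> (\<forall>t. t \<notin> {0..T} \<longrightarrow> \<phi> t = 0) \<and>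
      (\<exists>\<omega> \<theta> c. control T \<omega> \<and> \<theta> > 1 \<and>
         (\<forall>s t. 0 \<le> s \<and> s \<le> t \<and> t \<le> T \<longrightarrow>
            norm (\<phi> t - \<phi> s - blinfun_apply (b s) (X s t) - apply2 (b' s) (XX s t)) \<le> c * \<omega> s t powr \<theta>))"
      using assms eq by blast
    fix \<psi> assume "\<psi> 0 = 0 \<and> (\<forall>t. t \<notin> {0..T} \<longrightarrow> \<psi> t = 0) \<and>
      (\<exists>\<omega> \<theta> c. control T \<omega> \<and> \<theta> > 1 \<and>
         (\<forall>s t. 0 \<le> s \<and> s \<le> t \<and> t \<le> T \<longrightarrow>
            norm (\<psi> t - \<psi> s - blinfun_apply (b s) (X s t) - apply2 (b' s) (XX s t)) \<le> c * \<omega> s t powr \<theta>))"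
    then have "RI T (\<lambda>s t. blinfun_apply (b s) (X s t) + apply2 (b' s) (XX s t)) \<psi>" using eq by blast
    then show "\<psi> = \<phi>" using RI_unique[OF _ assms] by blast
  qed
qed



lemma tensor_apply: "blinfun_apply (tensor a c) v = (c \<bullet> v) *\<^sub>R a"
  unfolding tensor_def
  by (subst bounded_linear_Blinfun_apply) (auto intro!: bounded_linear_intros)

lemma apply2_add: "apply2 g (M + N) = apply2 g M + apply2 g N"
  unfolding apply2_def by (simp add: blinfun.add_left inner_add_right scaleR_add_left sum.distrib)

lemma apply2_diff_left: "apply2 (g - h) M = apply2 g M - apply2 h M"
  unfolding apply2_def by (simp add: blinfun.diff_left scaleR_diff_right sum_subtractf)

lemma apply2_tensor: "apply2 g (tensor a c) = blinfun_apply (blinfun_apply g a) c"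
proof -
  have ea: "a = (\<Sum>i\<in>Basis. (a \<bullet> i) *\<^sub>R i)" by (simp add: euclidean_representation)
  have ec: "c = (\<Sum>j\<in>Basis. (c \<bullet> j) *\<^sub>R j)" by (simp add: euclidean_representation)
  have "blinfun_apply (blinfun_apply g a) c = (\<Sum>i\<in>Basis. (a \<bullet> i) *\<^sub>R blinfun_apply (blinfun_apply g i) c)"
    by (subst ea) (simp add: blinfun.sum_right blinfun.sum_left blinfun.scaleR_right blinfun.scaleR_left)
  also have "\<dots> = (\<Sum>i\<in>Basis. (a \<bullet> i) *\<^sub>R (\<Sum>j\<in>Basis. (c \<bullet> j) *\<^sub>R blinfun_apply (blinfun_apply g i) j))"
    by (subst ec) (simp add: blinfun.sum_right blinfun.scaleR_right)
  also have "\<dots> = apply2 g (tensor a c)"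
    unfolding apply2_def tensor_apply
    by (simp add: scaleR_sum_right inner_commute mult.commute)
  finally show ?thesis by simp
qed

lemma apply2_norm:
  fixes M :: "'x::euclidean_space \<Rightarrow>\<^sub>L 'x"
  shows "norm (apply2 g M) \<le> real (DIM('x))^2 * norm g * norm M"
proof -
  have t: "norm ((i \<bullet> blinfun_apply M j) *\<^sub>R blinfun_apply (blinfun_apply g i) j) \<le> norm g * norm M"
    if "i \<in> Basis" "j \<in> Basis" for i j
  proof -
    have "\<bar>i \<bullet> blinfun_apply M j\<bar> \<le> norm i * norm (blinfun_apply M j)" by (rule Cauchy_Schwarz_ineq2)
    also have "\<dots> \<le> norm M" using norm_blinfun[of M j] that by simp
    finally have 1: "\<bar>i \<bullet> blinfun_apply M j\<bar> \<le> norm M" .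
    have "norm (blinfun_apply (blinfun_apply g i) j) \<le> norm (blinfun_apply g i) * norm j" by (rule norm_blinfun)
    also have "\<dots> \<le> norm g" using norm_blinfun[of g i] that by simp
    finally have 2: "norm (blinfun_apply (blinfun_apply g i) j) \<le> norm g" .
    show ?thesis using mult_mono[OF 1 2] by (simp add: mult.commute)
  qed
  have "norm (apply2 g M) \<le> (\<Sum>i\<in>Basis. \<Sum>j\<in>Basis. norm ((i \<bullet> blinfun_apply M j) *\<^sub>R blinfun_apply (blinfun_apply g i) j))"
    unfolding apply2_def by (rule order_trans[OF norm_sum sum_mono[OF norm_sum]])
  also have "\<dots> \<le> (\<Sum>i\<in>(Basis::'x set). \<Sum>j\<in>(Basis::'x set). norm g * norm M)"
    by (intro sum_mono t)
  also have "\<dots> = real (DIM('x))^2 * norm g * norm M" by (simp add: power2_eq_square)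
  finally show ?thesis .
qed

locale vf =
  fixes f :: "'y::euclidean_space \<Rightarrow> ('x::euclidean_space \<Rightarrow>\<^sub>L 'y)"
    and Df :: "'y \<Rightarrow> ('y \<Rightarrow>\<^sub>L ('x \<Rightarrow>\<^sub>L 'y))"
    and D2f :: "'y \<Rightarrow> ('y \<Rightarrow>\<^sub>L ('y \<Rightarrow>\<^sub>L ('x \<Rightarrow>\<^sub>L 'y)))"
  assumes dF: "\<And>y. (f has_derivative blinfun_apply (Df y)) (at y)"
    and dDF: "\<And>y. (Df has_derivative blinfun_apply (D2f y)) (at y)"
    and bF: "bounded (range f)" and bDF: "bounded (range Df)" and bD2F: "bounded (range D2f)"
begin

definition B1 where "B1 = Sup (range (\<lambda>y. norm (Df y)))"
definition B2 where "B2 = Sup (range (\<lambda>y. norm (D2f y)))"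

lemma bdd_norm: "bounded (range F) \<Longrightarrow> bdd_above (range (\<lambda>y. norm (F y)))"
  unfolding bounded_iff bdd_above_def by auto

lemma B1: "norm (Df y) \<le> B1" unfolding B1_def using bdd_norm[OF bDF] by (intro cSUP_upper) auto
lemma B2: "norm (D2f y) \<le> B2" unfolding B2_def using bdd_norm[OF bD2F] by (intro cSUP_upper) auto
lemma B1_nn: "0 \<le> B1" using B1[of 0] norm_ge_zero order_trans by blast
lemma B2_nn: "0 \<le> B2" using B2[of 0] norm_ge_zero order_trans by blast

lemma sup_f: "norm (f y) \<le> sup_norm f"
  unfolding sup_norm_def using bdd_norm[OF bF] by (intro cSUP_upper) auto

lemma sup_nn: "0 \<le> sup_norm f" using sup_f[of 0] norm_ge_zero order_trans by blast

lemma f_lip0: "norm (f a - f b) \<le> B1 * norm (a - b)"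
  by (rule differentiable_bound[where S=UNIV and f'="\<lambda>y. blinfun_apply (Df y)"])
     (auto intro: has_derivative_at_withinI dF simp: norm_blinfun.rep_eq[symmetric] B1)

lemma Df_lip: "norm (Df a - Df b) \<le> B2 * norm (a - b)"
  by (rule differentiable_bound[where S=UNIV and f'="\<lambda>y. blinfun_apply (D2f y)"])
     (auto intro: has_derivative_at_withinI dDF simp: norm_blinfun.rep_eq[symmetric] B2)

lemma taylor: "norm (f b - f a - blinfun_apply (Df a) (b - a)) \<le> B2 * norm (b - a)^2"
proof -
  let ?S = "cball a (norm (b - a))"
  have S: "a + t *\<^sub>R (b - a) \<in> ?S" if "t \<in> {0..1}" for t
    using that by (auto simp: dist_norm intro: mult_left_le_one_le)
  have d: "(f has_derivative blinfun_apply (Df x)) (at x within ?S)" for x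
    by (rule has_derivative_at_withinI[OF dF])
  have B: "onorm (blinfun_apply (Df x) - blinfun_apply (Df a)) \<le> B2 * norm (b - a)" if "x \<in> ?S" for x
  proof -
    have "onorm (blinfun_apply (Df x) - blinfun_apply (Df a)) = norm (Df x - Df a)"
      by (simp add: norm_blinfun.rep_eq minus_blinfun.rep_eq fun_diff_def)
    also have "\<dots> \<le> B2 * norm (x - a)" by (rule Df_lip)
    also have "\<dots> \<le> B2 * norm (b - a)" using that B2_nn by (intro mult_left_mono) (auto simp: dist_norm norm_minus_commute)
    finally show ?thesis .
  qed
  have "norm (f b - f a - blinfun_apply (Df a) (b - a)) \<le> norm (b - a) * (B2 * norm (b - a))"
    by (rule differentiable_bound_linearization[where S="?S", OF S d B]) auto
  then show ?thesis by (simp add: power2_eq_square mult.commute mult.left_commute)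
qed

lemma fderiv: "frechet_derivative f (at y) = blinfun_apply (Df y)"
  using frechet_derivative_at[OF dF] by simp

lemma fdp: "f_deriv_path f z z' t = Df (z t) o\<^sub>L z' t"
proof -
  have "(\<lambda>v. blinfun_apply (Df (z t)) (blinfun_apply (z' t) v)) = blinfun_apply (Df (z t) o\<^sub>L z' t)"
    by (rule ext) simp
  then show ?thesis unfolding f_deriv_path_def fderiv by (simp add: blinfun_apply_inverse)
qed

lemma lip_props: "0 \<le> lip_norm f" "norm (f a - f b) \<le> lip_norm f * norm (a - b)"
proof -
  let ?R = "(\<lambda>(y, y'). norm (f y - f y') / dist y y') ` {(y, y'). y \<noteq> y'}"
  obtain e :: 'y where e: "e \<noteq> 0" using nonzero_Basis by blast
  have ne: "?R \<noteq> {}" using e by auto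
  have bd: "bdd_above ?R"
  proof (rule bdd_aboveI2)
    fix x :: "'y \<times> 'y" assume xin: "x \<in> {(y, y'). y \<noteq> y'}"
    obtain y y' where x0: "x = (y,y')" by (cases x)
    have x: "x = (y,y')" "y \<noteq> y'" using x0 xin by auto
    have "norm (f y - f y') / dist y y' \<le> B1 * norm (y - y') / dist y y'"
      using f_lip0[of y y'] by (intro divide_right_mono) auto
    also have "\<dots> = B1" using x by (simp add: dist_norm)
    finally show "(\<lambda>(y, y'). norm (f y - f y') / dist y y') x \<le> B1" using x by simp
  qed
  have up: "norm (f y - f y') / dist y y' \<le> lip_norm f" if "y \<noteq> y'" for y y'
    unfolding lip_norm_def using that bd by (intro cSup_upper) auto
  have z: "0 \<le> norm (f 0 - f e) / dist 0 e" by simp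
  have "0 \<noteq> e" using e by simp
  then show "0 \<le> lip_norm f" using up[of 0 e] z by linarith
  show "norm (f a - f b) \<le> lip_norm f * norm (a - b)"
  proof (cases "a = b")
    case False
    then have "norm (f a - f b) / dist a b \<le> lip_norm f" by (rule up)
    then show ?thesis using False by (simp add: dist_norm divide_le_eq)
  qed simp
qed

lemma cf_nn: "0 \<le> c_f f" unfolding c_f_def using sup_nn lip_props(1) by simp

lemma cf_zero: assumes "c_f f = 0" shows "f y = 0"
proof -
  have "sup_norm f = 0" using assms sup_nn lip_props(1) unfolding c_f_def by linarith
  then have "norm (f y) \<le> 0" using sup_f[of y] by simp
  then show ?thesis by simp
qed

lemma f_cont: "continuous_on S f"
  using dF by (meson has_derivative_continuous continuous_at_imp_continuous_on)

end



lemma root_le: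
  fixes x q lam \<omega> :: real
  assumes "0 \<le> x" "q > 0" "0 \<le> lam" "0 \<le> \<omega>" "x powr q \<le> lam * \<omega>"
  shows "x \<le> lam powr (1/q) * \<omega> powr (1/q)"
proof -
  have "x = (x powr q) powr (1/q)" using assms by (simp add: powr_powr)
  also have "\<dots> \<le> (lam * \<omega>) powr (1/q)" by (rule powr_mono2) (use assms in auto)
  also have "\<dots> = lam powr (1/q) * \<omega> powr (1/q)" by (rule powr_mult)
  finally show ?thesis .
qed

lemma vs_from_var2:
  fixes q M :: real
  assumes "q > 0" "0 \<le> v" "v powr (1/q) \<le> M"
  shows "v \<le> M powr q"
proof -
  have "v = (v powr (1/q)) powr q" using assms by (simp add: powr_powr)
  also have "\<dots> \<le> M powr q" by (rule powr_mono2) (use assms in auto)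
  finally show ?thesis .
qed

lemma absorb:
  fixes \<omega> b d :: real
  assumes "0 \<le> \<omega>" "\<omega> \<le> 5" "0 \<le> d" "d \<le> 1"
  shows "\<omega> powr (b + d) \<le> 5 * \<omega> powr b"
proof -
  have "\<omega> powr (b + d) = \<omega> powr d * \<omega> powr b" by (simp add: powr_add)
  also have "\<dots> \<le> 5 * \<omega> powr b"
  proof (rule mult_right_mono)
    have "\<omega> powr d \<le> 5 powr d" by (rule powr_mono2) (use assms in auto)
    also have "\<dots> \<le> 5 powr 1" by (rule powr_mono) (use assms in auto)
    finally show "\<omega> powr d \<le> 5" by simp
  qed simp
  finally show ?thesis .
qed

lemma var_bound:
  fixes F :: "real \<Rightarrow> real \<Rightarrow> 'e::real_normed_vector" and w :: "real \<Rightarrow> real"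
  assumes q: "q > 0" and c: "c \<ge> 0" and T: "0 \<le> T"
    and wm: "\<And>a b. 0 \<le> a \<Longrightarrow> a \<le> b \<Longrightarrow> b \<le> T \<Longrightarrow> w a \<le> w b"
    and bd: "\<And>a b. 0 \<le> a \<Longrightarrow> a \<le> b \<Longrightarrow> b \<le> T \<Longrightarrow> norm (F a b) \<le> c * (w b - w a) powr (1/q)"
  shows "finite_var2 q F 0 T" "var2 q F 0 T \<le> c * (w T - w 0) powr (1/q)"
proof -
  let ?g = "\<lambda>a b. norm (F a b) powr q"
  have pt: "?g a b \<le> c powr q * w b - c powr q * w a" if "0 \<le> a" "a < b" "b \<le> T" for a b
  proof -
    have wd: "0 \<le> w b - w a" using wm[of a b] that by simp
    have "?g a b \<le> (c * (w b - w a) powr (1/q)) powr q" by (rule powr_mono2) (use bd[of a b] that q in auto)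
    also have "\<dots> = c powr q * (w b - w a)" using q wd by (simp add: powr_mult powr_powr)
    finally show ?thesis by (simp add: algebra_simps)
  qed
  have gsb: "gs ?g P \<le> c powr q * w T - c powr q * w 0" if "ppart 0 T P" for P
    by (rule gs_le_additive[OF that, where w'="\<lambda>t. c powr q * w t"]) (use pt in auto)
  have bF: "bdd ?g 0 T" by (rule bddI[OF gsb])
  then show "finite_var2 q F 0 T" unfolding finite_var2_bdd .
  have "vs ?g 0 T \<le> c powr q * w T - c powr q * w 0" by (rule vs_le[OF T gsb])
  then have "vs ?g 0 T \<le> c powr q * (w T - w 0)" by (simp add: algebra_simps)
  then have "vs ?g 0 T powr (1/q) \<le> (c powr q * (w T - w 0)) powr (1/q)"
    by (intro powr_mono2) (use q vs_nonneg[of ?g 0 T] bF T in auto)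
  also have "\<dots> = c * (w T - w 0) powr (1/q)" using q c by (simp add: powr_mult powr_powr)
  finally show "var2 q F 0 T \<le> c * (w T - w 0) powr (1/q)" unfolding var2_vs .
qed

lemma var_compare:
  fixes F :: "real \<Rightarrow> real \<Rightarrow> 'e::real_normed_vector" and G :: "real \<Rightarrow> real \<Rightarrow> 'f::real_normed_vector"
  assumes q: "q > 0" and L: "L \<ge> 0" and T: "0 \<le> T"
    and bd: "\<And>a b. norm (F a b) \<le> L * norm (G a b)"
    and fin: "finite_var2 q G 0 T"
  shows "finite_var2 q F 0 T" "var2 q F 0 T \<le> L * var2 q G 0 T"
proof -
  let ?f = "\<lambda>a b. norm (F a b) powr q" and ?g = "\<lambda>a b. norm (G a b) powr q"
  have bG: "bdd ?g 0 T" using fin unfolding finite_var2_bdd .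
  have pt: "?f a b \<le> L powr q * ?g a b" for a b
  proof -
    have "?f a b \<le> (L * norm (G a b)) powr q" by (rule powr_mono2) (use bd q in auto)
    then show ?thesis by (simp add: powr_mult)
  qed
  have gsb: "gs ?f P \<le> L powr q * vs ?g 0 T" if "ppart 0 T P" for P
  proof -
    have "gs ?f P \<le> gs (\<lambda>a b. L powr q * ?g a b) P" by (rule gs_mono[OF pt])
    also have "\<dots> = L powr q * gs ?g P" by (rule gs_cmult)
    also have "\<dots> \<le> L powr q * vs ?g 0 T" by (rule mult_left_mono[OF gs_upper[OF bG that]]) simp
    finally show ?thesis .
  qed
  have bF: "bdd ?f 0 T" by (rule bddI[OF gsb])
  then show "finite_var2 q F 0 T" unfolding finite_var2_bdd .
  have "vs ?f 0 T \<le> L powr q * vs ?g 0 T" by (rule vs_le[OF T gsb])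
  then have "vs ?f 0 T powr (1/q) \<le> (L powr q * vs ?g 0 T) powr (1/q)"
    by (intro powr_mono2) (use q vs_nonneg[of ?f 0 T] bF T in auto)
  also have "\<dots> = L * vs ?g 0 T powr (1/q)" using q L by (simp add: powr_mult powr_powr)
  finally show "var2 q F 0 T \<le> L * var2 q G 0 T" unfolding var2_vs .
qed

lemma var2_nonneg: "0 \<le> var2 q F s t"
  unfolding var2_def by simp



lemma pow_le5:
  fixes \<omega> d :: real
  assumes "0 \<le> \<omega>" "\<omega> \<le> 5" "0 \<le> d" "d \<le> 1"
  shows "\<omega> powr d \<le> 5"
proof -
  have "\<omega> powr d \<le> 5 powr d" by (rule powr_mono2) (use assms in auto)
  also have "\<dots> \<le> 5 powr 1" by (rule powr_mono) (use assms in auto)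
  finally show ?thesis by simp
qed

lemma cont_norm_powr:
  fixes F :: "real \<times> real \<Rightarrow> 'e::real_normed_vector"
  assumes "continuous_on S F" "q > 0"
  shows "continuous_on S (\<lambda>x. norm (F x) powr q)"
  by (rule continuous_on_powr') (use assms in \<open>auto intro!: continuous_intros\<close>)

locale inst = vf f Df D2f
  for f :: "'y::euclidean_space \<Rightarrow> ('x::euclidean_space \<Rightarrow>\<^sub>L 'y)" and Df D2f +
  fixes p :: real and X :: "real \<Rightarrow> real \<Rightarrow> 'x" and XX :: "real \<Rightarrow> real \<Rightarrow> ('x \<Rightarrow>\<^sub>L 'x)"
    and x0 :: 'y and m T :: real and z :: "real \<Rightarrow> 'y" and z' :: "real \<Rightarrow> ('x \<Rightarrow>\<^sub>L 'y)" and e :: real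
  assumes p: "2 < p" "p < 3" and rp: "rough_path p X XX" and m: "1 \<le> m" and T: "0 < T" "T \<le> 1"
    and e: "0 < e" and om: "omega_rp p X XX 0 T \<le> e" and ball: "(z, z') \<in> ball_T p X f T m"
    and cf: "0 < c_f f"
begin

definition "R = remainder X z z'"
definition "lam1 = e powr p"
definition "lam2 = e powr (p/2)"
definition "lam3 = (m / c_f f) powr p + 1"
definition "lam4 = m powr p"

definition g :: "real \<Rightarrow> real \<Rightarrow> real" where
  "g a b = (1/lam1) * norm (X a b) powr p + (1/lam2) * norm (XX a b) powr (p/2)
     + (1/lam3) * norm (z b - z a) powr p + (1/lam4) * norm (z' b - z' a) powr p
     + (1/lam4) * norm (R a b) powr (p/2)"

lemma lam_pos: "0 < lam1" "0 < lam2" "0 < lam3" "0 < lam4"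
proof -
  have "0 \<le> (m / c_f f) powr p" by simp
  then show "0 < lam3" unfolding lam3_def by linarith
  show "0 < lam1" "0 < lam2" "0 < lam4" unfolding lam1_def lam2_def lam4_def using e m by auto
qed

lemma p_pos: "0 < p" "0 < p/2" using p by auto

lemma rp_facts:
  "continuous_on (tri_set 1) (\<lambda>(s, t). (X s t, XX s t))"
  "\<And>s u t. 0 \<le> s \<Longrightarrow> s \<le> u \<Longrightarrow> u \<le> t \<Longrightarrow> t \<le> 1 \<Longrightarrow> X s t = X s u + X u t"
  "\<And>s u t. 0 \<le> s \<Longrightarrow> s \<le> u \<Longrightarrow> u \<le> t \<Longrightarrow> t \<le> 1 \<Longrightarrow> XX s t = XX s u + XX u t + tensor (X s u) (X u t)"
  "finite_var2 p X 0 1" "finite_var2 (p / 2) XX 0 1"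
  using rp unfolding rough_path_def by auto

lemma X_diag: "0 \<le> s \<Longrightarrow> s \<le> 1 \<Longrightarrow> X s s = 0"
  using rp_facts(2)[of s s s] by simp

lemma XX_diag: "0 \<le> s \<Longrightarrow> s \<le> 1 \<Longrightarrow> XX s s = 0"
proof -
  assume h: "0 \<le> s" "s \<le> 1"
  have "tensor (X s s) (X s s) = 0" by (rule blinfun_eqI) (simp add: tensor_apply X_diag[OF h])
  then show ?thesis using rp_facts(3)[of s s s] h by simp
qed

lemma ball_facts:
  "continuous_on {0..T} z" "continuous_on {0..T} z'" "finite_pvar p z 0 T" "finite_pvar p z' 0 T"
  "finite_var2 (p / 2) R 0 T" "pvar p z 0 T \<le> m / c_f f" "var2 (p / 2) R 0 T \<le> m\<^sup>2"
  "pvar p z' 0 T \<le> m" "\<And>t. t \<in> {0..T} \<Longrightarrow> norm (z' t) \<le> sup_norm f"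
  using ball unfolding ball_T_def controlled_def R_def by auto

lemma R_diag: "0 \<le> s \<Longrightarrow> s \<le> 1 \<Longrightarrow> R s s = 0" unfolding R_def remainder_def using X_diag by simp

lemma vs_from:
  fixes F :: "real \<Rightarrow> real \<Rightarrow> 'e::real_normed_vector"
  assumes q: "q > 0" and fin: "finite_var2 q F 0 T" and v: "var2 q F 0 T \<le> M"
  shows "vs (\<lambda>a b. norm (F a b) powr q) 0 T \<le> M powr q"
proof -
  have b: "bdd (\<lambda>a b. norm (F a b) powr q) 0 T" using fin unfolding finite_var2_bdd .
  have n: "0 \<le> vs (\<lambda>a b. norm (F a b) powr q) 0 T" using vs_nonneg[OF _ b] T by simp
  show ?thesis by (rule vs_from_var2[OF q n]) (use v in \<open>simp add: var2_vs\<close>)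
qed

lemma finT:
  "finite_var2 p X 0 T" "finite_var2 (p/2) XX 0 T"
proof -
  show "finite_var2 p X 0 T" using rp_facts(4) bdd_sub2[of _ 0 1 0 T] T unfolding finite_var2_bdd by auto
  show "finite_var2 (p/2) XX 0 T" using rp_facts(5) bdd_sub2[of _ 0 1 0 T] T unfolding finite_var2_bdd by auto
qed

lemma vX: "vs (\<lambda>a b. norm (X a b) powr p) 0 T \<le> lam1"
proof -
  have "var2 p X 0 T \<le> e" using om var2_nonneg[of "p/2" XX 0 T] unfolding omega_rp_def by linarith
  then show ?thesis using vs_from[OF p_pos(1) finT(1)] unfolding lam1_def by blast
qed

lemma vXX: "vs (\<lambda>a b. norm (XX a b) powr (p/2)) 0 T \<le> lam2"
proof -
  have "var2 (p/2) XX 0 T \<le> e" using om var2_nonneg[of p X 0 T] unfolding omega_rp_def by linarith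
  then show ?thesis using vs_from[OF p_pos(2) finT(2)] unfolding lam2_def by blast
qed

lemma incr_eq: "incr h = (\<lambda>a b. h b - h a)" unfolding incr_def by auto

lemma vz: "vs (\<lambda>a b. norm (z b - z a) powr p) 0 T \<le> lam3"
proof -
  have "vs (\<lambda>a b. norm (incr z a b) powr p) 0 T \<le> (m / c_f f) powr p"
    using vs_from[OF p_pos(1), of "incr z" "m / c_f f"] ball_facts(3,6) unfolding finite_pvar_def pvar_def by blast
  then show ?thesis unfolding lam3_def incr_def by simp
qed

lemma vz': "vs (\<lambda>a b. norm (z' b - z' a) powr p) 0 T \<le> lam4"
proof -
  have "vs (\<lambda>a b. norm (incr z' a b) powr p) 0 T \<le> m powr p"
    using vs_from[OF p_pos(1), of "incr z'" m] ball_facts(4,8) unfolding finite_pvar_def pvar_def by blast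
  then show ?thesis unfolding lam4_def incr_def by simp
qed

lemma vR: "vs (\<lambda>a b. norm (R a b) powr (p/2)) 0 T \<le> lam4"
proof -
  have "vs (\<lambda>a b. norm (R a b) powr (p/2)) 0 T \<le> (m\<^sup>2) powr (p/2)"
    using vs_from[OF p_pos(2), of R "m\<^sup>2"] ball_facts(5,7) by blast
  also have "(m\<^sup>2) powr (p/2) = m powr p"
  proof -
    have "m\<^sup>2 = m powr 2" using powr_realpow[of m 2] m by simp
    then show ?thesis by (simp add: powr_powr)
  qed
  finally show ?thesis unfolding lam4_def .
qed

lemma bdds:
  "bdd (\<lambda>a b. norm (X a b) powr p) 0 T" "bdd (\<lambda>a b. norm (XX a b) powr (p/2)) 0 T"
  "bdd (\<lambda>a b. norm (z b - z a) powr p) 0 T" "bdd (\<lambda>a b. norm (z' b - z' a) powr p) 0 T"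
  "bdd (\<lambda>a b. norm (R a b) powr (p/2)) 0 T"
  using finT ball_facts(3,4,5) unfolding finite_var2_bdd finite_pvar_def incr_def by auto

lemma g_nn: "0 \<le> g a b" unfolding g_def using lam_pos by simp

lemma gs_g: "ppart 0 T P \<Longrightarrow> gs g P \<le> 5"
proof -
  assume P: "ppart 0 T P"
  have gs_eq: "gs g P = (1/lam1) * gs (\<lambda>a b. norm (X a b) powr p) P + (1/lam2) * gs (\<lambda>a b. norm (XX a b) powr (p/2)) P
     + (1/lam3) * gs (\<lambda>a b. norm (z b - z a) powr p) P + (1/lam4) * gs (\<lambda>a b. norm (z' b - z' a) powr p) P
     + (1/lam4) * gs (\<lambda>a b. norm (R a b) powr (p/2)) P"
    unfolding g_def gs_add gs_cmult by simp
  have t1: "(1/lam1) * gs (\<lambda>a b. norm (X a b) powr p) P \<le> 1"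
    using gs_upper[OF bdds(1) P] vX lam_pos by (simp add: field_simps)
  have t2: "(1/lam2) * gs (\<lambda>a b. norm (XX a b) powr (p/2)) P \<le> 1"
    using gs_upper[OF bdds(2) P] vXX lam_pos by (simp add: field_simps)
  have t3: "(1/lam3) * gs (\<lambda>a b. norm (z b - z a) powr p) P \<le> 1"
    using gs_upper[OF bdds(3) P] vz lam_pos by (simp add: field_simps)
  have t4: "(1/lam4) * gs (\<lambda>a b. norm (z' b - z' a) powr p) P \<le> 1"
    using gs_upper[OF bdds(4) P] vz' lam_pos by (simp add: field_simps)
  have t5: "(1/lam4) * gs (\<lambda>a b. norm (R a b) powr (p/2)) P \<le> 1"
    using gs_upper[OF bdds(5) P] vR lam_pos by (simp add: field_simps)
  show ?thesis using t1 t2 t3 t4 t5 unfolding gs_eq by linarith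
qed

lemma g_bdd: "bdd g 0 T" by (rule bddI[OF gs_g])

lemma tri_sub: "tri_set T \<subseteq> tri_set 1" using T unfolding tri_set_def by auto

lemma tri_fst_snd: "x \<in> tri_set T \<Longrightarrow> fst x \<in> {0..T} \<and> snd x \<in> {0..T}"
  unfolding tri_set_def by auto

lemma cX: "continuous_on (tri_set T) (\<lambda>x. X (fst x) (snd x))"
proof -
  have "continuous_on (tri_set 1) (\<lambda>x. fst ((\<lambda>(s, t). (X s t, XX s t)) x))"
    by (rule continuous_on_fst[OF rp_facts(1)])
  then have "continuous_on (tri_set 1) (\<lambda>x. X (fst x) (snd x))" by (simp add: case_prod_beta)
  then show ?thesis using continuous_on_subset tri_sub by blast
qed

lemma cXX: "continuous_on (tri_set T) (\<lambda>x. XX (fst x) (snd x))"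
proof -
  have "continuous_on (tri_set 1) (\<lambda>x. snd ((\<lambda>(s, t). (X s t, XX s t)) x))"
    by (rule continuous_on_snd[OF rp_facts(1)])
  then have "continuous_on (tri_set 1) (\<lambda>x. XX (fst x) (snd x))" by (simp add: case_prod_beta)
  then show ?thesis using continuous_on_subset tri_sub by blast
qed

lemma c_comp:
  fixes h :: "real \<Rightarrow> 'e::topological_space"
  assumes "continuous_on {0..T} h"
  shows "continuous_on (tri_set T) (\<lambda>x. h (fst x))" "continuous_on (tri_set T) (\<lambda>x. h (snd x))"
  by (rule continuous_on_compose2[OF assms continuous_on_fst[OF continuous_on_id]], use tri_fst_snd in auto)
     (rule continuous_on_compose2[OF assms continuous_on_snd[OF continuous_on_id]], use tri_fst_snd in auto)

lemma cR: "continuous_on (tri_set T) (\<lambda>x. R (fst x) (snd x))"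
proof -
  have "continuous_on (tri_set T) (\<lambda>x. z (snd x) - z (fst x) - blinfun_apply (z' (fst x)) (X (fst x) (snd x)))"
    by (intro continuous_intros c_comp ball_facts cX)
  then show ?thesis unfolding R_def remainder_def .
qed

lemma g_cont: "continuous_on (tri_set T) (\<lambda>(a,b). g a b)"
proof -
  have c1: "continuous_on (tri_set T) (\<lambda>x. norm (X (fst x) (snd x)) powr p)" by (rule cont_norm_powr[OF cX p_pos(1)])
  have c2: "continuous_on (tri_set T) (\<lambda>x. norm (XX (fst x) (snd x)) powr (p/2))" by (rule cont_norm_powr[OF cXX p_pos(2)])
  have c3: "continuous_on (tri_set T) (\<lambda>x. norm (z (snd x) - z (fst x)) powr p)"
    by (rule cont_norm_powr[OF continuous_on_diff[OF c_comp(2)[OF ball_facts(1)] c_comp(1)[OF ball_facts(1)]] p_pos(1)])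
  have c4: "continuous_on (tri_set T) (\<lambda>x. norm (z' (snd x) - z' (fst x)) powr p)"
    by (rule cont_norm_powr[OF continuous_on_diff[OF c_comp(2)[OF ball_facts(2)] c_comp(1)[OF ball_facts(2)]] p_pos(1)])
  have c5: "continuous_on (tri_set T) (\<lambda>x. norm (R (fst x) (snd x)) powr (p/2))" by (rule cont_norm_powr[OF cR p_pos(2)])
  have "continuous_on (tri_set T) (\<lambda>x. g (fst x) (snd x))"
    unfolding g_def
    by (intro continuous_on_add continuous_on_mult_left c1 c2 c3 c4 c5)
  then show ?thesis by (simp add: case_prod_beta')
qed

sublocale C: ctrl g T
  by unfold_locales (rule g_nn, rule g_cont, rule g_bdd)

definition w where "w t = vs g 0 t"

lemma w_mono: "0 \<le> a \<Longrightarrow> a \<le> b \<Longrightarrow> b \<le> T \<Longrightarrow> w a \<le> w b"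
  unfolding w_def by (rule C.W_mono)

lemma w_cont: "continuous_on {0..T} w"
  unfolding w_def by (rule C.W_cont)

lemma w0: "w 0 = 0"
proof -
  have "vs g 0 0 \<le> 0"
  proof (rule vs_le)
    fix P assume "ppart 0 0 P"
    then have "P = {0}" unfolding ppart_def by auto
    then show "gs g P \<le> 0" by simp
  qed simp
  moreover have "0 \<le> vs g 0 0" using C.vs_nn T by simp
  ultimately show ?thesis unfolding w_def by simp
qed

lemma wT: "w T \<le> 5" unfolding w_def by (rule vs_le) (use T gs_g in auto)

lemma om_le5: "0 \<le> a \<Longrightarrow> a \<le> b \<Longrightarrow> b \<le> T \<Longrightarrow> w b - w a \<le> 5 \<and> 0 \<le> w b - w a"
  using w_mono[of 0 a] w_mono[of b T] w_mono[of a b] w0 wT by auto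

lemma g_le: "0 \<le> a \<Longrightarrow> a \<le> b \<Longrightarrow> b \<le> T \<Longrightarrow> g a b \<le> w b - w a"
proof -
  assume h: "0 \<le> a" "a \<le> b" "b \<le> T"
  show ?thesis
  proof (cases "a = b")
    case True
    then show ?thesis unfolding g_def using X_diag XX_diag R_diag h T by simp
  next
    case False
    then have "g a b \<le> vs g a b" using vs_two[OF C.bd_sub] h by simp
    also have "\<dots> \<le> w b - w a" unfolding w_def using C.vs_W h by simp
    finally show ?thesis .
  qed
qed

end



lemma prod_le_W:
  fixes x y W \<alpha> \<beta> :: real
  assumes "0 \<le> x" "x \<le> W" "0 \<le> y" "y \<le> W" "0 \<le> \<alpha>" "0 \<le> \<beta>"
  shows "x powr \<alpha> * y powr \<beta> \<le> W powr (\<alpha> + \<beta>)"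
proof -
  have "x powr \<alpha> * y powr \<beta> \<le> W powr \<alpha> * W powr \<beta>"
    by (intro mult_mono powr_mono2) (use assms in auto)
  then show ?thesis by (simp add: powr_add)
qed

context inst
begin

definition "Zr = lam3 powr (1/p)"
definition "B0 = sup_norm f"
definition "Kd = real DIM('x)^2"
definition "K0 = (B2 * Zr^2 + B1 * m^2) + Kd * (B2 * Zr * B0 + B1 * m)"

lemma consts_nn: "0 \<le> Zr" "0 \<le> B0" "0 \<le> Kd" "0 \<le> K0"
proof -
  show "0 \<le> Zr" "0 \<le> B0" "0 \<le> Kd" unfolding Zr_def B0_def Kd_def using sup_nn by auto
  then show "0 \<le> K0" unfolding K0_def using B1_nn B2_nn m by simp
qed

lemma term_le:
  assumes "0 \<le> a" "a \<le> b" "b \<le> T"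
  shows "norm (X a b) powr p \<le> lam1 * (w b - w a)"
    "norm (XX a b) powr (p/2) \<le> lam2 * (w b - w a)"
    "norm (z b - z a) powr p \<le> lam3 * (w b - w a)"
    "norm (z' b - z' a) powr p \<le> lam4 * (w b - w a)"
    "norm (R a b) powr (p/2) \<le> lam4 * (w b - w a)"
proof -
  have G: "g a b \<le> w b - w a" by (rule g_le[OF assms])
  have n: "0 \<le> (1/lam1) * norm (X a b) powr p" "0 \<le> (1/lam2) * norm (XX a b) powr (p/2)"
    "0 \<le> (1/lam3) * norm (z b - z a) powr p" "0 \<le> (1/lam4) * norm (z' b - z' a) powr p"
    "0 \<le> (1/lam4) * norm (R a b) powr (p/2)" using lam_pos by auto
  have i1: "(1/lam1) * norm (X a b) powr p \<le> w b - w a" using G n unfolding g_def by linarith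
  have i2: "(1/lam2) * norm (XX a b) powr (p/2) \<le> w b - w a" using G n unfolding g_def by linarith
  have i3: "(1/lam3) * norm (z b - z a) powr p \<le> w b - w a" using G n unfolding g_def by linarith
  have i4: "(1/lam4) * norm (z' b - z' a) powr p \<le> w b - w a" using G n unfolding g_def by linarith
  have i5: "(1/lam4) * norm (R a b) powr (p/2) \<le> w b - w a" using G n unfolding g_def by linarith
  show "norm (X a b) powr p \<le> lam1 * (w b - w a)" using i1 lam_pos by (simp add: field_simps)
  show "norm (XX a b) powr (p/2) \<le> lam2 * (w b - w a)" using i2 lam_pos by (simp add: field_simps)
  show "norm (z b - z a) powr p \<le> lam3 * (w b - w a)" using i3 lam_pos by (simp add: field_simps)
  show "norm (z' b - z' a) powr p \<le> lam4 * (w b - w a)" using i4 lam_pos by (simp add: field_simps)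
  show "norm (R a b) powr (p/2) \<le> lam4 * (w b - w a)" using i5 lam_pos by (simp add: field_simps)
qed

lemma lam_roots: "lam1 powr (1/p) = e" "lam2 powr (1/(p/2)) = e" "lam4 powr (1/p) = m" "lam4 powr (1/(p/2)) = m^2"
proof -
  show "lam1 powr (1/p) = e" unfolding lam1_def using e p by (simp add: powr_powr)
  show "lam2 powr (1/(p/2)) = e" unfolding lam2_def using e p by (simp add: powr_powr)
  show "lam4 powr (1/p) = m" unfolding lam4_def using m p by (simp add: powr_powr)
  have "lam4 powr (1/(p/2)) = m powr 2" unfolding lam4_def using m p by (simp add: powr_powr)
  also have "\<dots> = m^2" using powr_realpow[of m 2] m by simp
  finally show "lam4 powr (1/(p/2)) = m^2" .
qed

lemma pt_bounds:
  assumes "0 \<le> a" "a \<le> b" "b \<le> T"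
  shows "norm (X a b) \<le> e * (w b - w a) powr (1/p)"
    "norm (XX a b) \<le> e * (w b - w a) powr (2/p)"
    "norm (z b - z a) \<le> Zr * (w b - w a) powr (1/p)"
    "norm (z' b - z' a) \<le> m * (w b - w a) powr (1/p)"
    "norm (R a b) \<le> m^2 * (w b - w a) powr (2/p)"
proof -
  have om: "0 \<le> w b - w a" using w_mono[OF assms] by simp
  have q2: "1/(p/2) = 2/p" by simp
  show "norm (X a b) \<le> e * (w b - w a) powr (1/p)"
    using root_le[OF norm_ge_zero p_pos(1) less_imp_le[OF lam_pos(1)] om term_le(1)[OF assms]] lam_roots by simp
  show "norm (XX a b) \<le> e * (w b - w a) powr (2/p)"
    using root_le[OF norm_ge_zero p_pos(2) less_imp_le[OF lam_pos(2)] om term_le(2)[OF assms]] lam_roots q2 by simp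
  show "norm (z b - z a) \<le> Zr * (w b - w a) powr (1/p)"
    using root_le[OF norm_ge_zero p_pos(1) less_imp_le[OF lam_pos(3)] om term_le(3)[OF assms]] unfolding Zr_def by simp
  show "norm (z' b - z' a) \<le> m * (w b - w a) powr (1/p)"
    using root_le[OF norm_ge_zero p_pos(1) less_imp_le[OF lam_pos(4)] om term_le(4)[OF assms]] lam_roots by simp
  show "norm (R a b) \<le> m^2 * (w b - w a) powr (2/p)"
    using root_le[OF norm_ge_zero p_pos(2) less_imp_le[OF lam_pos(4)] om term_le(5)[OF assms]] lam_roots q2 by simp
qed

definition bp :: "real \<Rightarrow> ('x \<Rightarrow>\<^sub>L ('x \<Rightarrow>\<^sub>L 'y))" where "bp s = Df (z s) o\<^sub>L z' s"

lemma bp_norm: "0 \<le> s \<Longrightarrow> s \<le> T \<Longrightarrow> norm (bp s) \<le> B1 * B0"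
proof -
  assume h: "0 \<le> s" "s \<le> T"
  have "norm (bp s) \<le> norm (Df (z s)) * norm (z' s)" unfolding bp_def by (rule norm_blinfun_compose)
  also have "\<dots> \<le> B1 * B0" using B1 ball_facts(9)[of s] h B1_nn unfolding B0_def
    by (intro mult_mono) auto
  finally show ?thesis .
qed

lemma bp_diff:
  assumes "0 \<le> s" "s \<le> T" "0 \<le> u" "u \<le> T"
  shows "norm (bp u - bp s) \<le> B2 * norm (z u - z s) * B0 + B1 * norm (z' u - z' s)"
proof -
  have eq: "bp u - bp s = ((Df (z u) - Df (z s)) o\<^sub>L z' u) + (Df (z s) o\<^sub>L (z' u - z' s))"
    unfolding bp_def by (rule blinfun_eqI) (simp add: blinfun.add_left blinfun.diff_left blinfun.diff_right)
  have "norm (bp u - bp s) \<le> norm ((Df (z u) - Df (z s)) o\<^sub>L z' u) + norm ((Df (z s)) o\<^sub>L (z' u - z' s))"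
    unfolding eq by (rule norm_triangle_ineq)
  also have "\<dots> \<le> norm (Df (z u) - Df (z s)) * norm (z' u) + norm (Df (z s)) * norm (z' u - z' s)"
    by (intro add_mono norm_blinfun_compose)
  also have "\<dots> \<le> (B2 * norm (z u - z s)) * B0 + B1 * norm (z' u - z' s)"
    using Df_lip[of "z u" "z s"] ball_facts(9)[of u] B1[of "z s"] assms B1_nn B2_nn unfolding B0_def
    by (intro add_mono mult_mono) auto
  finally show ?thesis by simp
qed

lemma Rb_bound:
  assumes "0 \<le> s" "s \<le> T"
  shows "norm (f (z u) - f (z s) - blinfun_apply (bp s) (X s u)) \<le> B2 * norm (z u - z s)^2 + B1 * norm (R s u)"
proof -
  have eq: "f (z u) - f (z s) - blinfun_apply (bp s) (X s u) =
     (f (z u) - f (z s) - blinfun_apply (Df (z s)) (z u - z s)) + blinfun_apply (Df (z s)) (R s u)"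
    unfolding bp_def R_def remainder_def by (simp add: blinfun.diff_right)
  have "norm (f (z u) - f (z s) - blinfun_apply (bp s) (X s u)) \<le>
     norm (f (z u) - f (z s) - blinfun_apply (Df (z s)) (z u - z s)) + norm (blinfun_apply (Df (z s)) (R s u))"
    unfolding eq by (rule norm_triangle_ineq)
  also have "\<dots> \<le> B2 * norm (z u - z s)^2 + B1 * norm (R s u)"
  proof (rule add_mono)
    show "norm (f (z u) - f (z s) - blinfun_apply (Df (z s)) (z u - z s)) \<le> B2 * norm (z u - z s)^2" by (rule taylor)
    have "norm (blinfun_apply (Df (z s)) (R s u)) \<le> norm (Df (z s)) * norm (R s u)" by (rule norm_blinfun)
    also have "\<dots> \<le> B1 * norm (R s u)" by (rule mult_right_mono[OF B1]) simp
    finally show "norm (blinfun_apply (Df (z s)) (R s u)) \<le> B1 * norm (R s u)" .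
  qed
  finally show ?thesis .
qed

definition Xi :: "real \<Rightarrow> real \<Rightarrow> 'y" where
  "Xi s t = blinfun_apply (f (z s)) (X s t) + apply2 (f_deriv_path f z z' s) (XX s t)"

lemma Xi_alt: "Xi s t = blinfun_apply (f (z s)) (X s t) + apply2 (bp s) (XX s t)"
  unfolding Xi_def bp_def fdp ..

lemma defect_eq:
  assumes "0 \<le> s" "s \<le> u" "u \<le> t" "t \<le> T"
  shows "Xi s t - Xi s u - Xi u t = - blinfun_apply (f (z u) - f (z s) - blinfun_apply (bp s) (X s u)) (X u t)
     - apply2 (bp u - bp s) (XX u t)"
proof -
  have a: "0 \<le> s" "s \<le> u" "u \<le> t" "t \<le> 1" using assms T by auto
  have c1: "X s t = X s u + X u t" by (rule rp_facts(2)[OF a])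
  have c2: "XX s t = XX s u + XX u t + tensor (X s u) (X u t)" by (rule rp_facts(3)[OF a])
  show ?thesis
    unfolding Xi_alt c1 c2 apply2_add apply2_tensor apply2_diff_left
    by (simp add: blinfun.add_right blinfun.add_left blinfun.diff_left blinfun.minus_left algebra_simps)
qed

lemma defect_bound:
  assumes "0 \<le> s" "s \<le> u" "u \<le> t" "t \<le> T"
  shows "norm (Xi s t - Xi s u - Xi u t) \<le> (e * K0) * (w t - w s) powr (3/p)"
proof -
  define x where "x = w u - w s"
  define y where "y = w t - w u"
  define W where "W = w t - w s"
  have xy: "0 \<le> x" "x \<le> W" "0 \<le> y" "y \<le> W"
    using w_mono[of s u] w_mono[of u t] w_mono[of s t] w_mono[of 0 s] assms unfolding x_def y_def W_def by auto
  have p0: "0 \<le> 1/p" "0 \<le> 2/p" using p by auto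
  have e32: "2/p + 1/p = 3/p" "1/p + 2/p = 3/p" by (simp_all add: field_simps)
  have sq: "(Zr * x powr (1/p))^2 = Zr^2 * x powr (2/p)"
    by (simp add: power2_eq_square powr_add[symmetric])
  have bzsu: "norm (z u - z s) \<le> Zr * x powr (1/p)" using pt_bounds(3)[of s u] assms unfolding x_def by auto
  have bRsu: "norm (R s u) \<le> m^2 * x powr (2/p)" using pt_bounds(5)[of s u] assms unfolding x_def by auto
  have bz'su: "norm (z' u - z' s) \<le> m * x powr (1/p)" using pt_bounds(4)[of s u] assms unfolding x_def by auto
  have bXut: "norm (X u t) \<le> e * y powr (1/p)" using pt_bounds(1)[of u t] assms unfolding y_def by auto
  have bXXut: "norm (XX u t) \<le> e * y powr (2/p)" using pt_bounds(2)[of u t] assms unfolding y_def by auto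
  have zsq: "norm (z u - z s)^2 \<le> Zr^2 * x powr (2/p)"
    using power_mono[OF bzsu norm_ge_zero, of 2] sq by simp
  have A: "norm (f (z u) - f (z s) - blinfun_apply (bp s) (X s u)) \<le> (B2 * Zr^2 + B1 * m^2) * x powr (2/p)"
  proof -
    have "norm (f (z u) - f (z s) - blinfun_apply (bp s) (X s u)) \<le> B2 * norm (z u - z s)^2 + B1 * norm (R s u)"
      by (rule Rb_bound) (use assms in auto)
    also have "\<dots> \<le> B2 * (Zr^2 * x powr (2/p)) + B1 * (m^2 * x powr (2/p))"
      by (intro add_mono mult_left_mono zsq bRsu B1_nn B2_nn)
    finally show ?thesis by (simp add: algebra_simps)
  qed
  have Bp: "norm (bp u - bp s) \<le> (B2 * Zr * B0 + B1 * m) * x powr (1/p)"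
  proof -
    have "norm (bp u - bp s) \<le> B2 * norm (z u - z s) * B0 + B1 * norm (z' u - z' s)"
      by (rule bp_diff) (use assms in auto)
    also have "\<dots> \<le> B2 * (Zr * x powr (1/p)) * B0 + B1 * (m * x powr (1/p))"
      using consts_nn B1_nn B2_nn by (intro add_mono mult_left_mono mult_right_mono bzsu bz'su) auto
    finally show ?thesis by (simp add: algebra_simps)
  qed
  have t1: "norm (blinfun_apply (f (z u) - f (z s) - blinfun_apply (bp s) (X s u)) (X u t)) \<le>
      (B2 * Zr^2 + B1 * m^2) * e * W powr (3/p)"
  proof -
    have "norm (blinfun_apply (f (z u) - f (z s) - blinfun_apply (bp s) (X s u)) (X u t)) \<le>
        norm (f (z u) - f (z s) - blinfun_apply (bp s) (X s u)) * norm (X u t)" by (rule norm_blinfun)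
    also have "\<dots> \<le> ((B2 * Zr^2 + B1 * m^2) * x powr (2/p)) * (e * y powr (1/p))"
      using B1_nn B2_nn by (intro mult_mono A bXut) auto
    also have "\<dots> = (B2 * Zr^2 + B1 * m^2) * e * (x powr (2/p) * y powr (1/p))" by (simp add: algebra_simps)
    also have "\<dots> \<le> (B2 * Zr^2 + B1 * m^2) * e * W powr (3/p)"
      using prod_le_W[OF xy p0(2) p0(1)] e32 e B1_nn B2_nn by (intro mult_left_mono) auto
    finally show ?thesis .
  qed
  have t2: "norm (apply2 (bp u - bp s) (XX u t)) \<le> Kd * (B2 * Zr * B0 + B1 * m) * e * W powr (3/p)"
  proof -
    have "norm (apply2 (bp u - bp s) (XX u t)) \<le> Kd * norm (bp u - bp s) * norm (XX u t)"
      unfolding Kd_def by (rule apply2_norm)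
    also have "\<dots> \<le> Kd * ((B2 * Zr * B0 + B1 * m) * x powr (1/p)) * (e * y powr (2/p))"
      using consts_nn B1_nn B2_nn m by (intro mult_mono mult_left_mono Bp bXXut) auto
    also have "\<dots> = Kd * (B2 * Zr * B0 + B1 * m) * e * (x powr (1/p) * y powr (2/p))" by (simp add: algebra_simps)
    also have "\<dots> \<le> Kd * (B2 * Zr * B0 + B1 * m) * e * W powr (3/p)"
      using prod_le_W[OF xy p0(1) p0(2)] e32 e consts_nn B1_nn B2_nn m by (intro mult_left_mono) auto
    finally show ?thesis .
  qed
  have "norm (Xi s t - Xi s u - Xi u t) \<le> norm (blinfun_apply (f (z u) - f (z s) - blinfun_apply (bp s) (X s u)) (X u t))
      + norm (apply2 (bp u - bp s) (XX u t))"
    unfolding defect_eq[OF assms] by (metis norm_minus_cancel norm_triangle_ineq4 diff_conv_add_uminus)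
  also have "\<dots> \<le> (e * K0) * W powr (3/p)" using t1 t2 unfolding K0_def by (simp add: algebra_simps)
  finally show ?thesis unfolding W_def .
qed

end



context inst
begin

lemma th_gt: "3/p > 1" using p by (simp add: field_simps)

sublocale S: sew Xi w T "e * K0" "3/p"
proof unfold_locales
  show "\<And>a b. 0 \<le> a \<Longrightarrow> a \<le> b \<Longrightarrow> b \<le> T \<Longrightarrow> w a \<le> w b" by (rule w_mono)
  show "continuous_on {0..T} w" by (rule w_cont)
  show "3/p > 1" by (rule th_gt)
  show "0 \<le> e * K0" using e consts_nn by simp
  show "0 < T" using T by simp
  show "\<And>s u t. 0 \<le> s \<Longrightarrow> s \<le> u \<Longrightarrow> u \<le> t \<Longrightarrow> t \<le> T \<Longrightarrow>
        norm (Xi s t - Xi s u - Xi u t) \<le> e * K0 * (w t - w s) powr (3/p)"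
    by (rule defect_bound)
qed

definition phi where "phi = (SOME \<phi>. \<phi> 0 = 0 \<and> (\<forall>t. t \<notin> {0..T} \<longrightarrow> \<phi> t = 0) \<and>
     (\<forall>s t. 0 \<le> s \<and> s \<le> t \<and> t \<le> T \<longrightarrow> norm (\<phi> t - \<phi> s - Xi s t) \<le> S.C * (e * K0) * (w t - w s) powr (3/p)))"

lemma phi: "phi 0 = 0" "\<forall>t. t \<notin> {0..T} \<longrightarrow> phi t = 0"
  "\<And>s t. 0 \<le> s \<Longrightarrow> s \<le> t \<Longrightarrow> t \<le> T \<Longrightarrow> norm (phi t - phi s - Xi s t) \<le> S.C * (e * K0) * (w t - w s) powr (3/p)"
proof -
  note sx = someI_ex[OF S.sewing]
  show "phi 0 = 0" "\<forall>t. t \<notin> {0..T} \<longrightarrow> phi t = 0" using sx unfolding phi_def by blast+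
  show "\<And>s t. 0 \<le> s \<Longrightarrow> s \<le> t \<Longrightarrow> t \<le> T \<Longrightarrow> norm (phi t - phi s - Xi s t) \<le> S.C * (e * K0) * (w t - w s) powr (3/p)"
    using sx unfolding phi_def by blast
qed

lemma control_w: "control T (\<lambda>s t. w t - w s)"
  unfolding control_def
proof (intro conjI allI impI)
  have "continuous_on (tri_set T) (\<lambda>x. w (snd x) - w (fst x))"
    by (intro continuous_on_diff c_comp w_cont)
  then show "continuous_on (tri_set T) (\<lambda>(s, t). w t - w s)" by (simp add: case_prod_beta')
  fix s t assume "0 \<le> s \<and> s \<le> t \<and> t \<le> T" then show "0 \<le> w t - w s" using w_mono by auto
next
  fix s show "w s - w s = 0" by simp
next
  fix s u t show "w u - w s + (w t - w u) \<le> w t - w s" by simp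
qed

lemma RI_phi: "RI T Xi phi"
  unfolding RI_def using phi control_w th_gt by blast

lemma rint: "rough_integral X XX T (\<lambda>s. f (z s)) (f_deriv_path f z z') = phi"
proof (rule RI_rough_integral)
  have "(\<lambda>s t. blinfun_apply (f (z s)) (X s t) + apply2 (f_deriv_path f z z' s) (XX s t)) = Xi"
    unfolding Xi_def by (intro ext) simp
  then show "RI T (\<lambda>s t. blinfun_apply (f (z s)) (X s t) + apply2 (f_deriv_path f z z' s) (XX s t)) phi"
    using RI_phi by simp
qed

definition "K1 = Kd * B1 * B0 + 5 * S.C * K0"
definition "K2 = B0 + 5 * Kd * B1 * B0 + 5 * S.C * K0"

lemma K_nn: "0 \<le> K1" "0 \<le> K2" "0 \<le> S.C"
  using consts_nn B1_nn S.C_pos unfolding K1_def K2_def by auto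

lemma fX: "0 \<le> a \<Longrightarrow> a \<le> b \<Longrightarrow> b \<le> T \<Longrightarrow> norm (blinfun_apply (f (z a)) (X a b)) \<le> B0 * (e * (w b - w a) powr (1/p))"
proof -
  assume h: "0 \<le> a" "a \<le> b" "b \<le> T"
  have "norm (blinfun_apply (f (z a)) (X a b)) \<le> norm (f (z a)) * norm (X a b)" by (rule norm_blinfun)
  also have "\<dots> \<le> B0 * (e * (w b - w a) powr (1/p))"
    using sup_f[of "z a"] pt_bounds(1)[OF h] sup_nn unfolding B0_def by (intro mult_mono) auto
  finally show ?thesis .
qed

lemma AXX: "0 \<le> a \<Longrightarrow> a \<le> b \<Longrightarrow> b \<le> T \<Longrightarrow> norm (apply2 (bp a) (XX a b)) \<le> Kd * B1 * B0 * (e * (w b - w a) powr (2/p))"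
proof -
  assume h: "0 \<le> a" "a \<le> b" "b \<le> T"
  have "norm (apply2 (bp a) (XX a b)) \<le> Kd * norm (bp a) * norm (XX a b)" unfolding Kd_def by (rule apply2_norm)
  also have "\<dots> \<le> Kd * (B1 * B0) * (e * (w b - w a) powr (2/p))"
    using bp_norm[of a] pt_bounds(2)[OF h] h consts_nn B1_nn by (intro mult_mono mult_left_mono) auto
  finally show ?thesis by (simp add: mult.assoc)
qed

lemma phi_inc: "0 \<le> a \<Longrightarrow> a \<le> b \<Longrightarrow> b \<le> T \<Longrightarrow> norm (phi b - phi a) \<le> e * K2 * (w b - w a) powr (1/p)"
proof -
  assume h: "0 \<le> a" "a \<le> b" "b \<le> T"
  define \<omega> where "\<omega> = w b - w a"
  have om: "0 \<le> \<omega>" "\<omega> \<le> 5" using om_le5[OF h] unfolding \<omega>_def by auto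
  have a1: "\<omega> powr (2/p) \<le> 5 * \<omega> powr (1/p)" using absorb[OF om, of "1/p" "1/p"] p by (simp add: add_divide_distrib[symmetric])
  have a2: "\<omega> powr (3/p) \<le> 5 * \<omega> powr (1/p)" using absorb[OF om, of "2/p" "1/p"] p by (simp add: add_divide_distrib[symmetric])
  have eq: "phi b - phi a = (phi b - phi a - Xi a b) + blinfun_apply (f (z a)) (X a b) + apply2 (bp a) (XX a b)"
    unfolding Xi_alt by simp
  have "norm (phi b - phi a) \<le> norm (phi b - phi a - Xi a b) + norm (blinfun_apply (f (z a)) (X a b)) + norm (apply2 (bp a) (XX a b))"
  proof -
    have "norm ((phi b - phi a - Xi a b) + blinfun_apply (f (z a)) (X a b) + apply2 (bp a) (XX a b)) \<le>
       norm ((phi b - phi a - Xi a b) + blinfun_apply (f (z a)) (X a b)) + norm (apply2 (bp a) (XX a b))"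
      by (rule norm_triangle_ineq)
    moreover have "norm ((phi b - phi a - Xi a b) + blinfun_apply (f (z a)) (X a b)) \<le>
       norm (phi b - phi a - Xi a b) + norm (blinfun_apply (f (z a)) (X a b))"
      by (rule norm_triangle_ineq)
    moreover have "norm (phi b - phi a) = norm ((phi b - phi a - Xi a b) + blinfun_apply (f (z a)) (X a b) + apply2 (bp a) (XX a b))"
      by (rule arg_cong[OF eq])
    ultimately show ?thesis by linarith
  qed
  also have "\<dots> \<le> S.C * (e * K0) * \<omega> powr (3/p) + B0 * (e * \<omega> powr (1/p)) + Kd * B1 * B0 * (e * \<omega> powr (2/p))"
    using phi(3)[OF h] fX[OF h] AXX[OF h] unfolding \<omega>_def by (intro add_mono) auto
  also have "\<dots> \<le> S.C * (e * K0) * (5 * \<omega> powr (1/p)) + B0 * (e * \<omega> powr (1/p)) + Kd * B1 * B0 * (e * (5 * \<omega> powr (1/p)))"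
    using K_nn consts_nn e B1_nn a1 a2 by (intro add_mono mult_left_mono) auto
  also have "\<dots> = e * K2 * \<omega> powr (1/p)" unfolding K2_def by (simp add: algebra_simps)
  finally show ?thesis unfolding \<omega>_def .
qed

lemma rem_inc: "0 \<le> a \<Longrightarrow> a \<le> b \<Longrightarrow> b \<le> T \<Longrightarrow>
   norm (phi b - phi a - blinfun_apply (f (z a)) (X a b)) \<le> e * K1 * (w b - w a) powr (1/(p/2))"
proof -
  assume h: "0 \<le> a" "a \<le> b" "b \<le> T"
  define \<omega> where "\<omega> = w b - w a"
  have om: "0 \<le> \<omega>" "\<omega> \<le> 5" using om_le5[OF h] unfolding \<omega>_def by auto
  have a2: "\<omega> powr (3/p) \<le> 5 * \<omega> powr (2/p)" using absorb[OF om, of "1/p" "2/p"] p by (simp add: add_divide_distrib[symmetric])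
  have eq: "phi b - phi a - blinfun_apply (f (z a)) (X a b) = (phi b - phi a - Xi a b) + apply2 (bp a) (XX a b)"
    unfolding Xi_alt by simp
  have "norm (phi b - phi a - blinfun_apply (f (z a)) (X a b)) \<le> norm (phi b - phi a - Xi a b) + norm (apply2 (bp a) (XX a b))"
    unfolding eq by (rule norm_triangle_ineq)
  also have "\<dots> \<le> S.C * (e * K0) * \<omega> powr (3/p) + Kd * B1 * B0 * (e * \<omega> powr (2/p))"
    using phi(3)[OF h] AXX[OF h] unfolding \<omega>_def by (intro add_mono) auto
  also have "\<dots> \<le> S.C * (e * K0) * (5 * \<omega> powr (2/p)) + Kd * B1 * B0 * (e * \<omega> powr (2/p))"
    using K_nn consts_nn e a2 B1_nn by (intro add_mono mult_left_mono) auto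
  also have "\<dots> = e * K1 * \<omega> powr (2/p)" unfolding K1_def by (simp add: algebra_simps)
  finally show ?thesis unfolding \<omega>_def by simp
qed

lemma phi_cont: "continuous_on {0..T} phi"
  unfolding continuous_on_iff
proof (intro ballI allI impI)
  fix t \<epsilon> :: real assume t: "t \<in> {0..T}" and eps: "\<epsilon> > 0"
  obtain \<eta> where eta: "\<eta> > 0" "(e * K2) * \<eta> powr (1/p) < \<epsilon>"
    using powr_small[of "1/p" "e * K2" \<epsilon>] p e K_nn eps by auto
  obtain d where d: "d > 0" "\<forall>t'\<in>{0..T}. dist t' t < d \<longrightarrow> dist (w t') (w t) < \<eta>"
    using w_cont t eta(1) unfolding continuous_on_iff by blast
  show "\<exists>d>0. \<forall>t'\<in>{0..T}. dist t' t < d \<longrightarrow> dist (phi t') (phi t) < \<epsilon>"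
  proof (intro exI[of _ d] conjI ballI impI)
    show "d > 0" by (rule d(1))
    fix t' assume t': "t' \<in> {0..T}" "dist t' t < d"
    have wd: "\<bar>w t' - w t\<bar> < \<eta>" using d(2) t' by (simp add: dist_real_def)
    have "norm (phi t' - phi t) \<le> e * K2 * \<bar>w t' - w t\<bar> powr (1/p)"
    proof (cases "t \<le> t'")
      case True
      then show ?thesis using phi_inc[of t t'] t t' w_mono[of t t'] by auto
    next
      case False
      then have "norm (phi t - phi t') \<le> e * K2 * (w t - w t') powr (1/p)" using phi_inc[of t' t] t t' by auto
      moreover have "w t' \<le> w t" using w_mono[of t' t] t t' False by auto
      ultimately show ?thesis by (simp add: norm_minus_commute)
    qed
    also have "\<dots> \<le> e * K2 * \<eta> powr (1/p)"
      using wd p e K_nn by (intro mult_left_mono powr_mono2) auto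
    also have "\<dots> < \<epsilon>" using eta(2) by simp
    finally show "dist (phi t') (phi t) < \<epsilon>" by (simp add: dist_norm)
  qed
qed

lemma main_inst:
  assumes c1: "5 * e * K1 \<le> m^2" and c2: "5 * e * K2 * c_f f \<le> m"
  shows "I_map X XX T f x0 z z' \<in> ball_T p X f T m"
proof -
  define zn where "zn = (\<lambda>t. x0 + phi t)"
  define fz where "fz = (\<lambda>t. f (z t))"
  have Ieq: "I_map X XX T f x0 z z' = (zn, fz)" unfolding I_map_def rint zn_def fz_def by simp
  have T0: "0 \<le> T" using T by simp
  have wT0: "w T - w 0 \<le> 5" "0 \<le> w T - w 0" using om_le5[of 0 T] T by auto
  have incr_zn: "incr zn = (\<lambda>a b. phi b - phi a)" unfolding incr_def zn_def by (intro ext) simp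
  have rem_zn: "remainder X zn fz = (\<lambda>a b. phi b - phi a - blinfun_apply (f (z a)) (X a b))"
    unfolding remainder_def zn_def fz_def by (intro ext) simp
  have eK: "0 \<le> e * K2" "0 \<le> e * K1" using e K_nn by auto
  have vb1: "finite_var2 p (\<lambda>a b. phi b - phi a) 0 T"
      "var2 p (\<lambda>a b. phi b - phi a) 0 T \<le> e * K2 * (w T - w 0) powr (1/p)"
    by (rule var_bound[OF p_pos(1) eK(1) T0 w_mono phi_inc], assumption+)+
  have vb2: "finite_var2 (p/2) (\<lambda>a b. phi b - phi a - blinfun_apply (f (z a)) (X a b)) 0 T"
      "var2 (p/2) (\<lambda>a b. phi b - phi a - blinfun_apply (f (z a)) (X a b)) 0 T \<le> e * K1 * (w T - w 0) powr (1/(p/2))"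
    by (rule var_bound[OF p_pos(2) eK(2) T0 w_mono rem_inc], assumption+)+
  have incr_fz: "norm (incr fz a b) \<le> lip_norm f * norm (incr z a b)" for a b
    unfolding incr_def fz_def using lip_props(2) by simp
  note vc = var_compare[OF p_pos(1) lip_props(1) T0 incr_fz]
  have fin_z: "finite_var2 p (incr z) 0 T" using ball_facts(3) unfolding finite_pvar_def .
  have cont_fz: "continuous_on {0..T} fz" unfolding fz_def
    by (rule continuous_on_compose2[OF f_cont ball_facts(1)]) auto
  have cont_zn: "continuous_on {0..T} zn" unfolding zn_def by (intro continuous_intros phi_cont)
  have ctrl: "controlled p X T zn fz"
    unfolding controlled_def finite_pvar_def
    using cont_zn cont_fz vb1(1) vc(1)[OF fin_z] vb2(1) unfolding incr_zn rem_zn by simp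
  have pz: "pvar p zn 0 T \<le> m / c_f f"
  proof -
    have "pvar p zn 0 T \<le> e * K2 * (w T - w 0) powr (1/p)" unfolding pvar_def incr_zn by (rule vb1(2))
    also have "\<dots> \<le> e * K2 * 5" using pow_le5[OF wT0(2) wT0(1), of "1/p"] p e K_nn by (intro mult_left_mono) auto
    finally have "pvar p zn 0 T * c_f f \<le> e * K2 * 5 * c_f f" using cf by (simp add: mult_right_mono)
    also have "\<dots> \<le> m" using c2 by (simp add: algebra_simps)
    finally show ?thesis using cf by (simp add: field_simps)
  qed
  have pR: "var2 (p / 2) (remainder X zn fz) 0 T \<le> m\<^sup>2"
  proof -
    have "var2 (p / 2) (remainder X zn fz) 0 T \<le> e * K1 * (w T - w 0) powr (1/(p/2))" unfolding rem_zn by (rule vb2(2))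
    also have "\<dots> \<le> e * K1 * 5" using pow_le5[OF wT0(2) wT0(1), of "1/(p/2)"] p e K_nn by (intro mult_left_mono) auto
    also have "\<dots> \<le> m\<^sup>2" using c1 by (simp add: algebra_simps)
    finally show ?thesis .
  qed
  have pfz: "pvar p fz 0 T \<le> m"
  proof -
    have "pvar p fz 0 T \<le> lip_norm f * pvar p z 0 T" unfolding pvar_def using vc(2)[OF fin_z] .
    also have "\<dots> \<le> lip_norm f * (m / c_f f)" using ball_facts(6) lip_props(1) by (intro mult_left_mono) auto
    also have "\<dots> \<le> c_f f * (m / c_f f)" using sup_nn m cf unfolding c_f_def by (intro mult_right_mono) auto
    also have "\<dots> = m" using cf by simp
    finally show ?thesis .
  qed
  have sfz: "\<forall>t\<in>{0..T}. norm (fz t) \<le> sup_norm f" unfolding fz_def using sup_f by simp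
  show ?thesis unfolding Ieq ball_T_def using ctrl pz pR pfz sfz by simp
qed

end



lemma gs_zero: "gs (\<lambda>a b. 0::real) P = 0" unfolding gs_def by simp

lemma zero_var:
  fixes F :: "real \<Rightarrow> real \<Rightarrow> 'e::real_normed_vector"
  assumes "\<And>a b. F a b = 0" "s \<le> t" "q > 0"
  shows "finite_var2 q F s t" "var2 q F s t = 0"
proof -
  have e: "(\<lambda>a b. norm (F a b) powr q) = (\<lambda>a b. 0)" using assms(1) by simp
  show "finite_var2 q F s t" unfolding finite_var2_bdd e by (rule bddI[of _ _ _ 0]) (simp add: gs_zero)
  have "vs (\<lambda>a b. 0) s t = 0"
  proof -
    have "gs (\<lambda>a b. 0::real) ` {P. ppart s t P} = {0}" using ppart_ne[OF assms(2)] by (auto simp: gs_zero)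
    then show ?thesis unfolding vs_def by simp
  qed
  then show "var2 q F s t = 0" unfolding var2_vs e by simp
qed

lemma apply2_zero: "apply2 0 M = 0" unfolding apply2_def by simp

context vf
begin

lemma zero_case:
  assumes cf: "c_f f = 0" and ball: "(z, z') \<in> ball_T p X f T m" and T: "0 < T" and p: "2 < p"
  shows "I_map X XX T f x0 z z' \<in> ball_T p X f T m"
proof -
  have f0: "\<And>y. f y = 0" using cf_zero[OF cf] .
  have s0: "sup_norm f = 0" using cf sup_nn lip_props(1) unfolding c_f_def by linarith
  have z'0: "\<And>t. t \<in> {0..T} \<Longrightarrow> z' t = 0" using ball s0 unfolding ball_T_def by auto
  have Xi0: "\<And>s t. 0 \<le> s \<and> s \<le> t \<and> t \<le> T \<Longrightarrow> blinfun_apply (f (z s)) (X s t) + apply2 (f_deriv_path f z z' s) (XX s t) = 0"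
  proof -
    fix s t assume h: "0 \<le> s \<and> s \<le> t \<and> t \<le> T"
    have "f_deriv_path f z z' s = 0" unfolding fdp using z'0[of s] h by (intro blinfun_eqI) simp
    then show "blinfun_apply (f (z s)) (X s t) + apply2 (f_deriv_path f z z' s) (XX s t) = 0"
      using f0 by (simp add: apply2_zero)
  qed
  have ctl: "control T (\<lambda>s t. 0)" unfolding control_def by auto
  have RI0: "RI T (\<lambda>s t. blinfun_apply (f (z s)) (X s t) + apply2 (f_deriv_path f z z' s) (XX s t)) (\<lambda>t. 0)"
    unfolding RI_def using Xi0 ctl by (intro conjI exI[of _ "\<lambda>s t. 0"] exI[of _ 2] exI[of _ 0]) auto
  have ri: "rough_integral X XX T (\<lambda>s. f (z s)) (f_deriv_path f z z') = (\<lambda>t. 0)"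
    by (rule RI_rough_integral[OF RI0])
  have Ieq: "I_map X XX T f x0 z z' = ((\<lambda>t. x0), (\<lambda>t. 0))" unfolding I_map_def ri by (simp add: f0)
  have T0: "0 \<le> T" using T by simp
  have pp: "p > 0" "p/2 > 0" using p by auto
  have i1: "incr (\<lambda>t. x0) = (\<lambda>a b. 0)" unfolding incr_def by simp
  have i2: "incr (\<lambda>t. 0::'x \<Rightarrow>\<^sub>L 'y) = (\<lambda>a b. 0)" unfolding incr_def by simp
  have r0: "remainder X (\<lambda>t. x0) (\<lambda>t. 0) = (\<lambda>a b. 0)" unfolding remainder_def by simp
  have ctrl: "controlled p X T (\<lambda>t. x0) (\<lambda>t. 0)"
    unfolding controlled_def finite_pvar_def i1 i2 r0
    using zero_var(1)[of "\<lambda>a b. 0::'y" 0 T p] zero_var(1)[of "\<lambda>a b. 0::'x \<Rightarrow>\<^sub>L 'y" 0 T p]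
      zero_var(1)[of "\<lambda>a b. 0::'y" 0 T "p/2"] T0 pp by auto
  have v1: "pvar p (\<lambda>t. x0) 0 T = 0" unfolding pvar_def i1 using zero_var(2)[of "\<lambda>a b. 0::'y" 0 T p] T0 pp by simp
  have v2: "pvar p (\<lambda>t. 0::'x \<Rightarrow>\<^sub>L 'y) 0 T = 0" unfolding pvar_def i2 using zero_var(2)[of "\<lambda>a b. 0::'x \<Rightarrow>\<^sub>L 'y" 0 T p] T0 pp by simp
  have v3: "var2 (p/2) (remainder X (\<lambda>t. x0) (\<lambda>t. 0)) 0 T = 0" unfolding r0 using zero_var(2)[of "\<lambda>a b. 0::'y" 0 T "p/2"] T0 pp by simp
  have m0: "0 \<le> m"
  proof -
    have "pvar p z' 0 T \<le> m" using ball unfolding ball_T_def by auto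
    moreover have "0 \<le> pvar p z' 0 T" unfolding pvar_def by (rule var2_nonneg)
    ultimately show ?thesis by linarith
  qed
  show ?thesis unfolding Ieq ball_T_def using ctrl v1 v2 v3 cf m0 s0 by simp
qed

end



theorem mainTheorem5:
  fixes p :: real and f :: "'y::euclidean_space \<Rightarrow> ('x::euclidean_space \<Rightarrow>\<^sub>L 'y)"
  assumes "2 < p" and "p < 3" and "C3b f"
  shows "\<exists>\<epsilon> :: real \<Rightarrow> real. (\<forall>m\<ge>1. \<epsilon> m > 0) \<and>
    (\<forall>(X :: real \<Rightarrow> real \<Rightarrow> 'x) (XX :: real \<Rightarrow> real \<Rightarrow> ('x \<Rightarrow>\<^sub>L 'x)) (x0 :: 'y) m T z z'.
       rough_path p X XX \<longrightarrow> m \<ge> 1 \<longrightarrow> 0 < T \<longrightarrow> T \<le> 1 \<longrightarrow>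
       omega_rp p X XX 0 T \<le> \<epsilon> m \<longrightarrow>
       (z, z') \<in> ball_T p X f T m \<longrightarrow>
       I_map X XX T f x0 z z' \<in> ball_T p X f T m)"
proof -
  obtain Df D2f D3f where D:
      "\<forall>y. (f has_derivative blinfun_apply (Df y)) (at y)"
      "\<forall>y. (Df has_derivative blinfun_apply (D2f y)) (at y)"
      "bounded (range f)" "bounded (range Df)" "bounded (range D2f)"
    using assms(3) unfolding C3b_def by blast
  interpret V: vf f Df D2f
    by unfold_locales (use D in auto)
  define CC where "CC = 2 / (1 - 2 powr (1 - 3/p))"
  define B0 where "B0 = sup_norm f"
  define Kd where "Kd = real DIM('x)^2"
  define Zr where "Zr m = ((m / c_f f) powr p + 1) powr (1/p)" for m
  define K0 where "K0 m = (V.B2 * (Zr m)^2 + V.B1 * m^2) + Kd * (V.B2 * Zr m * B0 + V.B1 * m)" for m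
  define K1 where "K1 m = Kd * V.B1 * B0 + 5 * CC * K0 m" for m
  define K2 where "K2 m = B0 + 5 * Kd * V.B1 * B0 + 5 * CC * K0 m" for m
  define \<epsilon> where "\<epsilon> m = 1 / (1 + \<bar>5 * K1 m\<bar> + \<bar>5 * K2 m * c_f f\<bar>)" for m
  have epos: "\<epsilon> m > 0" for m unfolding \<epsilon>_def by (simp add: add_pos_nonneg)
  show ?thesis
  proof (intro exI[of _ \<epsilon>] conjI allI impI)
    fix m :: real show "1 \<le> m \<Longrightarrow> 0 < \<epsilon> m" using epos by simp
  next
    fix X :: "real \<Rightarrow> real \<Rightarrow> 'x" and XX :: "real \<Rightarrow> real \<Rightarrow> ('x \<Rightarrow>\<^sub>L 'x)" and x0 :: 'y
      and m T :: real and z :: "real \<Rightarrow> 'y" and z' :: "real \<Rightarrow> ('x \<Rightarrow>\<^sub>L 'y)"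
    assume h: "rough_path p X XX" "1 \<le> m" "0 < T" "T \<le> 1" "omega_rp p X XX 0 T \<le> \<epsilon> m"
      "(z, z') \<in> ball_T p X f T m"
    show "I_map X XX T f x0 z z' \<in> ball_T p X f T m"
    proof (cases "c_f f = 0")
      case True
      then show ?thesis using V.zero_case[OF True h(6) h(3) assms(1)] by simp
    next
      case False
      then have cf: "0 < c_f f" using V.cf_nn by simp
      interpret I: inst f Df D2f p X XX x0 m T z z' "\<epsilon> m"
        by unfold_locales (use assms h cf epos in auto)
      have k1: "I.K1 = K1 m"
        unfolding I.K1_def K1_def I.K0_def K0_def I.Zr_def Zr_def I.lam3_def I.B0_def B0_def I.Kd_def Kd_def
          I.S.C_def CC_def ..
      have k2: "I.K2 = K2 m"
        unfolding I.K2_def K2_def I.K0_def K0_def I.Zr_def Zr_def I.lam3_def I.B0_def B0_def I.Kd_def Kd_def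
          I.S.C_def CC_def ..
      have K1n: "0 \<le> K1 m" and K2n: "0 \<le> K2 m" using I.K_nn k1 k2 by auto
      have den: "1 + \<bar>5 * K1 m\<bar> + \<bar>5 * K2 m * c_f f\<bar> > 0" by (simp add: add_pos_nonneg)
      have c1: "5 * \<epsilon> m * I.K1 \<le> m^2"
      proof -
        have "5 * \<epsilon> m * K1 m = \<bar>5 * K1 m\<bar> / (1 + \<bar>5 * K1 m\<bar> + \<bar>5 * K2 m * c_f f\<bar>)"
          unfolding \<epsilon>_def using K1n by simp
        also have "\<dots> \<le> 1" using den by (simp add: divide_le_eq)
        also have "1 \<le> m^2" using h(2) by (simp add: one_le_power)
        finally show ?thesis using k1 by simp
      qed
      have c2: "5 * \<epsilon> m * I.K2 * c_f f \<le> m"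
      proof -
        have "5 * \<epsilon> m * K2 m * c_f f = \<bar>5 * K2 m * c_f f\<bar> / (1 + \<bar>5 * K1 m\<bar> + \<bar>5 * K2 m * c_f f\<bar>)"
          unfolding \<epsilon>_def using K2n cf by simp
        also have "\<dots> \<le> 1" using den by (simp add: divide_le_eq)
        also have "1 \<le> m" using h(2) .
        finally show ?thesis using k2 by simp
      qed
      show ?thesis by (rule I.main_inst[OF c1 c2])
    qed
  qed
qed



end
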